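(* Let $B$ be a densely defined closed symmetric completely non-selfadjoint operator on a Hilbert space $\mathcal{H}$ with finite deficiency indices $(n,n)$, let $\Pi=(\mathbb{C}^n,\Gamma_1,\Gamma_2)$ be a boundary triplet for $B^*$ with Weyl function $M$, and let $\Omega$ be the matrix-valued measure associated with $M$. For $D\in\mathbb{H}_n$ let $A_D$ be the self-adjoint extension of $B$ with domain $\operatorname{Ker}(\Gamma_2-D\Gamma_1)$. With $T(x):=\int_{\mathbb{R}}\frac{d\Omega(y)}{(x-y)^2}$, $$\{x\in\mathbb{R}:T(x)\in\mathbb{C}^{n\times n}\}=\bigcup_{D\in\mathbb{H}_n}\sigma_p^{max}(A_D).$$
   Context: A boundary triplet for $B^*$ is $(\mathbb{C}^n,\Gamma_1,\Gamma_2)$ with linear $\Gamma_i:D(B^* )\to\mathbb{C}^n$ satisfying $\langle B^*x,y\rangle-\langle x,B^*y\rangle=\langle\Gamma_2x,\Gamma_1y\rangle-\langle\Gamma_1x,\Gamma_2y\rangle$ for $x,y\in D(B^* )$ and with $x\mapsto(\Gamma_1x,\Gamma_2x)$ surjective onto $\mathbb{C}^n\oplus\mathbb{C}^n$. $A_1$ is the restriction of $B^*$ to $\operatorname{Ker}\Gamma_1$. The Weyl function $M:\varrho(A_1)\to\mathbb{C}^{n\times n}$ is defined by $\Gamma_2f_z=M(z)\Gamma_1f_z$ for all $f_z\in\operatorname{Ker}(B^*-zI)$. $\mathbb{H}_n$ is the set of self-adjoint $n\times n$ complex matrices. Completely non-selfadjoint: no reducing subspace on which the part of $B$ is self-adjoint.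 $\sigma_p^{max}(A)$ is the set of eigenvalues $z$ of $A$ with $\dim\operatorname{Ker}(A-zI)=n$. The matrix-valued measure associated with a Nevanlinna–Herglotz matrix $F$ is the measure $\Omega$ (positive-semidefinite-matrix-valued on bounded Borel sets, countably additive) in the representation $F(z)=C+Kz+\int_{\mathbb{R}}\big(\frac{1}{y-z}-\frac{y}{1+y^2}\big)d\Omega(y)$ with $C=C^*$, $K\ge0$. $T(x)\in\mathbb{C}^{n\times n}$ means $\int\frac{1}{(x-y)^2}d\langle c,\Omega(y)c\rangle_{\mathbb{C}^n}<\infty$ for every $c\in\mathbb{C}^n$. *)

theory Defs
  imports "HOL-Analysis.Analysis"
begin

text \<open>The inner product is linear in the first and conjugate-linear in the second argument.\<close>

definition hnorm :: "('h \<Rightarrow> 'h \<Rightarrow> complex) \<Rightarrow> 'h \<Rightarrow> real" where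
  "hnorm ip x = sqrt (Re (ip x x))"

definition hconv :: "('h::ab_group_add \<Rightarrow> 'h \<Rightarrow> complex) \<Rightarrow> (nat \<Rightarrow> 'h) \<Rightarrow> 'h \<Rightarrow> bool" where
  "hconv ip X x \<longleftrightarrow> (\<lambda>k. hnorm ip (X k - x)) \<longlonglongrightarrow> 0"

definition hilbert_space :: "(complex \<Rightarrow> 'h::ab_group_add \<Rightarrow> 'h) \<Rightarrow> ('h \<Rightarrow> 'h \<Rightarrow> complex) \<Rightarrow> bool" where
  "hilbert_space sm ip \<longleftrightarrow>
     (\<forall>a b x. sm a (sm b x) = sm (a * b) x) \<and> (\<forall>x. sm 1 x = x) \<and>
     (\<forall>a x y. sm a (x + y) = sm a x + sm a y) \<and> (\<forall>a b x. sm (a + b) x = sm a x + sm b x) \<and>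
     (\<forall>x y z. ip (x + y) z = ip x z + ip y z) \<and> (\<forall>a x y. ip (sm a x) y = a * ip x y) \<and>
     (\<forall>x y. ip y x = cnj (ip x y)) \<and> (\<forall>x. Re (ip x x) \<ge> 0) \<and> (\<forall>x. ip x x = 0 \<longrightarrow> x = 0) \<and>
     (\<forall>X. (\<forall>e>0. \<exists>N. \<forall>m\<ge>N. \<forall>k\<ge>N. hnorm ip (X m - X k) < e) \<longrightarrow> (\<exists>x. hconv ip X x))"

definition subspace_h :: "(complex \<Rightarrow> 'h::ab_group_add \<Rightarrow> 'h) \<Rightarrow> 'h set \<Rightarrow> bool" where
  "subspace_h sm S \<longleftrightarrow> 0 \<in> S \<and> (\<forall>x\<in>S. \<forall>y\<in>S. x + y \<in> S) \<and> (\<forall>a. \<forall>x\<in>S. sm a x \<in> S)"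

definition closed_subspace_h :: "(complex \<Rightarrow> 'h::ab_group_add \<Rightarrow> 'h) \<Rightarrow> ('h \<Rightarrow> 'h \<Rightarrow> complex) \<Rightarrow> 'h set \<Rightarrow> bool" where
  "closed_subspace_h sm ip S \<longleftrightarrow> subspace_h sm S \<and> (\<forall>X x. (\<forall>k. X k \<in> S) \<and> hconv ip X x \<longrightarrow> x \<in> S)"

definition hdim :: "(complex \<Rightarrow> 'h::ab_group_add \<Rightarrow> 'h) \<Rightarrow> 'h set \<Rightarrow> nat \<Rightarrow> bool" where
  "hdim sm S n \<longleftrightarrow> (\<exists>v::nat \<Rightarrow> 'h.
      (\<forall>c. (\<Sum>i<n. sm (c i) (v i)) = 0 \<longrightarrow> (\<forall>i<n. c i = 0)) \<and>
      S = {(\<Sum>i<n. sm (c i) (v i)) | c. True})"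

definition dense_in :: "('h::ab_group_add \<Rightarrow> 'h \<Rightarrow> complex) \<Rightarrow> 'h set \<Rightarrow> 'h set \<Rightarrow> bool" where
  "dense_in ip H0 S \<longleftrightarrow> (\<forall>x\<in>H0. \<forall>e>0. \<exists>y\<in>S. hnorm ip (x - y) < e)"

definition lin_op :: "(complex \<Rightarrow> 'h::ab_group_add \<Rightarrow> 'h) \<Rightarrow> 'h set \<Rightarrow> ('h \<Rightarrow> 'h) \<Rightarrow> bool" where
  "lin_op sm Dom f \<longleftrightarrow> subspace_h sm Dom \<and>
     (\<forall>x\<in>Dom. \<forall>y\<in>Dom. \<forall>a b. f (sm a x + sm b y) = sm a (f x) + sm b (f y))"

definition closed_op :: "('h::ab_group_add \<Rightarrow> 'h \<Rightarrow> complex) \<Rightarrow> 'h set \<Rightarrow> ('h \<Rightarrow> 'h) \<Rightarrow> bool" where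
  "closed_op ip Dom f \<longleftrightarrow> (\<forall>X x y. (\<forall>k. X k \<in> Dom) \<and> hconv ip X x \<and> hconv ip (\<lambda>k. f (X k)) y
       \<longrightarrow> x \<in> Dom \<and> f x = y)"

definition symmetric_op :: "('h \<Rightarrow> 'h \<Rightarrow> complex) \<Rightarrow> 'h set \<Rightarrow> ('h \<Rightarrow> 'h) \<Rightarrow> bool" where
  "symmetric_op ip Dom f \<longleftrightarrow> (\<forall>x\<in>Dom. \<forall>y\<in>Dom. ip (f x) y = ip x (f y))"

definition adj_dom :: "('h \<Rightarrow> 'h \<Rightarrow> complex) \<Rightarrow> 'h set \<Rightarrow> ('h \<Rightarrow> 'h) \<Rightarrow> 'h set" where
  "adj_dom ip Dom f = {y. \<exists>z. \<forall>x\<in>Dom. ip (f x) y = ip x z}"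

definition adj_op :: "('h \<Rightarrow> 'h \<Rightarrow> complex) \<Rightarrow> 'h set \<Rightarrow> ('h \<Rightarrow> 'h) \<Rightarrow> 'h \<Rightarrow> 'h" where
  "adj_op ip Dom f y = (SOME z. \<forall>x\<in>Dom. ip (f x) y = ip x z)"

text \<open>Self-adjointness of an operator \<open>(Dom, g)\<close> acting in the (closed) subspace \<open>H0\<close>
  regarded as a Hilbert space: it is densely defined in \<open>H0\<close> and equals its adjoint
  (taken in \<open>H0\<close>), i.e. the adjoint domain is \<open>Dom\<close> and the adjoint acts as \<open>g\<close>.\<close>
definition selfadj_in :: "('h::ab_group_add \<Rightarrow> 'h \<Rightarrow> complex) \<Rightarrow> 'h set \<Rightarrow> 'h set \<Rightarrow> ('h \<Rightarrow> 'h) \<Rightarrow> bool" where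
  "selfadj_in ip H0 Dom g \<longleftrightarrow> Dom \<subseteq> H0 \<and> (\<forall>x\<in>Dom. g x \<in> H0) \<and> dense_in ip H0 Dom \<and>
     {y\<in>H0. \<exists>z\<in>H0. \<forall>x\<in>Dom. ip (g x) y = ip x z} = Dom \<and>
     (\<forall>y\<in>Dom. \<forall>x\<in>Dom. ip (g x) y = ip x (g y))"

definition orth_to :: "('h \<Rightarrow> 'h \<Rightarrow> complex) \<Rightarrow> 'h \<Rightarrow> 'h set \<Rightarrow> bool" where
  "orth_to ip v L \<longleftrightarrow> (\<forall>u\<in>L. ip v u = 0)"

text \<open>\<open>L\<close> reduces \<open>(Dom, f)\<close>: for \<open>x \<in> Dom\<close> with orthogonal decomposition \<open>x = Px + (x - Px)\<close>
  we have \<open>Px \<in> Dom\<close> and \<open>f (Px) = P (f x)\<close>, i.e. \<open>f Px \<in> L\<close>, \<open>f (x - Px) \<perp> L\<close>.\<close>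
definition reducing :: "('h::ab_group_add \<Rightarrow> 'h \<Rightarrow> complex) \<Rightarrow> 'h set \<Rightarrow> ('h \<Rightarrow> 'h) \<Rightarrow> 'h set \<Rightarrow> bool" where
  "reducing ip Dom f L \<longleftrightarrow> (\<forall>x\<in>Dom. \<exists>u v. x = u + v \<and> u \<in> L \<and> orth_to ip v L \<and>
       u \<in> Dom \<and> f u \<in> L \<and> orth_to ip (f v) L)"

definition completely_nonselfadjoint ::
  "(complex \<Rightarrow> 'h::ab_group_add \<Rightarrow> 'h) \<Rightarrow> ('h \<Rightarrow> 'h \<Rightarrow> complex) \<Rightarrow> 'h set \<Rightarrow> ('h \<Rightarrow> 'h) \<Rightarrow> bool" where
  "completely_nonselfadjoint sm ip Dom f \<longleftrightarrow>
     \<not> (\<exists>L. closed_subspace_h sm ip L \<and> L \<noteq> {0} \<and> reducing ip Dom f L \<and> selfadj_in ip L (Dom \<inter> L) f)"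

definition eigsp :: "(complex \<Rightarrow> 'h \<Rightarrow> 'h) \<Rightarrow> 'h set \<Rightarrow> ('h \<Rightarrow> 'h) \<Rightarrow> complex \<Rightarrow> 'h set" where
  "eigsp sm Dom g z = {x\<in>Dom. g x = sm z x}"

definition resolvent_set ::
  "(complex \<Rightarrow> 'h::ab_group_add \<Rightarrow> 'h) \<Rightarrow> ('h \<Rightarrow> 'h \<Rightarrow> complex) \<Rightarrow> 'h set \<Rightarrow> ('h \<Rightarrow> 'h) \<Rightarrow> complex set" where
  "resolvent_set sm ip Dom g = {z. (\<forall>y. \<exists>!x. x \<in> Dom \<and> g x - sm z x = y) \<and>
       (\<exists>C. \<forall>x\<in>Dom. hnorm ip x \<le> C * hnorm ip (g x - sm z x))}"

definition sigma_p_max :: "(complex \<Rightarrow> 'h::ab_group_add \<Rightarrow> 'h) \<Rightarrow> 'h set \<Rightarrow> ('h \<Rightarrow> 'h) \<Rightarrow> nat \<Rightarrow> complex set" where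
  "sigma_p_max sm Dom g n = {z. eigsp sm Dom g z \<noteq> {0} \<and> hdim sm (eigsp sm Dom g z) n}"

definition cip :: "complex^'n \<Rightarrow> complex^'n \<Rightarrow> complex" where
  "cip a b = (\<Sum>i\<in>UNIV. a$i * cnj (b$i))"

definition boundary_triplet ::
  "(complex \<Rightarrow> 'h::ab_group_add \<Rightarrow> 'h) \<Rightarrow> ('h \<Rightarrow> 'h \<Rightarrow> complex) \<Rightarrow> 'h set \<Rightarrow> ('h \<Rightarrow> 'h) \<Rightarrow>
   ('h \<Rightarrow> complex^'n::finite) \<Rightarrow> ('h \<Rightarrow> complex^'n) \<Rightarrow> bool" where
  "boundary_triplet sm ip Dom f G1 G2 \<longleftrightarrow>
     (let Ds = adj_dom ip Dom f; Bs = adj_op ip Dom f in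
      (\<forall>x\<in>Ds. \<forall>y\<in>Ds. \<forall>a b. G1 (sm a x + sm b y) = a *s G1 x + b *s G1 y \<and>
                            G2 (sm a x + sm b y) = a *s G2 x + b *s G2 y) \<and>
      (\<forall>x\<in>Ds. \<forall>y\<in>Ds. ip (Bs x) y - ip x (Bs y) = cip (G2 x) (G1 y) - cip (G1 x) (G2 y)) \<and>
      (\<forall>a b. \<exists>x\<in>Ds. G1 x = a \<and> G2 x = b))"

definition weyl_function ::
  "(complex \<Rightarrow> 'h::ab_group_add \<Rightarrow> 'h) \<Rightarrow> ('h \<Rightarrow> 'h \<Rightarrow> complex) \<Rightarrow> 'h set \<Rightarrow> ('h \<Rightarrow> 'h) \<Rightarrow>
   ('h \<Rightarrow> complex^'n::finite) \<Rightarrow> ('h \<Rightarrow> complex^'n) \<Rightarrow> (complex \<Rightarrow> complex^'n^'n) \<Rightarrow> bool" where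
  "weyl_function sm ip Dom f G1 G2 M \<longleftrightarrow>
     (let Ds = adj_dom ip Dom f; Bs = adj_op ip Dom f; D1 = {x\<in>Ds. G1 x = 0} in
      \<forall>z\<in>resolvent_set sm ip D1 Bs. \<forall>x\<in>eigsp sm Ds Bs z. G2 x = M z *v G1 x)"

definition ext_dom ::
  "('h \<Rightarrow> 'h \<Rightarrow> complex) \<Rightarrow> 'h set \<Rightarrow> ('h \<Rightarrow> 'h) \<Rightarrow> ('h \<Rightarrow> complex^'n::finite) \<Rightarrow> ('h \<Rightarrow> complex^'n) \<Rightarrow>
   complex^'n^'n \<Rightarrow> 'h set" where
  "ext_dom ip Dom f G1 G2 D = {x\<in>adj_dom ip Dom f. G2 x = D *v G1 x}"

definition hermitian_mat :: "complex^'n^'n \<Rightarrow> bool" where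
  "hermitian_mat A \<longleftrightarrow> (\<forall>i j. A$i$j = cnj (A$j$i))"

definition psd_mat :: "complex^'n::finite^'n \<Rightarrow> bool" where
  "psd_mat A \<longleftrightarrow> (\<forall>c. cip (A *v c) c \<in> \<real> \<and> Re (cip (A *v c) c) \<ge> 0)"

text \<open>A matrix-valued measure: positive-semidefinite on bounded Borel sets and countably additive
  there (values on other sets are irrelevant).\<close>
definition matrix_measure :: "(real set \<Rightarrow> complex^'n::finite^'n) \<Rightarrow> bool" where
  "matrix_measure Om \<longleftrightarrow>
     (\<forall>S. S \<in> sets borel \<and> bounded S \<longrightarrow> psd_mat (Om S)) \<and>
     (\<forall>A::nat \<Rightarrow> real set. (\<forall>k. A k \<in> sets borel) \<and> disjoint_family A \<and> bounded (\<Union>k. A k)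
        \<longrightarrow> (\<lambda>k. Om (A k)) sums Om (\<Union>k. A k))"

text \<open>The scalar (positive) measure \<open>\<langle>c, \<Omega>(\<cdot>) c\<rangle>\<close>, extended to unbounded Borel sets by exhaustion.\<close>
definition qmeasure :: "(real set \<Rightarrow> complex^'n::finite^'n) \<Rightarrow> complex^'n \<Rightarrow> real measure" where
  "qmeasure Om c = measure_of UNIV (sets borel)
     (\<lambda>S. SUP k::nat. ennreal (Re (cip (Om (S \<inter> {- real k..real k}) *v c) c)))"

text \<open>Integral of a scalar function against \<open>\<Omega>\<close>, entrywise; the entries of \<open>\<Omega>\<close> are obtained by
  polarisation: \<open>\<Omega>_jk = 1/4 \<Sum>_p i^(-p) \<langle>e_j + i^p e_k, \<Omega> (e_j + i^p e_k)\<rangle>\<close>.\<close>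
definition mint :: "(real set \<Rightarrow> complex^'n::finite^'n) \<Rightarrow> (real \<Rightarrow> complex) \<Rightarrow> complex^'n^'n" where
  "mint Om g = (\<chi> j k. (1/4) * (\<Sum>p<(4::nat). cnj (\<i> ^ p) *
      integral\<^sup>L (qmeasure Om (axis j 1 + (\<i> ^ p) *s axis k 1)) g))"

text \<open>\<open>\<Omega>\<close> is the matrix-valued measure associated with the Nevanlinna function \<open>F\<close>:
  \<open>F(z) = C + K z + \<integral> (1/(y-z) - y/(1+y^2)) d\<Omega>(y)\<close> for non-real \<open>z\<close>, with \<open>C = C^*\<close>, \<open>K \<ge> 0\<close>
  (and \<open>\<integral> d\<Omega>/(1+y^2)\<close> finite, so that the integral converges).\<close>
definition assoc_measure :: "(complex \<Rightarrow> complex^'n::finite^'n) \<Rightarrow> (real set \<Rightarrow> complex^'n^'n) \<Rightarrow> bool" where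
  "assoc_measure F Om \<longleftrightarrow> matrix_measure Om \<and>
     (\<forall>c. integrable (qmeasure Om c) (\<lambda>y. 1 / (1 + y\<^sup>2))) \<and>
     (\<exists>C K. hermitian_mat C \<and> psd_mat K \<and>
        (\<forall>z. Im z \<noteq> 0 \<longrightarrow>
           F z = (\<chi> i j. C$i$j + z * K$i$j +
                   mint Om (\<lambda>y. 1 / (complex_of_real y - z) - complex_of_real (y / (1 + y\<^sup>2))) $i$j)))"

text \<open>\<open>T(x) \<in> \<complex>^{n\<times>n}\<close>: \<open>\<integral> 1/(x-y)^2 d\<langle>c,\<Omega>(y)c\<rangle> < \<infinity>\<close> for all \<open>c\<close> (the integrand is \<open>+\<infinity>\<close> at \<open>y = x\<close>).\<close>
definition T_finite :: "(real set \<Rightarrow> complex^'n::finite^'n) \<Rightarrow> real \<Rightarrow> bool" where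
  "T_finite Om x \<longleftrightarrow> (\<forall>c. (\<integral>\<^sup>+ y. (if y = x then \<infinity> else ennreal (1 / (x - y)\<^sup>2)) \<partial>qmeasure Om c) < \<infinity>)"

end

theory Submission
  imports Defs "HOL-Real_Asymp.Real_Asymp"
begin


locale hs =
  fixes sm :: "complex \<Rightarrow> 'h::ab_group_add \<Rightarrow> 'h" and ip :: "'h \<Rightarrow> 'h \<Rightarrow> complex"
  assumes H: "hilbert_space sm ip"
begin

lemma ax: "(\<forall>a b x. sm a (sm b x) = sm (a * b) x) \<and> (\<forall>x. sm 1 x = x) \<and>
     (\<forall>a x y. sm a (x + y) = sm a x + sm a y) \<and> (\<forall>a b x. sm (a + b) x = sm a x + sm b x) \<and>
     (\<forall>x y z. ip (x + y) z = ip x z + ip y z) \<and> (\<forall>a x y. ip (sm a x) y = a * ip x y) \<and>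
     (\<forall>x y. ip y x = cnj (ip x y)) \<and> (\<forall>x. Re (ip x x) \<ge> 0) \<and> (\<forall>x. ip x x = 0 \<longrightarrow> x = 0) \<and>
     (\<forall>X. (\<forall>e>0. \<exists>N. \<forall>m\<ge>N. \<forall>k\<ge>N. hnorm ip (X m - X k) < e) \<longrightarrow> (\<exists>x. hconv ip X x))"
  using H unfolding hilbert_space_def by assumption

lemma sm_assoc: "sm a (sm b x) = sm (a * b) x" by (rule ax[THEN conjunct1, rule_format])
lemma sm_one[simp]: "sm 1 x = x" by (rule ax[THEN conjunct2, THEN conjunct1, rule_format])
lemma sm_add_r: "sm a (x + y) = sm a x + sm a y" by (rule ax[THEN conjunct2, THEN conjunct2, THEN conjunct1, rule_format])
lemma sm_add_l: "sm (a + b) x = sm a x + sm b x" by (rule ax[THEN conjunct2, THEN conjunct2, THEN conjunct2, THEN conjunct1, rule_format])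
lemma ip_add_l: "ip (x + y) z = ip x z + ip y z" by (rule ax[THEN conjunct2, THEN conjunct2, THEN conjunct2, THEN conjunct2, THEN conjunct1, rule_format])
lemma ip_sm_l: "ip (sm a x) y = a * ip x y" by (rule ax[THEN conjunct2, THEN conjunct2, THEN conjunct2, THEN conjunct2, THEN conjunct2, THEN conjunct1, rule_format])
lemma ip_sym: "ip y x = cnj (ip x y)" by (rule ax[THEN conjunct2, THEN conjunct2, THEN conjunct2, THEN conjunct2, THEN conjunct2, THEN conjunct2, THEN conjunct1, rule_format])
lemma ip_pos: "Re (ip x x) \<ge> 0" by (rule ax[THEN conjunct2, THEN conjunct2, THEN conjunct2, THEN conjunct2, THEN conjunct2, THEN conjunct2, THEN conjunct2, THEN conjunct1, rule_format])
lemma ip_def0: "ip x x = 0 \<Longrightarrow> x = 0" by (rule ax[THEN conjunct2, THEN conjunct2, THEN conjunct2, THEN conjunct2, THEN conjunct2, THEN conjunct2, THEN conjunct2, THEN conjunct2, THEN conjunct1, rule_format])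
lemma complete: "(\<forall>e>0. \<exists>N. \<forall>m\<ge>N. \<forall>k\<ge>N. hnorm ip (X m - X k) < e) \<Longrightarrow> (\<exists>x. hconv ip X x)"
  by (rule ax[THEN conjunct2, THEN conjunct2, THEN conjunct2, THEN conjunct2, THEN conjunct2, THEN conjunct2, THEN conjunct2, THEN conjunct2, THEN conjunct2, THEN spec, THEN mp])

lemma sm_zero_l[simp]: "sm 0 x = 0"
proof -
  have "sm 0 x + sm 0 x = sm 0 x" using sm_add_l[of 0 0 x] by simp
  then show ?thesis by simp
qed
lemma sm_zero_r[simp]: "sm a 0 = 0"
proof -
  have "sm a 0 + sm a 0 = sm a 0" using sm_add_r[of a 0 0] by simp
  then show ?thesis by simp
qed
lemma sm_minus_r: "sm a (- x) = - sm a x"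
proof -
  have "sm a x + sm a (- x) = 0" using sm_add_r[of a x "-x"] by simp
  then show ?thesis by (simp add: eq_neg_iff_add_eq_0 add.commute)
qed
lemma sm_minus_l: "sm (- a) x = - sm a x"
proof -
  have "sm a x + sm (- a) x = 0" using sm_add_l[of a "-a" x] by simp
  then show ?thesis by (simp add: eq_neg_iff_add_eq_0 add.commute)
qed
lemma sm_diff_r: "sm a (x - y) = sm a x - sm a y"
  using sm_add_r[of a x "-y"] sm_minus_r[of a y] by simp
lemma sm_diff_l: "sm (a - b) x = sm a x - sm b x"
  using sm_add_l[of a "-b" x] sm_minus_l[of b x] by simp
lemma sm_neg1: "sm (-1) x = - x" using sm_minus_l[of 1 x] by simp
lemma sm_sum_r: "sm a (\<Sum>i\<in>A. f i) = (\<Sum>i\<in>A. sm a (f i))"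
  by (induction A rule: infinite_finite_induct) (auto simp: sm_add_r)
lemma sm_sum_l: "sm (\<Sum>i\<in>A. f i) x = (\<Sum>i\<in>A. sm (f i) x)"
  by (induction A rule: infinite_finite_induct) (auto simp: sm_add_l)

lemma ip_add_r: "ip x (y + z) = ip x y + ip x z"
proof -
  have "ip x (y + z) = cnj (ip (y + z) x)" by (rule ip_sym)
  also have "\<dots> = cnj (ip y x) + cnj (ip z x)" by (simp add: ip_add_l)
  also have "\<dots> = ip x y + ip x z" using ip_sym[of x y] ip_sym[of x z] by simp
  finally show ?thesis .
qed
lemma ip_sm_r: "ip x (sm a y) = cnj a * ip x y"
proof -
  have "ip x (sm a y) = cnj (ip (sm a y) x)" by (rule ip_sym)
  also have "\<dots> = cnj a * cnj (ip y x)" by (simp add: ip_sm_l)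
  also have "\<dots> = cnj a * ip x y" using ip_sym[of x y] by simp
  finally show ?thesis .
qed
lemma ip_zero_l[simp]: "ip 0 y = 0" using ip_sm_l[of 0 0 y] by simp
lemma ip_zero_r[simp]: "ip x 0 = 0" using ip_sm_r[of x 0 0] by simp
lemma ip_minus_l: "ip (- x) y = - ip x y" using ip_sm_l[of "-1" x y] sm_neg1 by simp
lemma ip_minus_r: "ip x (- y) = - ip x y" using ip_sm_r[of x "-1" y] sm_neg1 by simp
lemma ip_diff_l: "ip (x - y) z = ip x z - ip y z" using ip_add_l[of x "-y" z] ip_minus_l by simp
lemma ip_diff_r: "ip x (y - z) = ip x y - ip x z" using ip_add_r[of x y "-z"] ip_minus_r by simp
lemma ip_sum_l: "ip (\<Sum>i\<in>A. f i) y = (\<Sum>i\<in>A. ip (f i) y)"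
  by (induction A rule: infinite_finite_induct) (auto simp: ip_add_l)
lemma ip_sum_r: "ip y (\<Sum>i\<in>A. f i) = (\<Sum>i\<in>A. ip y (f i))"
  by (induction A rule: infinite_finite_induct) (auto simp: ip_add_r)

lemmas ip_simps = ip_add_l ip_add_r ip_sm_l ip_sm_r ip_minus_l ip_minus_r ip_diff_l ip_diff_r

lemma ip_self_real: "ip x x = complex_of_real (Re (ip x x))"
proof -
  have "ip x x = cnj (ip x x)" using ip_sym by metis
  then have "Im (ip x x) = 0" by (metis Reals_cnj_iff complex_is_Real_iff)
  then show ?thesis by (simp add: complex_eq_iff)
qed

abbreviation nrm where "nrm x \<equiv> hnorm ip x"

lemma nrm_nonneg: "nrm x \<ge> 0" using ip_pos[of x] by (simp add: hnorm_def)
lemma nrm_sq: "(nrm x)\<^sup>2 = Re (ip x x)" using ip_pos[of x] by (simp add: hnorm_def)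
lemma ip_self_nrm: "ip x x = complex_of_real ((nrm x)\<^sup>2)"
  using ip_self_real nrm_sq by simp
lemma nrm_zero[simp]: "nrm 0 = 0" by (simp add: hnorm_def)
lemma nrm_eq0: "nrm x = 0 \<longleftrightarrow> x = 0"
proof
  assume "nrm x = 0" then have "ip x x = 0" using ip_self_nrm by simp
  then show "x = 0" by (rule ip_def0)
qed simp

lemma cauchy_schwarz: "cmod (ip x y) \<le> nrm x * nrm y"
proof (cases "y = 0")
  case True then show ?thesis by (simp add: nrm_nonneg)
next
  case False
  define t where "t = ip x y / ip y y"
  have yy: "ip y y = complex_of_real ((nrm y)\<^sup>2)" by (rule ip_self_nrm)
  have ny: "nrm y > 0" using False nrm_eq0 nrm_nonneg by (metis less_eq_real_def)
  have yy0: "ip y y \<noteq> 0" using ny yy by simp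
  have "ip (x - sm t y) (x - sm t y) = ip x x - cnj t * ip x y - t * ip y x + t * cnj t * ip y y"
    by (simp add: ip_simps algebra_simps)
  also have "\<dots> = ip x x - cnj (ip x y) * ip x y / ip y y"
  proof -
    have c: "cnj (ip y y) = ip y y" using yy by simp
    have "cnj t = cnj (ip x y) / ip y y" unfolding t_def using c by simp
    moreover have "ip y x = cnj (ip x y)" by (rule ip_sym)
    ultimately show ?thesis unfolding t_def using yy0 by (simp add: field_simps)
  qed
  finally have eq: "ip (x - sm t y) (x - sm t y) = ip x x - cnj (ip x y) * ip x y / ip y y" .
  have "0 \<le> Re (ip (x - sm t y) (x - sm t y))" by (rule ip_pos)
  also have "Re (ip (x - sm t y) (x - sm t y)) = (nrm x)\<^sup>2 - (cmod (ip x y))\<^sup>2 / (nrm y)\<^sup>2"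
  proof -
    have "cnj (ip x y) * ip x y = complex_of_real ((cmod (ip x y))\<^sup>2)"
      using complex_norm_square[of "ip x y"] by (simp add: mult.commute)
    then have "cnj (ip x y) * ip x y / ip y y = complex_of_real ((cmod (ip x y))\<^sup>2 / (nrm y)\<^sup>2)"
      unfolding yy by simp
    then show ?thesis unfolding eq using nrm_sq[of x] by simp
  qed
  finally have "(cmod (ip x y))\<^sup>2 / (nrm y)\<^sup>2 \<le> (nrm x)\<^sup>2" by simp
  then have "(cmod (ip x y))\<^sup>2 \<le> (nrm x)\<^sup>2 * (nrm y)\<^sup>2"
    using ny by (simp add: field_simps)
  then have "(cmod (ip x y))\<^sup>2 \<le> (nrm x * nrm y)\<^sup>2" by (simp add: power_mult_distrib)
  then show ?thesis using nrm_nonneg by (meson mult_nonneg_nonneg power2_le_imp_le)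
qed


lemma nrm_sq_c: "complex_of_real ((nrm x)\<^sup>2) = ip x x" by (rule ip_self_nrm[symmetric])

lemma nrm_sm: "nrm (sm a x) = cmod a * nrm x"
proof -
  have "ip (sm a x) (sm a x) = (a * cnj a) * ip x x" by (simp add: ip_sm_l ip_sm_r)
  also have "\<dots> = complex_of_real ((cmod a)\<^sup>2 * (nrm x)\<^sup>2)"
    unfolding ip_self_nrm complex_norm_square[symmetric] by simp
  finally have "(nrm (sm a x))\<^sup>2 = (cmod a)\<^sup>2 * (nrm x)\<^sup>2" unfolding nrm_sq by simp
  then have "(nrm (sm a x))\<^sup>2 = (cmod a * nrm x)\<^sup>2" by (simp add: power_mult_distrib)
  then show ?thesis using nrm_nonneg by (simp add: power2_eq_iff_nonneg)
qed

lemma nrm_minus: "nrm (- x) = nrm x" using nrm_sm[of "-1" x] sm_neg1 by simp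
lemma nrm_diff_sym: "nrm (x - y) = nrm (y - x)" using nrm_minus[of "x - y"] by simp

lemma nrm_add_sq: "(nrm (x + y))\<^sup>2 = (nrm x)\<^sup>2 + 2 * Re (ip x y) + (nrm y)\<^sup>2"
proof -
  have "Re (ip y x) = Re (ip x y)" using ip_sym[of x y] by simp
  then show ?thesis unfolding nrm_sq by (simp add: ip_simps)
qed
lemma nrm_diff_sq: "(nrm (x - y))\<^sup>2 = (nrm x)\<^sup>2 - 2 * Re (ip x y) + (nrm y)\<^sup>2"
  using nrm_add_sq[of x "-y"] nrm_minus[of y] by (simp add: ip_simps)

lemma nrm_triangle: "nrm (x + y) \<le> nrm x + nrm y"
proof -
  have "Re (ip x y) \<le> nrm x * nrm y" using cauchy_schwarz[of x y] complex_Re_le_cmod order_trans by blast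
  then have "(nrm (x + y))\<^sup>2 \<le> (nrm x + nrm y)\<^sup>2" unfolding nrm_add_sq by (simp add: power2_sum)
  then show ?thesis using nrm_nonneg by (meson add_nonneg_nonneg power2_le_imp_le)
qed
lemma nrm_tri_diff: "nrm (x - z) \<le> nrm (x - y) + nrm (y - z)"
  using nrm_triangle[of "x - y" "y - z"] by simp
lemma nrm_diff_ge: "nrm x - nrm y \<le> nrm (x - y)"
  using nrm_triangle[of "x - y" y] by simp

lemma parallelogram: "(nrm (x + y))\<^sup>2 + (nrm (x - y))\<^sup>2 = 2 * (nrm x)\<^sup>2 + 2 * (nrm y)\<^sup>2"
  unfolding nrm_add_sq nrm_diff_sq by simp

lemma ip_bound_l: "cmod (ip x y) \<le> nrm x * nrm y" by (rule cauchy_schwarz)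

section \<open>Convergence\<close>

lemma hconv_iff: "hconv ip X x \<longleftrightarrow> (\<lambda>k. nrm (X k - x)) \<longlonglongrightarrow> 0" by (simp add: hconv_def)

lemma hconv_const: "hconv ip (\<lambda>k. x) x" by (simp add: hconv_iff)

lemma null_le: "(\<lambda>k. g k) \<longlonglongrightarrow> 0 \<Longrightarrow> (\<And>k. 0 \<le> f k \<and> f k \<le> g k) \<Longrightarrow> (\<lambda>k. f k) \<longlonglongrightarrow> (0::real)"
  by (rule tendsto_sandwich[of "\<lambda>_. 0" _ _ g]) auto

lemma hconv_add: "hconv ip X x \<Longrightarrow> hconv ip Y y \<Longrightarrow> hconv ip (\<lambda>k. X k + Y k) (x + y)"
  unfolding hconv_iff
proof (rule null_le)
  assume "(\<lambda>k. nrm (X k - x)) \<longlonglongrightarrow> 0" "(\<lambda>k. nrm (Y k - y)) \<longlonglongrightarrow> 0"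
  then show "(\<lambda>k. nrm (X k - x) + nrm (Y k - y)) \<longlonglongrightarrow> 0" using tendsto_add by fastforce
  fix k show "0 \<le> nrm (X k + Y k - (x + y)) \<and> nrm (X k + Y k - (x + y)) \<le> nrm (X k - x) + nrm (Y k - y)"
    using nrm_triangle[of "X k - x" "Y k - y"] nrm_nonneg by (simp add: algebra_simps)
qed

lemma hconv_minus: "hconv ip X x \<Longrightarrow> hconv ip (\<lambda>k. - X k) (- x)"
proof -
  assume "hconv ip X x"
  moreover have "\<And>k. nrm (- X k - - x) = nrm (X k - x)" using nrm_minus
    by (metis minus_diff_eq minus_diff_minus)
  ultimately show ?thesis unfolding hconv_iff by simp
qed

lemma hconv_diff: "hconv ip X x \<Longrightarrow> hconv ip Y y \<Longrightarrow> hconv ip (\<lambda>k. X k - Y k) (x - y)"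
  using hconv_add[of X x "\<lambda>k. - Y k" "- y"] hconv_minus[of Y y] by simp

lemma hconv_sm: assumes a: "a \<longlonglongrightarrow> a0" and X: "hconv ip X x"
  shows "hconv ip (\<lambda>k. sm (a k) (X k)) (sm a0 x)"
  unfolding hconv_iff
proof (rule null_le)
  have X0: "(\<lambda>k. nrm (X k - x)) \<longlonglongrightarrow> 0" using X hconv_iff by simp
  have "(\<lambda>k. cmod (a k)) \<longlonglongrightarrow> cmod a0" using a by (rule tendsto_norm)
  then have 1: "(\<lambda>k. cmod (a k) * nrm (X k - x)) \<longlonglongrightarrow> cmod a0 * 0" using X0 by (rule tendsto_mult)
  have "(\<lambda>k. cmod (a k - a0)) \<longlonglongrightarrow> 0" using a by (simp add: tendsto_norm_zero_iff LIM_zero_iff)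
  then have 2: "(\<lambda>k. cmod (a k - a0) * nrm x) \<longlonglongrightarrow> 0 * nrm x" by (rule tendsto_mult) simp
  show "(\<lambda>k. cmod (a k) * nrm (X k - x) + cmod (a k - a0) * nrm x) \<longlonglongrightarrow> 0"
    using tendsto_add[OF 1 2] by simp
  fix k
  have "sm (a k) (X k) - sm a0 x = sm (a k) (X k - x) + sm (a k - a0) x"
    by (simp add: sm_diff_r sm_diff_l)
  then show "0 \<le> nrm (sm (a k) (X k) - sm a0 x) \<and> nrm (sm (a k) (X k) - sm a0 x) \<le> cmod (a k) * nrm (X k - x) + cmod (a k - a0) * nrm x"
    using nrm_triangle[of "sm (a k) (X k - x)" "sm (a k - a0) x"] nrm_nonneg by (simp add: nrm_sm)
qed

lemma hconv_sm_const: "hconv ip X x \<Longrightarrow> hconv ip (\<lambda>k. sm a (X k)) (sm a x)"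
  using hconv_sm[of "\<lambda>k. a" a X x] by simp

lemma hconv_unique: assumes "hconv ip X x" "hconv ip X y" shows "x = y"
proof -
  have "(\<lambda>k. nrm (X k - x) + nrm (X k - y)) \<longlonglongrightarrow> 0" using assms unfolding hconv_iff
    using tendsto_add by fastforce
  moreover have "\<And>k. nrm (x - y) \<le> nrm (X k - x) + nrm (X k - y)"
    using nrm_tri_diff nrm_diff_sym by metis
  ultimately have "nrm (x - y) \<le> 0"
    by (intro tendsto_lowerbound[of "\<lambda>k. nrm (X k - x) + nrm (X k - y)"]) (auto intro: always_eventually)
  then show ?thesis using nrm_nonneg nrm_eq0 by (metis antisym eq_iff_diff_eq_0)
qed

lemma hconv_ip2: assumes X: "hconv ip X x" and Y: "hconv ip Y y"
  shows "(\<lambda>k. ip (X k) (Y k)) \<longlonglongrightarrow> ip x y"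
proof -
  have X0: "(\<lambda>k. nrm (X k - x)) \<longlonglongrightarrow> 0" and Y0: "(\<lambda>k. nrm (Y k - y)) \<longlonglongrightarrow> 0" using X Y hconv_iff by auto
  have "(\<lambda>k. nrm (X k - x) * (nrm (Y k - y) + nrm y) + nrm x * nrm (Y k - y)) \<longlonglongrightarrow> 0 * (0 + nrm y) + nrm x * 0"
    by (intro tendsto_intros X0 Y0)
  then have L: "(\<lambda>k. nrm (X k - x) * (nrm (Y k - y) + nrm y) + nrm x * nrm (Y k - y)) \<longlonglongrightarrow> 0" by simp
  have "(\<lambda>k. cmod (ip (X k) (Y k) - ip x y)) \<longlonglongrightarrow> 0"
  proof (rule null_le[OF L])
    fix k
    have e: "ip (X k) (Y k) - ip x y = ip (X k - x) (Y k) + ip x (Y k - y)" by (simp add: ip_simps)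
    have "cmod (ip (X k - x) (Y k)) \<le> nrm (X k - x) * nrm (Y k)" by (rule cauchy_schwarz)
    also have "\<dots> \<le> nrm (X k - x) * (nrm (Y k - y) + nrm y)"
      using nrm_triangle[of "Y k - y" y] nrm_nonneg by (simp add: mult_left_mono)
    finally have 1: "cmod (ip (X k - x) (Y k)) \<le> nrm (X k - x) * (nrm (Y k - y) + nrm y)" .
    have 2: "cmod (ip x (Y k - y)) \<le> nrm x * nrm (Y k - y)" by (rule cauchy_schwarz)
    show "0 \<le> cmod (ip (X k) (Y k) - ip x y) \<and> cmod (ip (X k) (Y k) - ip x y) \<le> nrm (X k - x) * (nrm (Y k - y) + nrm y) + nrm x * nrm (Y k - y)"
      unfolding e using norm_triangle_ineq[of "ip (X k - x) (Y k)" "ip x (Y k - y)"] 1 2 by simp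
  qed
  then show ?thesis by (simp add: tendsto_norm_zero_iff LIM_zero_iff)
qed

lemma hconv_ip_l: "hconv ip X x \<Longrightarrow> (\<lambda>k. ip (X k) y) \<longlonglongrightarrow> ip x y"
  using hconv_ip2[of X x "\<lambda>k. y" y] hconv_const by simp
lemma hconv_ip_r: "hconv ip X x \<Longrightarrow> (\<lambda>k. ip y (X k)) \<longlonglongrightarrow> ip y x"
  using hconv_ip2[of "\<lambda>k. y" y X x] hconv_const by simp

lemma hconv_nrm_sq: "hconv ip X x \<Longrightarrow> (\<lambda>k. (nrm (X k))\<^sup>2) \<longlonglongrightarrow> (nrm x)\<^sup>2"
proof -
  assume "hconv ip X x"
  then have "(\<lambda>k. Re (ip (X k) (X k))) \<longlonglongrightarrow> Re (ip x x)" using hconv_ip2 tendsto_Re by blast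
  then show ?thesis by (simp add: nrm_sq)
qed

lemma hconv_nrm: "hconv ip X x \<Longrightarrow> (\<lambda>k. nrm (X k)) \<longlonglongrightarrow> nrm x"
proof -
  assume "hconv ip X x"
  then have "(\<lambda>k. sqrt ((nrm (X k))\<^sup>2)) \<longlonglongrightarrow> sqrt ((nrm x)\<^sup>2)" using hconv_nrm_sq tendsto_real_sqrt by blast
  then show ?thesis using nrm_nonneg by simp
qed

end


context hs begin

lemma inv_k1: "(\<lambda>k. 1 / (real k + 1)) \<longlonglongrightarrow> 0"
  using LIMSEQ_inverse_real_of_nat by (simp add: inverse_eq_divide add.commute)

lemma sm_two: "sm 2 z = z + z" using sm_add_l[of 1 1 z] by simp
lemma sm_half_twice: "sm 2 (sm (1/2) z) = z" by (simp add: sm_assoc)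

lemma cauchy_nrm_conv:
  assumes "\<And>e. e > 0 \<Longrightarrow> \<exists>N. \<forall>m\<ge>N. \<forall>k\<ge>N. nrm (X m - X k) < e"
  shows "\<exists>x. hconv ip X x"
  using assms complete by blast

lemma projection:
  assumes S: "subspace_h sm R" and C: "\<And>X x. (\<forall>k. X k \<in> R) \<Longrightarrow> hconv ip X x \<Longrightarrow> x \<in> R"
  shows "\<exists>r\<in>R. \<forall>u\<in>R. ip (y - r) u = 0"
proof -
  have R0: "0 \<in> R" and Radd: "\<And>a b. a \<in> R \<Longrightarrow> b \<in> R \<Longrightarrow> a + b \<in> R"
    and Rsm: "\<And>c a. a \<in> R \<Longrightarrow> sm c a \<in> R" using S unfolding subspace_h_def by auto
  define D where "D = (\<lambda>r. nrm (y - r)) ` R"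
  have ne: "D \<noteq> {}" using R0 D_def by auto
  have bdd: "bdd_below D" unfolding D_def using nrm_nonneg by (intro bdd_belowI[of _ 0]) auto
  define d where "d = Inf D"
  have dle: "\<And>r. r \<in> R \<Longrightarrow> d \<le> nrm (y - r)" unfolding d_def D_def
    using bdd D_def by (intro cInf_lower) auto
  have d0: "0 \<le> d" unfolding d_def using ne D_def nrm_nonneg by (intro cInf_greatest) auto
  have ex: "\<exists>r\<in>R. (nrm (y - r))\<^sup>2 < d\<^sup>2 + 1 / (real k + 1)" for k
  proof -
    define e where "e = sqrt (d\<^sup>2 + 1 / (real k + 1))"
    have "d\<^sup>2 < d\<^sup>2 + 1 / (real k + 1)" by simp
    then have "d < e" unfolding e_def using d0 real_less_rsqrt by blast
    then have "Inf D < e" unfolding d_def .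
    then obtain t where "t \<in> D" "t < e" using cInf_lessD ne by blast
    then obtain r where r: "r \<in> R" "nrm (y - r) < e" unfolding D_def by auto
    then have "(nrm (y - r))\<^sup>2 < e\<^sup>2" using nrm_nonneg by (simp add: power_strict_mono)
    also have "e\<^sup>2 = d\<^sup>2 + 1 / (real k + 1)" unfolding e_def by (simp add: add_nonneg_nonneg)
    finally show ?thesis using r by blast
  qed
  then obtain r where r: "\<And>k. r k \<in> R" "\<And>k. (nrm (y - r k))\<^sup>2 < d\<^sup>2 + 1 / (real k + 1)"
    by metis
  have cd: "(nrm (r m - r k))\<^sup>2 \<le> 2 / (real m + 1) + 2 / (real k + 1)" for m k
  proof -
    let ?a = "y - r m" and ?b = "y - r k"
    have mid: "sm (1/2) (r m + r k) \<in> R" using r Radd Rsm by blast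
    have "sm 2 (y - sm (1/2) (r m + r k)) = sm 2 y - sm 2 (sm (1/2) (r m + r k))" by (rule sm_diff_r)
    also have "\<dots> = sm 2 y - (r m + r k)" unfolding sm_half_twice ..
    also have "\<dots> = ?a + ?b" by (simp add: sm_two algebra_simps)
    finally have "?a + ?b = sm 2 (y - sm (1/2) (r m + r k))" by simp
    then have "nrm (?a + ?b) = 2 * nrm (y - sm (1/2) (r m + r k))" by (simp add: nrm_sm)
    moreover have "d \<le> nrm (y - sm (1/2) (r m + r k))" using dle mid by blast
    ultimately have "2 * d \<le> nrm (?a + ?b)" by simp
    then have "(2 * d)\<^sup>2 \<le> (nrm (?a + ?b))\<^sup>2" using d0 by (intro power_mono) auto
    moreover have "(nrm (?a + ?b))\<^sup>2 + (nrm (?a - ?b))\<^sup>2 = 2 * (nrm ?a)\<^sup>2 + 2 * (nrm ?b)\<^sup>2"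
      by (rule parallelogram)
    moreover have "?a - ?b = r k - r m" by simp
    moreover note r(2)[of m] r(2)[of k]
    ultimately have "(nrm (r k - r m))\<^sup>2 \<le> 2 / (real m + 1) + 2 / (real k + 1)"
      by (simp add: power_mult_distrib)
    then show ?thesis using nrm_diff_sym by metis
  qed
  have "\<exists>r0. hconv ip r r0"
  proof (rule cauchy_nrm_conv)
    fix e :: real assume e: "e > 0"
    obtain N :: nat where N: "4 / e\<^sup>2 < real N" using reals_Archimedean2 by blast
    have "4 / (real N + 1) < e\<^sup>2" using N e by (simp add: field_simps) (smt (verit) zero_less_power)
    show "\<exists>N. \<forall>m\<ge>N. \<forall>k\<ge>N. nrm (r m - r k) < e"
    proof (intro exI allI impI)
      fix m k assume mk: "N \<le> m" "N \<le> k"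
      have "2 / (real m + 1) \<le> 2 / (real N + 1)" "2 / (real k + 1) \<le> 2 / (real N + 1)"
        using mk by (simp_all add: frac_le)
      then have "(nrm (r m - r k))\<^sup>2 < e\<^sup>2" using cd[of m k] \<open>4 / (real N + 1) < e\<^sup>2\<close> by simp
      then show "nrm (r m - r k) < e" using e nrm_nonneg by (meson abs_le_square_iff abs_of_nonneg less_le_not_le linear power2_less_imp_less)
    qed
  qed
  then obtain r0 where r0: "hconv ip r r0" by blast
  have r0R: "r0 \<in> R" using C r r0 by blast
  have "(\<lambda>k. (nrm (y - r k))\<^sup>2) \<longlonglongrightarrow> (nrm (y - r0))\<^sup>2"
    using hconv_nrm_sq hconv_diff[OF hconv_const r0] by blast
  moreover have "(\<lambda>k. d\<^sup>2 + 1 / (real k + 1)) \<longlonglongrightarrow> d\<^sup>2 + 0"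
    by (intro tendsto_intros inv_k1)
  ultimately have w_le: "(nrm (y - r0))\<^sup>2 \<le> d\<^sup>2"
    using r(2) less_imp_le by (intro LIMSEQ_le[of "\<lambda>k. (nrm (y - r k))\<^sup>2" _ "\<lambda>k. d\<^sup>2 + 1 / (real k + 1)"]) auto
  have "ip (y - r0) u = 0" if u: "u \<in> R" for u
  proof -
    define w where "w = y - r0"
    define p where "p = ip w u"
    define s :: real where "s = 1 / ((nrm u)\<^sup>2 + 1)"
    have p1: "0 < (nrm u)\<^sup>2 + 1" by (simp add: add_nonneg_pos)
    have s0: "s > 0" unfolding s_def using p1 by simp
    have s1: "s * (nrm u)\<^sup>2 < 1" unfolding s_def using p1 by (simp add: field_simps)
    have "r0 + sm (of_real s * p) u \<in> R" using r0R u Radd Rsm by blast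
    then have "d \<le> nrm (y - (r0 + sm (of_real s * p) u))" by (rule dle)
    then have "d\<^sup>2 \<le> (nrm (w - sm (of_real s * p) u))\<^sup>2" using d0 unfolding w_def
      by (simp add: power_mono diff_diff_eq)
    also have "\<dots> = (nrm w)\<^sup>2 - 2 * Re (ip w (sm (of_real s * p) u)) + (nrm (sm (of_real s * p) u))\<^sup>2"
      by (rule nrm_diff_sq)
    also have "ip w (sm (of_real s * p) u) = of_real s * (cnj p * p)" by (simp add: ip_sm_r p_def)
    also have "cnj p * p = of_real ((cmod p)\<^sup>2)" using complex_norm_square[of p] by (simp add: mult.commute)
    also have "nrm (sm (of_real s * p) u) = s * cmod p * nrm u" using s0 by (simp add: nrm_sm norm_mult)
    finally have "d\<^sup>2 \<le> (nrm w)\<^sup>2 - 2 * (s * (cmod p)\<^sup>2) + (s * cmod p * nrm u)\<^sup>2" by simp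
    then have "2 * (s * (cmod p)\<^sup>2) \<le> (s * cmod p * nrm u)\<^sup>2" using w_le unfolding w_def by simp
    also have "\<dots> = (s * (cmod p)\<^sup>2) * (s * (nrm u)\<^sup>2)" by (simp add: power2_eq_square)
    also have "\<dots> \<le> (s * (cmod p)\<^sup>2) * 1" using s1 s0 by (intro mult_left_mono) auto
    finally have "s * (cmod p)\<^sup>2 \<le> 0" by simp
    then have "(cmod p)\<^sup>2 = 0" using s0 by (simp add: mult_le_0_iff)
    then show ?thesis unfolding p_def w_def by simp
  qed
  then show ?thesis using r0R by blast
qed

end


lemma cip_add_l: "cip (a + b) c = cip a c + cip b c" unfolding cip_def by (simp add: distrib_right sum.distrib)
lemma cip_add_r: "cip c (a + b) = cip c a + cip c b" unfolding cip_def by (simp add: distrib_left sum.distrib)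
lemma cip_scale_l: "cip (r *s a) c = r * cip a c" unfolding cip_def by (simp add: sum_distrib_left mult.assoc)
lemma cip_scale_r: "cip c (r *s a) = cnj r * cip c a" unfolding cip_def by (simp add: sum_distrib_left ac_simps)
lemma cip_zero_l[simp]: "cip 0 c = 0" unfolding cip_def by simp
lemma cip_zero_r[simp]: "cip c 0 = 0" unfolding cip_def by simp
lemma cip_minus_l: "cip (- a) c = - cip a c" unfolding cip_def by (simp add: sum_negf)
lemma cip_minus_r: "cip c (- a) = - cip c a" unfolding cip_def by (simp add: sum_negf)
lemma cip_diff_l: "cip (a - b) c = cip a c - cip b c" using cip_add_l[of a "-b" c] cip_minus_l by simp
lemma cip_diff_r: "cip c (a - b) = cip c a - cip c b" using cip_add_r[of c a "-b"] cip_minus_r by simp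
lemma cip_sym: "cip b a = cnj (cip a b)" unfolding cip_def by (simp add: mult.commute)
lemma cip_self: "cip a a = complex_of_real (\<Sum>i\<in>UNIV. (cmod (a$i))\<^sup>2)"
  unfolding cip_def of_real_sum by (simp add: complex_norm_square del: of_real_power)
lemma cip_self_eq0: "cip a a = 0 \<Longrightarrow> a = 0"
proof -
  assume "cip a a = 0"
  then have "(\<Sum>i\<in>UNIV. (cmod (a$i))\<^sup>2) = 0" unfolding cip_self of_real_eq_0_iff .
  then have "\<forall>i\<in>UNIV. (cmod (a$i))\<^sup>2 = 0" by (subst sum_nonneg_eq_0_iff[symmetric]) auto
  then show "a = 0" by (simp add: vec_eq_iff)
qed
lemma cip_axis_l: "cip (axis i 1) c = cnj (c$i)"
proof -
  have "\<And>j. axis i 1 $ j * cnj (c$j) = (if j = i then cnj (c$i) else 0)" by (simp add: axis_def)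
  then show ?thesis unfolding cip_def by simp
qed
lemma cip_axis_r: "cip c (axis i 1) = c$i"
proof -
  have "\<And>j. c$j * cnj (axis i 1 $ j) = (if j = i then c$i else 0)" by (simp add: axis_def)
  then show ?thesis unfolding cip_def by simp
qed
lemmas cip_simps = cip_add_l cip_add_r cip_scale_l cip_scale_r cip_minus_l cip_minus_r cip_diff_l cip_diff_r

locale bsetting = hs sm ip for sm :: "complex \<Rightarrow> 'h::ab_group_add \<Rightarrow> 'h" and ip +
  fixes Dom :: "'h set" and B :: "'h \<Rightarrow> 'h" and G1 G2 :: "'h \<Rightarrow> complex^'n::finite"
  assumes lin: "lin_op sm Dom B" and dense: "dense_in ip UNIV Dom" and closedB: "closed_op ip Dom B"
    and symB: "symmetric_op ip Dom B" and bt: "boundary_triplet sm ip Dom B G1 G2"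
begin

abbreviation "Ds \<equiv> adj_dom ip Dom B"
abbreviation "Bs \<equiv> adj_op ip Dom B"
abbreviation "D1 \<equiv> {x\<in>Ds. G1 x = 0}"

lemma Dom_sub: "subspace_h sm Dom" using lin unfolding lin_op_def by blast
lemma Dom0: "0 \<in> Dom" and Dom_add: "x \<in> Dom \<Longrightarrow> y \<in> Dom \<Longrightarrow> x + y \<in> Dom"
  and Dom_sm: "x \<in> Dom \<Longrightarrow> sm a x \<in> Dom" using Dom_sub unfolding subspace_h_def by auto
lemma Dom_diff: "x \<in> Dom \<Longrightarrow> y \<in> Dom \<Longrightarrow> x - y \<in> Dom"
  using Dom_add[of x "sm (-1) y"] Dom_sm[of y "-1"] sm_neg1 by simp
lemma B_lin: "x \<in> Dom \<Longrightarrow> y \<in> Dom \<Longrightarrow> B (sm a x + sm b y) = sm a (B x) + sm b (B y)"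
  using lin unfolding lin_op_def by blast
lemma B_sm: "x \<in> Dom \<Longrightarrow> B (sm a x) = sm a (B x)" using B_lin[of x 0 a 0] Dom0 by simp
lemma B_add: "x \<in> Dom \<Longrightarrow> y \<in> Dom \<Longrightarrow> B (x + y) = B x + B y" using B_lin[of x y 1 1] by simp
lemma B_0: "B 0 = 0" using B_sm[OF Dom0, of 0] by simp
lemma B_diff: "x \<in> Dom \<Longrightarrow> y \<in> Dom \<Longrightarrow> B (x - y) = B x - B y"
  using B_lin[of x y 1 "-1"] sm_neg1 by simp
lemma B_sym: "x \<in> Dom \<Longrightarrow> y \<in> Dom \<Longrightarrow> ip (B x) y = ip x (B y)" using symB unfolding symmetric_op_def by blast

lemma cmod_ip_self: "cmod (ip w w) = (nrm w)\<^sup>2"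
  unfolding ip_self_nrm norm_of_real by simp

lemma orth_dense: assumes "\<And>x. x \<in> Dom \<Longrightarrow> ip x w = 0" shows "w = 0"
proof (rule ccontr)
  assume "w \<noteq> 0"
  then have nw: "nrm w > 0" using nrm_eq0 nrm_nonneg by (metis less_eq_real_def)
  obtain x where x: "x \<in> Dom" "nrm (w - x) < nrm w" using dense nw unfolding dense_in_def by blast
  have "ip (w - x) w = ip w w" using assms[OF x(1)] by (simp add: ip_simps)
  moreover have "cmod (ip w w) = (nrm w)\<^sup>2" using cmod_ip_self .
  ultimately have "(nrm w)\<^sup>2 \<le> nrm (w - x) * nrm w" using cauchy_schwarz[of "w - x" w] by simp
  also have "\<dots> < nrm w * nrm w" using x nw by simp
  finally show False by (simp add: power2_eq_square)
qed

lemma adj_char: "y \<in> Ds \<Longrightarrow> x \<in> Dom \<Longrightarrow> ip (B x) y = ip x (Bs y)"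
proof -
  assume "y \<in> Ds" "x \<in> Dom"
  then obtain z where "\<forall>x\<in>Dom. ip (B x) y = ip x z" unfolding adj_dom_def by blast
  then have "\<forall>x\<in>Dom. ip (B x) y = ip x (Bs y)" unfolding adj_op_def by (rule someI)
  then show ?thesis using \<open>x \<in> Dom\<close> by blast
qed

lemma adj_eq: assumes "\<And>x. x \<in> Dom \<Longrightarrow> ip (B x) y = ip x z" shows "y \<in> Ds" "Bs y = z"
proof -
  show yD: "y \<in> Ds" using assms unfolding adj_dom_def by blast
  have "\<And>x. x \<in> Dom \<Longrightarrow> ip x (Bs y - z) = 0" using adj_char[OF yD] assms by (simp add: ip_simps)
  then have "Bs y - z = 0" by (rule orth_dense)
  then show "Bs y = z" by simp
qed

lemma Dom_Ds: "x \<in> Dom \<Longrightarrow> x \<in> Ds" and Bs_B: "x \<in> Dom \<Longrightarrow> Bs x = B x"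
  using adj_eq[of x "B x"] B_sym by auto

lemma Ds_lin: assumes "x \<in> Ds" "y \<in> Ds"
  shows "sm a x + sm b y \<in> Ds" "Bs (sm a x + sm b y) = sm a (Bs x) + sm b (Bs y)"
proof -
  have "\<And>u. u \<in> Dom \<Longrightarrow> ip (B u) (sm a x + sm b y) = ip u (sm a (Bs x) + sm b (Bs y))"
    using adj_char assms by (simp add: ip_simps)
  then show "sm a x + sm b y \<in> Ds" "Bs (sm a x + sm b y) = sm a (Bs x) + sm b (Bs y)"
    using adj_eq by auto
qed

lemma Ds0: "0 \<in> Ds" using Dom_Ds Dom0 by blast
lemma Bs0: "Bs 0 = 0" using Bs_B Dom0 B_0 by simp
lemma Ds_sm: "x \<in> Ds \<Longrightarrow> sm a x \<in> Ds" and Bs_sm: "x \<in> Ds \<Longrightarrow> Bs (sm a x) = sm a (Bs x)"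
  using Ds_lin[of x 0 a 0] Ds0 Bs0 by auto
lemma Ds_add: "x \<in> Ds \<Longrightarrow> y \<in> Ds \<Longrightarrow> x + y \<in> Ds" and Bs_add: "x \<in> Ds \<Longrightarrow> y \<in> Ds \<Longrightarrow> Bs (x + y) = Bs x + Bs y"
  using Ds_lin[of x y 1 1] by auto
lemma Ds_diff: "x \<in> Ds \<Longrightarrow> y \<in> Ds \<Longrightarrow> x - y \<in> Ds" and Bs_diff: "x \<in> Ds \<Longrightarrow> y \<in> Ds \<Longrightarrow> Bs (x - y) = Bs x - Bs y"
  using Ds_lin[of x y 1 "-1"] sm_neg1 by auto

lemma G_lin: "x \<in> Ds \<Longrightarrow> y \<in> Ds \<Longrightarrow> G1 (sm a x + sm b y) = a *s G1 x + b *s G1 y \<and> G2 (sm a x + sm b y) = a *s G2 x + b *s G2 y"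
  using bt unfolding boundary_triplet_def Let_def by blast
lemma green: "x \<in> Ds \<Longrightarrow> y \<in> Ds \<Longrightarrow> ip (Bs x) y - ip x (Bs y) = cip (G2 x) (G1 y) - cip (G1 x) (G2 y)"
  using bt unfolding boundary_triplet_def Let_def by blast
lemma G_surj: "\<exists>x\<in>Ds. G1 x = a \<and> G2 x = b"
  using bt unfolding boundary_triplet_def Let_def by blast

lemma G0: "G1 0 = 0" "G2 0 = 0" using G_lin[OF Ds0 Ds0, of 0 0] by auto
lemma G_sm: "x \<in> Ds \<Longrightarrow> G1 (sm a x) = a *s G1 x" "x \<in> Ds \<Longrightarrow> G2 (sm a x) = a *s G2 x"
  using G_lin[of x 0 a 0] Ds0 G0 by auto
lemma G_add: "x \<in> Ds \<Longrightarrow> y \<in> Ds \<Longrightarrow> G1 (x + y) = G1 x + G1 y" "x \<in> Ds \<Longrightarrow> y \<in> Ds \<Longrightarrow> G2 (x + y) = G2 x + G2 y"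
  using G_lin[of x y 1 1] by auto
lemma G_diff: "x \<in> Ds \<Longrightarrow> y \<in> Ds \<Longrightarrow> G1 (x - y) = G1 x - G1 y" "x \<in> Ds \<Longrightarrow> y \<in> Ds \<Longrightarrow> G2 (x - y) = G2 x - G2 y"
  using G_lin[of x y 1 "-1"] sm_neg1 by (auto simp: vector_sneg_minus1[symmetric])

lemma G_Dom: assumes "x \<in> Dom" shows "G1 x = 0" "G2 x = 0"
proof -
  have xD: "x \<in> Ds" using Dom_Ds assms by blast
  have h: "cip (G2 x) (G1 y) - cip (G1 x) (G2 y) = 0" if "y \<in> Ds" for y
  proof -
    have "ip (Bs x) y = ip x (Bs y)" using adj_char[OF that assms] Bs_B[OF assms] B_sym by simp
    then show ?thesis using green[OF xD that] by simp
  qed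
  obtain y1 where y1: "y1 \<in> Ds" "G1 y1 = G2 x" "G2 y1 = 0" using G_surj by blast
  show "G2 x = 0" using h[OF y1(1)] y1 cip_self_eq0 by simp
  obtain y2 where y2: "y2 \<in> Ds" "G1 y2 = 0" "G2 y2 = G1 x" using G_surj by blast
  show "G1 x = 0" using h[OF y2(1)] y2 cip_self_eq0 by simp
qed

end


context hs begin

lemma sym_bound: assumes im0: "Im (ip t f) = 0" shows "\<bar>Im z\<bar> * nrm f \<le> nrm (t - sm z f)"
proof (cases "nrm f = 0")
  case True then show ?thesis using nrm_nonneg by simp
next
  case False
  then have nf: "nrm f > 0" using nrm_nonneg by (metis less_eq_real_def)
  have "ip (t - sm z f) f = ip t f - z * complex_of_real ((nrm f)\<^sup>2)" by (simp add: ip_simps ip_self_nrm)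
  then have "Im (ip (t - sm z f) f) = - Im z * (nrm f)\<^sup>2" using im0 by simp
  then have "\<bar>Im z\<bar> * (nrm f)\<^sup>2 = \<bar>Im (ip (t - sm z f) f)\<bar>" by (simp add: abs_mult)
  also have "\<dots> \<le> cmod (ip (t - sm z f) f)" by (rule abs_Im_le_cmod)
  also have "\<dots> \<le> nrm (t - sm z f) * nrm f" by (rule cauchy_schwarz)
  finally show ?thesis using nf by (simp add: power2_eq_square)
qed

lemma hconv_cauchy: assumes "hconv ip X x" "e > 0" shows "\<exists>N. \<forall>m\<ge>N. \<forall>k\<ge>N. nrm (X m - X k) < e"
proof -
  have "(\<lambda>k. nrm (X k - x)) \<longlonglongrightarrow> 0" using assms hconv_iff by simp
  then have "\<forall>\<^sub>F k in sequentially. nrm (X k - x) < e/2" using assms(2)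
    by (auto dest!: order_tendstoD(2)[where a="e/2"])
  then obtain N where N: "\<And>k. k \<ge> N \<Longrightarrow> nrm (X k - x) < e/2" unfolding eventually_sequentially by blast
  show ?thesis
  proof (intro exI allI impI)
    fix m k assume "N \<le> m" "N \<le> k"
    then have "nrm (X m - x) < e/2" "nrm (x - X k) < e/2" using N nrm_diff_sym by auto
    then show "nrm (X m - X k) < e" using nrm_tri_diff[of "X m" "X k" x] by simp
  qed
qed

lemma range_closed:
  fixes DD :: "'h set" and T :: "'h \<Rightarrow> 'h"
  assumes DDdiff: "\<And>f g. f \<in> DD \<Longrightarrow> g \<in> DD \<Longrightarrow> f - g \<in> DD"
    and Tdiff: "\<And>f g. f \<in> DD \<Longrightarrow> g \<in> DD \<Longrightarrow> T (f - g) = T f - T g"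
    and bound: "\<And>f. f \<in> DD \<Longrightarrow> c * nrm f \<le> nrm (T f - sm z f)" and c: "c > 0"
    and cl: "\<And>F f h. (\<forall>k. F k \<in> DD) \<Longrightarrow> hconv ip F f \<Longrightarrow> hconv ip (\<lambda>k. T (F k)) h \<Longrightarrow> f \<in> DD \<and> T f = h"
    and X: "\<forall>k. X k \<in> {T f - sm z f |f. f \<in> DD}" and Xc: "hconv ip X x"
  shows "x \<in> {T f - sm z f |f. f \<in> DD}"
proof -
  have "\<forall>k. \<exists>f. f \<in> DD \<and> X k = T f - sm z f" using X by blast
  then have "\<exists>F. \<forall>k. F k \<in> DD \<and> X k = T (F k) - sm z (F k)" by (rule choice)
  then obtain F where F0: "\<forall>k. F k \<in> DD \<and> X k = T (F k) - sm z (F k)" by blast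
  then have F: "\<And>k. F k \<in> DD" "\<And>k. X k = T (F k) - sm z (F k)" by auto
  have "\<exists>f. hconv ip F f"
  proof (rule cauchy_nrm_conv)
    fix e :: real assume e: "e > 0"
    obtain N where N: "\<forall>m\<ge>N. \<forall>k\<ge>N. nrm (X m - X k) < c * e" using hconv_cauchy[OF Xc, of "c * e"] e c by auto
    show "\<exists>N. \<forall>m\<ge>N. \<forall>k\<ge>N. nrm (F m - F k) < e"
    proof (intro exI allI impI)
      fix m k assume mk: "N \<le> m" "N \<le> k"
      have "X m - X k = T (F m - F k) - sm z (F m - F k)" using F Tdiff by (simp add: sm_diff_r)
      then have "c * nrm (F m - F k) \<le> nrm (X m - X k)" using bound[OF DDdiff[OF F(1) F(1)]] by simp
      also have "\<dots> < c * e" using N mk by blast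
      finally show "nrm (F m - F k) < e" using c by simp
    qed
  qed
  then obtain f where f: "hconv ip F f" by blast
  have "hconv ip (\<lambda>k. X k + sm z (F k)) (x + sm z f)" using hconv_add[OF Xc hconv_sm_const[OF f]] .
  moreover have "\<And>k. X k + sm z (F k) = T (F k)" using F by simp
  ultimately have "hconv ip (\<lambda>k. T (F k)) (x + sm z f)" by simp
  then have fT: "f \<in> DD \<and> T f = x + sm z f" using cl F f by blast
  then have "x = T f - sm z f" by (simp add: algebra_simps)
  then show ?thesis using fT by blast
qed

lemma closed_orth_all:
  assumes S: "subspace_h sm R" and C: "\<And>X x. (\<forall>k. X k \<in> R) \<Longrightarrow> hconv ip X x \<Longrightarrow> x \<in> R"
    and O: "\<And>w. (\<forall>u\<in>R. ip u w = 0) \<Longrightarrow> w = 0"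
  shows "y \<in> R"
proof -
  have "\<exists>r\<in>R. \<forall>u\<in>R. ip (y - r) u = 0" by (rule projection[OF S]) (rule C)
  then obtain r where r: "r \<in> R" "\<forall>u\<in>R. ip (y - r) u = 0" by blast
  have "\<forall>u\<in>R. ip u (y - r) = 0"
  proof
    fix u assume "u \<in> R"
    have "ip u (y - r) = cnj (ip (y - r) u)" by (rule ip_sym)
    then show "ip u (y - r) = 0" using r(2) \<open>u \<in> R\<close> by simp
  qed
  then have "y - r = 0" by (rule O)
  then show ?thesis using r by simp
qed

end

context bsetting begin

abbreviation "Nz z \<equiv> eigsp sm Ds Bs z"

lemma Dom_D1: "x \<in> Dom \<Longrightarrow> x \<in> D1" using Dom_Ds G_Dom by blast

lemma A1_sym: "f \<in> D1 \<Longrightarrow> g \<in> D1 \<Longrightarrow> ip (Bs f) g = ip f (Bs g)"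
  using green[of f g] by simp

lemma real_of_sym: "ip a b = ip b a \<Longrightarrow> Im (ip a b) = 0"
proof -
  assume h: "ip a b = ip b a"
  have "ip b a = cnj (ip a b)" by (rule ip_sym)
  then have "ip a b = cnj (ip a b)" using h by simp
  then show ?thesis by (metis cnj.simps(2) neg_equal_zero)
qed

lemma A1_real: "f \<in> D1 \<Longrightarrow> Im (ip (Bs f) f) = 0"
  using A1_sym[of f f] real_of_sym by metis

lemma A1_adj: assumes h: "\<And>f. f \<in> D1 \<Longrightarrow> ip (Bs f) g = ip f h" shows "g \<in> D1" "Bs g = h"
proof -
  have "\<And>x. x \<in> Dom \<Longrightarrow> ip (B x) g = ip x h" using h Dom_D1 Bs_B by metis
  then have gD: "g \<in> Ds" and gB: "Bs g = h" using adj_eq by auto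
  obtain f where f: "f \<in> Ds" "G1 f = 0" "G2 f = G1 g" using G_surj by blast
  have "ip (Bs f) g - ip f (Bs g) = 0" using h[of f] f gB by simp
  then have "cip (G1 g) (G1 g) = 0" using green[OF f(1) gD] f by simp
  then have "G1 g = 0" by (rule cip_self_eq0)
  then show "g \<in> D1" using gD by simp
  show "Bs g = h" by (rule gB)
qed

lemma A1_closed: assumes F: "\<forall>k. F k \<in> D1" and Fc: "hconv ip F g" and BF: "hconv ip (\<lambda>k. Bs (F k)) h"
  shows "g \<in> D1 \<and> Bs g = h"
proof -
  have "ip (Bs f) g = ip f h" if f: "f \<in> D1" for f
  proof -
    have "(\<lambda>k. ip (Bs f) (F k)) \<longlonglongrightarrow> ip (Bs f) g" using hconv_ip_r[OF Fc] .
    moreover have "(\<lambda>k. ip f (Bs (F k))) \<longlonglongrightarrow> ip f h" using hconv_ip_r[OF BF] .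
    moreover have "\<And>k. ip (Bs f) (F k) = ip f (Bs (F k))" using A1_sym f F by blast
    ultimately show ?thesis using LIMSEQ_unique by fastforce
  qed
  then show ?thesis using A1_adj by blast
qed

lemma A1_bound: "f \<in> D1 \<Longrightarrow> \<bar>Im z\<bar> * nrm f \<le> nrm (Bs f - sm z f)"
  using sym_bound A1_real by blast

lemma D1_diff: "f \<in> D1 \<Longrightarrow> g \<in> D1 \<Longrightarrow> f - g \<in> D1" using Ds_diff G_diff by auto
lemma D1_sub: "subspace_h sm D1" unfolding subspace_h_def using Ds0 G0 Ds_add G_add Ds_sm G_sm by auto

lemma A1_surj: assumes z: "Im z \<noteq> 0" shows "\<exists>f\<in>D1. Bs f - sm z f = y"
proof -
  let ?R = "{Bs f - sm z f |f. f \<in> D1}"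
  have S: "subspace_h sm ?R" unfolding subspace_h_def
  proof (intro conjI ballI allI)
    show "0 \<in> ?R" using Ds0 G0 Bs0 by force
    fix x y assume "x \<in> ?R" "y \<in> ?R"
    then obtain f g where fg: "f \<in> D1" "g \<in> D1" "x = Bs f - sm z f" "y = Bs g - sm z g" by blast
    have "x + y = (Bs f + Bs g) - (sm z f + sm z g)" unfolding fg(3,4) by (simp add: algebra_simps)
    also have "\<dots> = Bs (f + g) - sm z (f + g)" using fg Bs_add sm_add_r by simp
    finally show "x + y \<in> ?R" using fg Ds_add G_add by auto
  next
    fix a x assume "x \<in> ?R"
    then obtain f where "f \<in> D1" "x = Bs f - sm z f" by blast
    then show "sm a x \<in> ?R" using Ds_sm G_sm Bs_sm
      by (intro CollectI exI[of _ "sm a f"]) (auto simp: sm_diff_r sm_assoc mult.commute)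
  qed
  have C: "x \<in> ?R" if "\<forall>k. X k \<in> ?R" "hconv ip X x" for X x
  proof (rule range_closed[where T=Bs and c="\<bar>Im z\<bar>"])
    show "\<And>f g. f \<in> D1 \<Longrightarrow> g \<in> D1 \<Longrightarrow> f - g \<in> D1" using D1_diff by blast
    show "\<And>f g. f \<in> D1 \<Longrightarrow> g \<in> D1 \<Longrightarrow> Bs (f - g) = Bs f - Bs g" using Bs_diff by blast
    show "\<And>f. f \<in> D1 \<Longrightarrow> \<bar>Im z\<bar> * nrm f \<le> nrm (Bs f - sm z f)" using A1_bound by blast
    show "\<bar>Im z\<bar> > 0" using z by simp
    show "\<And>F f h. \<forall>k. F k \<in> D1 \<Longrightarrow> hconv ip F f \<Longrightarrow> hconv ip (\<lambda>k. Bs (F k)) h \<Longrightarrow> f \<in> D1 \<and> Bs f = h"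
      using A1_closed by blast
  qed (use that in auto)
  have O: "w = 0" if w: "\<forall>u\<in>?R. ip u w = 0" for w
  proof -
    have "ip (Bs f) w = ip f (sm (cnj z) w)" if f: "f \<in> D1" for f
    proof -
      have "ip (Bs f - sm z f) w = 0" using w f by blast
      then show ?thesis by (simp add: ip_simps)
    qed
    then have wD: "w \<in> D1" and wB: "Bs w = sm (cnj z) w" using A1_adj by blast+
    have "\<bar>Im (cnj z)\<bar> * nrm w \<le> nrm (Bs w - sm (cnj z) w)" using A1_bound[OF wD] .
    then have "nrm w \<le> 0" using wB z by (simp add: zero_less_mult_iff mult_le_0_iff)
    then show "w = 0" using nrm_nonneg nrm_eq0 by (metis antisym)
  qed
  have "y \<in> ?R" by (rule closed_orth_all[OF S]) (rule C, assumption+, rule O, assumption)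
  then show ?thesis by blast
qed

lemma A1_inj: assumes z: "Im z \<noteq> 0" and f: "f \<in> D1" and e: "Bs f - sm z f = 0" shows "f = 0"
proof -
  have "\<bar>Im z\<bar> * nrm f \<le> 0" using A1_bound[OF f, of z] e by simp
  then have "nrm f \<le> 0" using z by (simp add: mult_le_0_iff)
  then show ?thesis using nrm_nonneg nrm_eq0 by (metis antisym)
qed

lemma A1_resolvent: assumes z: "Im z \<noteq> 0" shows "z \<in> resolvent_set sm ip D1 Bs"
  unfolding resolvent_set_def
proof (intro CollectI conjI allI)
  fix y
  obtain f where f: "f \<in> D1" "Bs f - sm z f = y" using A1_surj[OF z] by blast
  show "\<exists>!x. x \<in> D1 \<and> Bs x - sm z x = y"
  proof (rule ex1I[of _ f])
    show "f \<in> D1 \<and> Bs f - sm z f = y" using f by blast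
    fix g assume g: "g \<in> D1 \<and> Bs g - sm z g = y"
    have e1: "Bs (g - f) = Bs g - Bs f" using Bs_diff f g by blast
    have "Bs (g - f) - sm z (g - f) = (Bs g - sm z g) - (Bs f - sm z f)"
      unfolding e1 sm_diff_r by (simp add: algebra_simps)
    then have "Bs (g - f) - sm z (g - f) = 0" using f g by simp
    then have "g - f = 0" using A1_inj[OF z D1_diff] f g by blast
    then show "g = f" by simp
  qed
next
  show "\<exists>C. \<forall>x\<in>D1. nrm x \<le> C * nrm (Bs x - sm z x)"
  proof (intro exI ballI)
    fix x assume "x \<in> D1"
    then have "\<bar>Im z\<bar> * nrm x \<le> nrm (Bs x - sm z x)" by (rule A1_bound)
    then show "nrm x \<le> (1 / \<bar>Im z\<bar>) * nrm (Bs x - sm z x)" using z by (simp add: field_simps)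
  qed
qed

lemma gamma_ex: assumes z: "Im z \<noteq> 0" shows "\<exists>g. g \<in> Ds \<and> Bs g = sm z g \<and> G1 g = c"
proof -
  obtain f where f: "f \<in> Ds" "G1 f = c" using G_surj by blast
  obtain u where u: "u \<in> D1" "Bs u - sm z u = Bs f - sm z f" using A1_surj[OF z] by blast
  have 1: "f - u \<in> Ds" using f u Ds_diff by auto
  have 2: "G1 (f - u) = c" using f u G_diff by auto
  have e1: "Bs (f - u) = Bs f - Bs u" using Bs_diff f u by blast
  have "Bs (f - u) - sm z (f - u) = (Bs f - sm z f) - (Bs u - sm z u)"
    unfolding e1 sm_diff_r by (simp add: algebra_simps)
  then have "Bs (f - u) - sm z (f - u) = 0" using u by simp
  then have "Bs (f - u) = sm z (f - u)" by simp
  then show ?thesis using 1 2 by blast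
qed

lemma gamma_uniq: assumes z: "Im z \<noteq> 0" and g: "g \<in> Ds" "Bs g = sm z g" and g': "g' \<in> Ds" "Bs g' = sm z g'"
  and e: "G1 g = G1 g'" shows "g = g'"
proof -
  have "g - g' \<in> D1" using g g' e Ds_diff G_diff by auto
  moreover have "Bs (g - g') - sm z (g - g') = 0" using g g' Bs_diff by (simp add: sm_diff_r)
  ultimately have "g - g' = 0" using A1_inj[OF z] by blast
  then show ?thesis by simp
qed

lemma B_bound: "f \<in> Dom \<Longrightarrow> \<bar>Im z\<bar> * nrm f \<le> nrm (B f - sm z f)"
  using sym_bound B_sym real_of_sym by metis

lemma ker_G_Dom: assumes f: "f \<in> Ds" and g1: "G1 f = 0" and g2: "G2 f = 0" shows "f \<in> Dom"
proof -
  let ?R = "{B u - sm \<i> u |u. u \<in> Dom}"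
  have S: "subspace_h sm ?R" unfolding subspace_h_def
  proof (intro conjI ballI allI)
    show "0 \<in> ?R" using Dom0 B_0 by force
    fix x y assume "x \<in> ?R" "y \<in> ?R"
    then obtain f g where fg: "f \<in> Dom" "g \<in> Dom" "x = B f - sm \<i> f" "y = B g - sm \<i> g" by blast
    have "x + y = (B f + B g) - (sm \<i> f + sm \<i> g)" unfolding fg(3,4) by (simp add: algebra_simps)
    also have "\<dots> = B (f + g) - sm \<i> (f + g)" using fg B_add sm_add_r by simp
    finally show "x + y \<in> ?R" using fg Dom_add by auto
  next
    fix a x assume "x \<in> ?R"
    then obtain f where "f \<in> Dom" "x = B f - sm \<i> f" by blast
    then show "sm a x \<in> ?R" using Dom_sm B_sm
      by (intro CollectI exI[of _ "sm a f"]) (auto simp: sm_diff_r sm_assoc mult.commute)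
  qed
  have C: "x \<in> ?R" if "\<forall>k. X k \<in> ?R" "hconv ip X x" for X x
  proof (rule range_closed[where T=B and c=1])
    show "\<And>f g. f \<in> Dom \<Longrightarrow> g \<in> Dom \<Longrightarrow> f - g \<in> Dom" using Dom_diff by blast
    show "\<And>f g. f \<in> Dom \<Longrightarrow> g \<in> Dom \<Longrightarrow> B (f - g) = B f - B g" using B_diff by blast
    show "\<And>f. f \<in> Dom \<Longrightarrow> 1 * nrm f \<le> nrm (B f - sm \<i> f)" using B_bound[of _ \<i>] by simp
    show "\<And>F f h. \<forall>k. F k \<in> Dom \<Longrightarrow> hconv ip F f \<Longrightarrow> hconv ip (\<lambda>k. B (F k)) h \<Longrightarrow> f \<in> Dom \<and> B f = h"
      using closedB unfolding closed_op_def by blast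
  qed (use that in auto)
  have fsym: "ip (Bs f) y = ip f (Bs y)" if "y \<in> Ds" for y using green[OF f that] g1 g2 by simp
  have "\<exists>r\<in>?R. \<forall>u\<in>?R. ip (Bs f - sm \<i> f - r) u = 0" by (rule projection[OF S]) (rule C)
  then obtain r where r: "r \<in> ?R" "\<forall>u\<in>?R. ip (Bs f - sm \<i> f - r) u = 0" by blast
  obtain u where u: "u \<in> Dom" "r = B u - sm \<i> u" using r(1) by blast
  define w where "w = Bs f - sm \<i> f - r"
  have "ip (B v) w = ip v (sm (- \<i>) w)" if v: "v \<in> Dom" for v
  proof -
    have "ip w (B v - sm \<i> v) = 0" using r(2) v unfolding w_def by blast
    moreover have "ip (B v - sm \<i> v) w = cnj (ip w (B v - sm \<i> v))" by (rule ip_sym)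
    ultimately have "ip (B v - sm \<i> v) w = 0" by simp
    then show ?thesis by (simp add: ip_simps)
  qed
  then have wD: "w \<in> Ds" and wB: "Bs w = sm (- \<i>) w" using adj_eq by blast+
  define g where "g = f - u"
  have gD: "g \<in> Ds" unfolding g_def using f u Dom_Ds Ds_diff by blast
  have e1: "Bs (f - u) = Bs f - B u" using Bs_diff f u Dom_Ds Bs_B by metis
  have "Bs g - sm \<i> g = (Bs f - sm \<i> f) - (B u - sm \<i> u)" unfolding g_def e1 sm_diff_r
    by (simp add: algebra_simps)
  then have gw: "Bs g - sm \<i> g = w" unfolding w_def u(2) by simp
  have gsym: "ip (Bs g) w = ip g (Bs w)"
  proof -
    have "ip (Bs u) w = ip u (Bs w)" using adj_char[OF wD u(1)] Bs_B[OF u(1)] by simp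
    then show ?thesis unfolding g_def using fsym[OF wD] Bs_diff f u Dom_Ds by (simp add: ip_simps)
  qed
  have "ip w w = ip (Bs g) w - \<i> * ip g w" using gw by (metis ip_diff_l ip_sm_l)
  also have "\<dots> = 0" using gsym wB by (simp add: ip_simps)
  finally have w0: "w = 0" by (rule ip_def0)
  then have gB: "Bs g = sm \<i> g" using gw by simp
  have gs2: "ip (Bs g) g = ip g (Bs g)"
  proof -
    have a: "ip (Bs u) g = ip u (Bs g)" using adj_char[OF gD u(1)] Bs_B[OF u(1)] by simp
    have b: "ip (Bs f) g = ip f (Bs g)" using fsym[OF gD] .
    have c: "Bs g = Bs f - Bs u" unfolding g_def using Bs_diff f u Dom_Ds by blast
    have "ip (Bs g) g = ip (Bs f) g - ip (Bs u) g" unfolding c by (rule ip_diff_l)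
    also have "\<dots> = ip f (Bs g) - ip u (Bs g)" unfolding a b ..
    also have "\<dots> = ip g (Bs g)" unfolding g_def by (rule ip_diff_l[symmetric])
    finally show ?thesis .
  qed
  then have "\<i> * ip g g = - \<i> * ip g g" using gB by (simp add: ip_simps)
  then have "ip g g = 0" by simp
  then have "g = 0" by (rule ip_def0)
  then show ?thesis using u unfolding g_def by simp
qed

end


definition qf :: "(real set \<Rightarrow> complex^'n::finite^'n) \<Rightarrow> complex^'n \<Rightarrow> real set \<Rightarrow> real" where
  "qf Om c S = Re (cip (Om S *v c) c)"

definition Ik :: "nat \<Rightarrow> real set" where "Ik k = {- real k..real k}"

lemma Ik_borel[measurable]: "Ik k \<in> sets borel" unfolding Ik_def by simp
lemma Ik_bounded: "bounded (Ik k)" unfolding Ik_def by simp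
lemma Ik_mono: "k \<le> m \<Longrightarrow> Ik k \<subseteq> Ik m" unfolding Ik_def by auto
lemma Ik_cover: "\<exists>k. x \<in> Ik k"
proof -
  obtain k :: nat where "\<bar>x\<bar> \<le> real k" using real_arch_simple by blast
  then show ?thesis unfolding Ik_def by (intro exI[of _ k]) auto
qed
lemma bounded_Ik: "bounded S \<Longrightarrow> \<exists>k. S \<subseteq> Ik k"
proof -
  assume "bounded S"
  then obtain b where b: "\<forall>x\<in>S. \<bar>x\<bar> \<le> b" unfolding bounded_iff by auto
  obtain k :: nat where "b \<le> real k" using real_arch_simple by blast
  then show ?thesis using b unfolding Ik_def by (intro exI[of _ k]) force
qed

lemma cip_mv_expand: "cip (X *v c) c = (\<Sum>i\<in>UNIV. \<Sum>j\<in>UNIV. X$i$j * (c$j * cnj (c$i)))"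
  unfolding cip_def matrix_vector_mult_def by (simp add: sum_distrib_right mult.assoc)

lemma cip_mv_add: "cip ((X + Y) *v c) c = cip (X *v c) c + cip (Y *v c) c"
  by (simp add: matrix_vector_mult_add_rdistrib cip_add_l)

lemma cip_mv_sum: "cip ((\<Sum>i\<in>A. X i) *v c) c = (\<Sum>i\<in>A. cip (X i *v c) c)"
  by (induction A rule: infinite_finite_induct) (auto simp: cip_mv_add)

lemma cip_mv_tendsto: "(X \<longlongrightarrow> L) F \<Longrightarrow> ((\<lambda>n. cip (X n *v c) c) \<longlongrightarrow> cip (L *v c) c) F"
  unfolding cip_mv_expand by (intro tendsto_intros)

lemma psd_real: "psd_mat X \<Longrightarrow> cip (X *v c) c = complex_of_real (Re (cip (X *v c) c))"
  unfolding psd_mat_def by (metis Reals_cases Re_complex_of_real)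

lemma psd_nonneg: "psd_mat X \<Longrightarrow> Re (cip (X *v c) c) \<ge> 0"
  unfolding psd_mat_def by blast

context
  fixes Om :: "real set \<Rightarrow> complex^'n::finite^'n"
  assumes mm: "matrix_measure Om"
begin

lemma mm_psd: "S \<in> sets borel \<Longrightarrow> bounded S \<Longrightarrow> psd_mat (Om S)"
  using mm unfolding matrix_measure_def by blast

lemma mm_sums: "(\<And>k. A k \<in> sets borel) \<Longrightarrow> disjoint_family A \<Longrightarrow> bounded (\<Union>k. A k) \<Longrightarrow> (\<lambda>k. Om (A k)) sums Om (\<Union>k. A k)"
  using mm unfolding matrix_measure_def by blast

lemma Om_empty: "Om {} = 0"
proof -
  have "(\<lambda>k. Om {}) sums Om (\<Union>k::nat. {})" by (rule mm_sums) (auto simp: disjoint_family_on_def)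
  then have "summable (\<lambda>k::nat. Om {})" by (rule sums_summable)
  then have "(\<lambda>k::nat. Om {}) \<longlonglongrightarrow> 0" by (rule summable_LIMSEQ_zero)
  then show ?thesis by (simp add: LIMSEQ_const_iff)
qed

lemma Om_Un: assumes A: "A \<in> sets borel" "bounded A" and B: "B \<in> sets borel" "bounded B" and d: "A \<inter> B = {}"
  shows "Om (A \<union> B) = Om A + Om B"
proof -
  define F where "F = (\<lambda>k::nat. if k = 0 then A else if k = 1 then B else {})"
  have U: "(\<Union>k. F k) = A \<union> B"
  proof
    show "(\<Union>k. F k) \<subseteq> A \<union> B" unfolding F_def by auto
    show "A \<union> B \<subseteq> (\<Union>k. F k)" using F_def by (auto intro: exI[of _ "0::nat"] exI[of _ "1::nat"])
  qed
  have "(\<lambda>k. Om (F k)) sums Om (\<Union>k. F k)"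
  proof (rule mm_sums)
    show "\<And>k. F k \<in> sets borel" unfolding F_def using A B by auto
    show "disjoint_family F" unfolding disjoint_family_on_def F_def using d by auto
    show "bounded (\<Union>k. F k)" unfolding U using A B by simp
  qed
  moreover have "(\<lambda>k. Om (F k)) sums (\<Sum>k\<in>{0,1}. Om (F k))"
    by (rule sums_finite) (auto simp: F_def Om_empty)
  ultimately show ?thesis unfolding U by (simp add: sums_iff F_def)
qed

lemma qf_nonneg: "S \<in> sets borel \<Longrightarrow> bounded S \<Longrightarrow> qf Om c S \<ge> 0"
  unfolding qf_def using mm_psd psd_nonneg by blast

lemma qf_real: "S \<in> sets borel \<Longrightarrow> bounded S \<Longrightarrow> cip (Om S *v c) c = complex_of_real (qf Om c S)"
  unfolding qf_def using mm_psd psd_real by blast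

lemma qf_mono: assumes "A \<subseteq> B" "A \<in> sets borel" "B \<in> sets borel" "bounded B" shows "qf Om c A \<le> qf Om c B"
proof -
  have bA: "bounded A" using assms bounded_subset by blast
  have "B = A \<union> (B - A)" using assms by auto
  then have "Om B = Om A + Om (B - A)" using Om_Un[of A "B - A"] assms bA bounded_subset[of B "B - A"] by auto
  then have "qf Om c B = qf Om c A + qf Om c (B - A)" unfolding qf_def by (simp add: cip_mv_add)
  moreover have "qf Om c (B - A) \<ge> 0" using qf_nonneg assms bounded_subset[of B "B - A"] by auto
  ultimately show ?thesis by simp
qed

lemma qf_sums: assumes "\<And>k. A k \<in> sets borel" "disjoint_family A" "bounded (\<Union>k. A k)"
  shows "(\<lambda>k. qf Om c (A k)) sums qf Om c (\<Union>k. A k)"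
proof -
  have "(\<lambda>k. Om (A k)) sums Om (\<Union>k. A k)" using mm_sums assms by blast
  then have "(\<lambda>n. \<Sum>k<n. Om (A k)) \<longlonglongrightarrow> Om (\<Union>k. A k)" unfolding sums_def .
  then have "(\<lambda>n. Re (cip ((\<Sum>k<n. Om (A k)) *v c) c)) \<longlonglongrightarrow> Re (cip (Om (\<Union>k. A k) *v c) c)"
    by (intro tendsto_Re cip_mv_tendsto)
  then show ?thesis unfolding sums_def qf_def cip_mv_sum by simp
qed

definition qmu where "qmu c S = (SUP k. ennreal (qf Om c (S \<inter> Ik k)))"

lemma qmu_inc: "S \<in> sets borel \<Longrightarrow> incseq (\<lambda>k. ennreal (qf Om c (S \<inter> Ik k)))"
  unfolding incseq_def using Ik_mono Ik_bounded
  by (auto intro!: ennreal_leI qf_mono bounded_Int)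

lemma qmu_positive: "positive (sets borel) (qmu c)"
  unfolding positive_def qmu_def qf_def by (simp add: Om_empty)

lemma qmu_ca: "countably_additive (sets borel) (qmu c)"
  unfolding countably_additive_def
proof (intro allI impI)
  fix A :: "nat \<Rightarrow> real set"
  assume A: "range A \<subseteq> sets borel" "disjoint_family A" "(\<Union>i. A i) \<in> sets borel"
  have Ab: "\<And>i. A i \<in> sets borel" using A by auto
  have s: "(\<lambda>i. qf Om c (A i \<inter> Ik k)) sums qf Om c ((\<Union>i. A i) \<inter> Ik k)" for k
  proof -
    have "(\<lambda>i. qf Om c (A i \<inter> Ik k)) sums qf Om c (\<Union>i. A i \<inter> Ik k)"
    proof (rule qf_sums)
      show "\<And>i. A i \<inter> Ik k \<in> sets borel" using Ab by simp
      show "disjoint_family (\<lambda>i. A i \<inter> Ik k)" using A(2) unfolding disjoint_family_on_def by auto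
      show "bounded (\<Union>i. A i \<inter> Ik k)" using Ik_bounded by (rule bounded_subset) auto
    qed
    moreover have "(\<Union>i. A i \<inter> Ik k) = (\<Union>i. A i) \<inter> Ik k" by auto
    ultimately show ?thesis by simp
  qed
  have "(\<Sum>i. qmu c (A i)) = (\<Sum>i. SUP k. ennreal (qf Om c (A i \<inter> Ik k)))" unfolding qmu_def ..
  also have "\<dots> = (SUP k. \<Sum>i. ennreal (qf Om c (A i \<inter> Ik k)))"
    by (rule ennreal_suminf_SUP_eq) (rule qmu_inc[OF Ab])
  also have "\<dots> = (SUP k. ennreal (qf Om c ((\<Union>i. A i) \<inter> Ik k)))"
  proof (rule SUP_cong[OF refl])
    fix k
    show "(\<Sum>i. ennreal (qf Om c (A i \<inter> Ik k))) = ennreal (qf Om c ((\<Union>i. A i) \<inter> Ik k))"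
    proof (rule suminf_ennreal_eq[OF _ s])
      fix i show "0 \<le> qf Om c (A i \<inter> Ik k)" using Ab[of i] Ik_bounded[of k] by (intro qf_nonneg) auto
    qed
  qed
  also have "\<dots> = qmu c (\<Union>i. A i)" unfolding qmu_def ..
  finally show "(\<Sum>i. qmu c (A i)) = qmu c (\<Union>i. A i)" .
qed

lemma qmeasure_alt: "qmeasure Om c = measure_of UNIV (sets borel) (qmu c)"
  unfolding qmeasure_def qmu_def qf_def Ik_def ..

lemma sets_qmeasure[simp, measurable_cong]: "sets (qmeasure Om c) = sets borel"
proof -
  have "sigma_algebra (space borel) (sets (borel::real measure))" by (rule sets.sigma_algebra_axioms)
  then show ?thesis unfolding qmeasure_def using sigma_algebra.sets_measure_of_eq by force
qed

lemma space_qmeasure[simp]: "space (qmeasure Om c) = UNIV"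
  unfolding qmeasure_def by (simp add: space_measure_of_conv)

lemma emeasure_qmeasure: "S \<in> sets borel \<Longrightarrow> emeasure (qmeasure Om c) S = qmu c S"
  unfolding qmeasure_alt
  by (rule emeasure_measure_of_sigma[OF _ qmu_positive qmu_ca])
     (use sets.sigma_algebra_axioms[of borel] in auto)

lemma emeasure_qmeasure_bounded: assumes S: "S \<in> sets borel" "bounded S"
  shows "emeasure (qmeasure Om c) S = ennreal (qf Om c S)"
proof -
  obtain N where N: "S \<subseteq> Ik N" using bounded_Ik S by blast
  have "qmu c S = (SUP k. ennreal (qf Om c (S \<inter> Ik k)))" unfolding qmu_def ..
  also have "\<dots> = ennreal (qf Om c S)"
  proof (rule antisym)
    show "(SUP k. ennreal (qf Om c (S \<inter> Ik k))) \<le> ennreal (qf Om c S)"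
      by (rule SUP_least, rule ennreal_leI, rule qf_mono) (use S in auto)
    have "ennreal (qf Om c S) = ennreal (qf Om c (S \<inter> Ik N))" using N by (simp add: Int_absorb2)
    also have "\<dots> \<le> (SUP k. ennreal (qf Om c (S \<inter> Ik k)))" by (rule SUP_upper) simp
    finally show "ennreal (qf Om c S) \<le> (SUP k. ennreal (qf Om c (S \<inter> Ik k)))" .
  qed
  finally show ?thesis using emeasure_qmeasure S by simp
qed

lemma measure_qmeasure_bounded: "S \<in> sets borel \<Longrightarrow> bounded S \<Longrightarrow> measure (qmeasure Om c) S = qf Om c S"
  unfolding measure_def using emeasure_qmeasure_bounded qf_nonneg by simp

lemma qmeasure_fin_bounded: "S \<in> sets borel \<Longrightarrow> bounded S \<Longrightarrow> emeasure (qmeasure Om c) S < \<infinity>"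
  using emeasure_qmeasure_bounded by simp

end


lemma sum_SUP_weighted:
  fixes N :: "'i \<Rightarrow> real measure" and w :: "'i \<Rightarrow> real"
  assumes J: "finite J" and sets: "\<And>l. l \<in> J \<Longrightarrow> sets (N l) = sets borel"
    and finb: "\<And>l S. l \<in> J \<Longrightarrow> S \<in> sets borel \<Longrightarrow> bounded S \<Longrightarrow> emeasure (N l) S < \<infinity>"
    and w: "\<And>l. l \<in> J \<Longrightarrow> w l \<ge> 0" and A: "A \<in> sets borel"
  shows "(\<Sum>l\<in>J. ennreal (w l) * emeasure (N l) A) = (SUP k. ennreal (\<Sum>l\<in>J. w l * measure (N l) (A \<inter> Ik k)))"
proof -
  have AI: "A \<inter> Ik k \<in> sets borel" for k using A by simp
  have em: "emeasure (N l) (A \<inter> Ik k) = ennreal (measure (N l) (A \<inter> Ik k))" if "l \<in> J" for l k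
  proof -
    have "bounded (A \<inter> Ik k)" using Ik_bounded[of k] by (rule bounded_subset) auto
    then have "emeasure (N l) (A \<inter> Ik k) < \<infinity>" by (rule finb[OF that AI])
    then show ?thesis by (intro emeasure_eq_ennreal_measure) auto
  qed
  have inc: "incseq (\<lambda>k. A \<inter> Ik k)" unfolding incseq_def using Ik_mono by auto
  have U: "(\<Union>k. A \<inter> Ik k) = A" using Ik_cover by auto
  have e: "emeasure (N l) A = (SUP k. emeasure (N l) (A \<inter> Ik k))" if l: "l \<in> J" for l
  proof -
    have "range (\<lambda>k. A \<inter> Ik k) \<subseteq> sets (N l)" using AI sets[OF l] by auto
    then have "(SUP k. emeasure (N l) (A \<inter> Ik k)) = emeasure (N l) (\<Union>k. A \<inter> Ik k)"
      using SUP_emeasure_incseq[of "\<lambda>k. A \<inter> Ik k" "N l"] inc by blast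
    then show ?thesis unfolding U by simp
  qed
  have "(\<Sum>l\<in>J. ennreal (w l) * emeasure (N l) A) = (\<Sum>l\<in>J. SUP k. ennreal (w l) * emeasure (N l) (A \<inter> Ik k))"
    using e by (simp add: SUP_mult_left_ennreal)
  also have "\<dots> = (SUP k. \<Sum>l\<in>J. ennreal (w l) * emeasure (N l) (A \<inter> Ik k))"
  proof (rule ennreal_SUP_sum[symmetric])
    fix l assume "l \<in> J"
    then show "incseq (\<lambda>k. ennreal (w l) * emeasure (N l) (A \<inter> Ik k))"
      using inc sets AI unfolding incseq_def by (auto intro!: mult_left_mono emeasure_mono)
  qed
  also have "\<dots> = (SUP k. ennreal (\<Sum>l\<in>J. w l * measure (N l) (A \<inter> Ik k)))"
  proof (rule SUP_cong[OF refl])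
    fix k
    have "(\<Sum>l\<in>J. ennreal (w l) * emeasure (N l) (A \<inter> Ik k)) = (\<Sum>l\<in>J. ennreal (w l * measure (N l) (A \<inter> Ik k)))"
      using em w by (intro sum.cong) (auto simp: ennreal_mult)
    also have "\<dots> = ennreal (\<Sum>l\<in>J. w l * measure (N l) (A \<inter> Ik k))"
      using w by (intro sum_ennreal) auto
    finally show "(\<Sum>l\<in>J. ennreal (w l) * emeasure (N l) (A \<inter> Ik k)) = ennreal (\<Sum>l\<in>J. w l * measure (N l) (A \<inter> Ik k))" .
  qed
  finally show ?thesis .
qed

definition wsum :: "'i set \<Rightarrow> ('i \<Rightarrow> real measure) \<Rightarrow> ('i \<Rightarrow> real) \<Rightarrow> (real \<Rightarrow> ennreal) \<Rightarrow> ennreal" where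
  "wsum J N a f = (\<Sum>l\<in>J. ennreal (a l) * (\<integral>\<^sup>+x. f x \<partial>N l))"

lemma wsum_mult:
  assumes m: "\<And>l. l \<in> J \<Longrightarrow> u \<in> borel_measurable (N l)"
  shows "wsum J N a (\<lambda>x. c * u x) = c * wsum J N a u"
proof -
  have "wsum J N a (\<lambda>x. c * u x) = (\<Sum>l\<in>J. c * (ennreal (a l) * (\<integral>\<^sup>+x. u x \<partial>N l)))"
    unfolding wsum_def
  proof (rule sum.cong[OF refl])
    fix l assume l: "l \<in> J"
    have "(\<integral>\<^sup>+x. c * u x \<partial>N l) = c * (\<integral>\<^sup>+x. u x \<partial>N l)" by (rule nn_integral_cmult[OF m[OF l]])
    then show "ennreal (a l) * (\<integral>\<^sup>+x. c * u x \<partial>N l) = c * (ennreal (a l) * (\<integral>\<^sup>+x. u x \<partial>N l))"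
      by (simp only: mult.left_commute)
  qed
  also have "\<dots> = c * wsum J N a u" unfolding wsum_def by (rule sum_distrib_left[symmetric])
  finally show ?thesis .
qed

lemma wsum_add:
  assumes m: "\<And>l. l \<in> J \<Longrightarrow> u \<in> borel_measurable (N l)" "\<And>l. l \<in> J \<Longrightarrow> v \<in> borel_measurable (N l)"
  shows "wsum J N a (\<lambda>x. v x + u x) = wsum J N a v + wsum J N a u"
proof -
  have "wsum J N a (\<lambda>x. v x + u x) = (\<Sum>l\<in>J. ennreal (a l) * (\<integral>\<^sup>+x. v x \<partial>N l) + ennreal (a l) * (\<integral>\<^sup>+x. u x \<partial>N l))"
    unfolding wsum_def
  proof (rule sum.cong[OF refl])
    fix l assume l: "l \<in> J"
    have "(\<integral>\<^sup>+x. v x + u x \<partial>N l) = (\<integral>\<^sup>+x. v x \<partial>N l) + (\<integral>\<^sup>+x. u x \<partial>N l)"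
      by (rule nn_integral_add[OF m(2)[OF l] m(1)[OF l]])
    then show "ennreal (a l) * (\<integral>\<^sup>+x. v x + u x \<partial>N l) = ennreal (a l) * (\<integral>\<^sup>+x. v x \<partial>N l) + ennreal (a l) * (\<integral>\<^sup>+x. u x \<partial>N l)"
      by (simp only: distrib_left)
  qed
  also have "\<dots> = wsum J N a v + wsum J N a u" unfolding wsum_def by (rule sum.distrib)
  finally show ?thesis .
qed

lemma wsum_seq:
  assumes m: "\<And>l i. l \<in> J \<Longrightarrow> U i \<in> borel_measurable (N l)" and inc: "incseq U"
  shows "wsum J N a (SUP i. U i) = (SUP i. wsum J N a (U i))"
proof -
  have conv: "(\<integral>\<^sup>+x. (SUP i. U i) x \<partial>N l) = (SUP i. \<integral>\<^sup>+x. U i x \<partial>N l)" if l: "l \<in> J" for l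
  proof -
    have "incseq (\<lambda>i x. U i x)" using inc by simp
    then have "(\<integral>\<^sup>+x. (SUP i. U i x) \<partial>N l) = (SUP i. \<integral>\<^sup>+x. U i x \<partial>N l)"
      using nn_integral_monotone_convergence_SUP[of "\<lambda>i x. U i x" "N l"] m[OF l] by blast
    moreover have "(\<lambda>x. (SUP i. U i) x) = (\<lambda>x. SUP i. U i x)" by (simp add: image_comp)
    ultimately show ?thesis by simp
  qed
  have inc2: "incseq (\<lambda>i. ennreal (a l) * (\<integral>\<^sup>+x. U i x \<partial>N l))" for l
  proof -
    have "incseq (\<lambda>i. \<integral>\<^sup>+x. U i x \<partial>N l)"
      unfolding incseq_def
    proof (intro allI impI)
      fix i j :: nat assume "i \<le> j"
      then have "U i \<le> U j" using inc unfolding incseq_def by blast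
      then show "(\<integral>\<^sup>+x. U i x \<partial>N l) \<le> (\<integral>\<^sup>+x. U j x \<partial>N l)" by (intro nn_integral_mono) (simp add: le_fun_def)
    qed
    then show ?thesis unfolding incseq_def by (intro allI impI mult_left_mono) auto
  qed
  have "wsum J N a (SUP i. U i) = (\<Sum>l\<in>J. SUP i. ennreal (a l) * (\<integral>\<^sup>+x. U i x \<partial>N l))"
    unfolding wsum_def
  proof (rule sum.cong[OF refl])
    fix l assume "l \<in> J"
    then show "ennreal (a l) * (\<integral>\<^sup>+x. (SUP i. U i) x \<partial>N l) = (SUP i. ennreal (a l) * (\<integral>\<^sup>+x. U i x \<partial>N l))"
      using conv by (simp only: SUP_mult_left_ennreal)
  qed
  also have "\<dots> = (SUP i. wsum J N a (U i))" unfolding wsum_def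
    using ennreal_SUP_sum[of J "\<lambda>l i. ennreal (a l) * integral\<^sup>N (N l) (U i)"] inc2 by simp
  finally show ?thesis .
qed

lemma meas_cong: "sets M = sets borel \<Longrightarrow> u \<in> borel_measurable borel \<Longrightarrow> u \<in> borel_measurable M"
  using measurable_cong_sets[of M borel borel borel] by simp

lemma lin_rel_nn:
  fixes N :: "'i \<Rightarrow> real measure" and r :: "'i \<Rightarrow> real" and f :: "real \<Rightarrow> ennreal"
  assumes I: "finite I" and sets: "\<And>l. l \<in> I \<Longrightarrow> sets (N l) = sets borel"
    and finb: "\<And>l S. l \<in> I \<Longrightarrow> S \<in> sets borel \<Longrightarrow> bounded S \<Longrightarrow> emeasure (N l) S < \<infinity>"
    and rel: "\<And>S. S \<in> sets borel \<Longrightarrow> bounded S \<Longrightarrow> (\<Sum>l\<in>I. r l * measure (N l) S) = 0"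
    and f: "f \<in> borel_measurable borel"
  shows "wsum {l\<in>I. r l > 0} N r f = wsum {l\<in>I. r l < 0} N (\<lambda>l. - r l) f"
  using f
proof (induction rule: borel_measurable_induct)
  case (cong f g)
  then have "f = g" by auto
  then show ?case using cong by simp
next
  case (set A)
  let ?P = "{l\<in>I. r l > 0}" and ?Q = "{l\<in>I. r l < 0}"
  have A: "A \<in> sets borel" using set by simp
  have "(\<Sum>l\<in>?P. ennreal (r l) * (\<integral>\<^sup>+x. indicator A x \<partial>N l)) = (\<Sum>l\<in>?P. ennreal (r l) * emeasure (N l) A)"
    using sets A by (intro sum.cong refl) auto
  also have "\<dots> = (SUP k. ennreal (\<Sum>l\<in>?P. r l * measure (N l) (A \<inter> Ik k)))"
    using I sets finb A by (intro sum_SUP_weighted) auto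
  also have "\<dots> = (SUP k. ennreal (\<Sum>l\<in>?Q. - r l * measure (N l) (A \<inter> Ik k)))"
  proof (rule SUP_cong[OF refl])
    fix k
    have "bounded (A \<inter> Ik k)" using Ik_bounded[of k] by (rule bounded_subset) auto
    then have "(\<Sum>l\<in>I. r l * measure (N l) (A \<inter> Ik k)) = 0" using rel A by auto
    moreover have "(\<Sum>l\<in>I. r l * measure (N l) (A \<inter> Ik k)) = (\<Sum>l\<in>?P. r l * measure (N l) (A \<inter> Ik k)) + (\<Sum>l\<in>?Q. r l * measure (N l) (A \<inter> Ik k))"
    proof -
      have "(\<Sum>l\<in>I. r l * measure (N l) (A \<inter> Ik k)) = (\<Sum>l\<in>I. (if r l > 0 then r l * measure (N l) (A \<inter> Ik k) else 0) + (if r l < 0 then r l * measure (N l) (A \<inter> Ik k) else 0))"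
        by (intro sum.cong) auto
      also have "\<dots> = (\<Sum>l\<in>?P. r l * measure (N l) (A \<inter> Ik k)) + (\<Sum>l\<in>?Q. r l * measure (N l) (A \<inter> Ik k))"
        using I by (simp add: sum.distrib sum.inter_filter)
      finally show ?thesis .
    qed
    ultimately have "(\<Sum>l\<in>?P. r l * measure (N l) (A \<inter> Ik k)) = (\<Sum>l\<in>?Q. - r l * measure (N l) (A \<inter> Ik k))"
      by (simp add: sum_negf)
    then show "ennreal (\<Sum>l\<in>?P. r l * measure (N l) (A \<inter> Ik k)) = ennreal (\<Sum>l\<in>?Q. - r l * measure (N l) (A \<inter> Ik k))" by simp
  qed
  also have "\<dots> = (\<Sum>l\<in>?Q. ennreal (- r l) * emeasure (N l) A)"
    using I sets finb A by (intro sum_SUP_weighted[symmetric]) auto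
  also have "\<dots> = (\<Sum>l\<in>?Q. ennreal (- r l) * (\<integral>\<^sup>+x. indicator A x \<partial>N l))"
    using sets A by (intro sum.cong refl) auto
  finally show ?case unfolding wsum_def .
next
  case (mult u c)
  have m: "\<And>l. l \<in> I \<Longrightarrow> u \<in> borel_measurable (N l)" using mult(2) sets meas_cong by metis
  have "wsum {l\<in>I. r l > 0} N r (\<lambda>x. c * u x) = c * wsum {l\<in>I. r l > 0} N r u"
    by (rule wsum_mult) (use m in blast)
  also have "\<dots> = c * wsum {l\<in>I. r l < 0} N (\<lambda>l. - r l) u" using mult.IH by simp
  also have "\<dots> = wsum {l\<in>I. r l < 0} N (\<lambda>l. - r l) (\<lambda>x. c * u x)"
    by (rule wsum_mult[symmetric]) (use m in blast)
  finally show ?case .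
next
  case (add u v)
  have m: "\<And>l. l \<in> I \<Longrightarrow> u \<in> borel_measurable (N l)" "\<And>l. l \<in> I \<Longrightarrow> v \<in> borel_measurable (N l)"
    using \<open>u \<in> borel_measurable borel\<close> \<open>v \<in> borel_measurable borel\<close> sets meas_cong by metis+
  have "wsum {l\<in>I. r l > 0} N r (\<lambda>x. v x + u x) = wsum {l\<in>I. r l > 0} N r v + wsum {l\<in>I. r l > 0} N r u"
    by (rule wsum_add) (use m in blast)+
  also have "\<dots> = wsum {l\<in>I. r l < 0} N (\<lambda>l. - r l) v + wsum {l\<in>I. r l < 0} N (\<lambda>l. - r l) u" using add.IH by simp
  also have "\<dots> = wsum {l\<in>I. r l < 0} N (\<lambda>l. - r l) (\<lambda>x. v x + u x)"
    by (rule wsum_add[symmetric]) (use m in blast)+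
  finally show ?case .
next
  case (seq U)
  have m: "\<And>l i. l \<in> I \<Longrightarrow> U i \<in> borel_measurable (N l)" using seq(1) sets meas_cong by metis
  have "wsum {l\<in>I. r l > 0} N r (SUP i. U i) = (SUP i. wsum {l\<in>I. r l > 0} N r (U i))"
    by (rule wsum_seq) (use m \<open>incseq U\<close> in blast)+
  also have "\<dots> = (SUP i. wsum {l\<in>I. r l < 0} N (\<lambda>l. - r l) (U i))" using seq.IH by simp
  also have "\<dots> = wsum {l\<in>I. r l < 0} N (\<lambda>l. - r l) (SUP i. U i)"
    by (rule wsum_seq[symmetric]) (use m \<open>incseq U\<close> in blast)+
  finally show ?case .
qed



lemma sum_split_sign:
  fixes r h :: "'i \<Rightarrow> real"
  assumes "finite I"
  shows "(\<Sum>l\<in>I. r l * h l) = (\<Sum>l\<in>{l\<in>I. r l > 0}. r l * h l) + (\<Sum>l\<in>{l\<in>I. r l < 0}. r l * h l)"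
proof -
  have "(\<Sum>l\<in>I. r l * h l) = (\<Sum>l\<in>I. (if r l > 0 then r l * h l else 0) + (if r l < 0 then r l * h l else 0))"
    by (intro sum.cong) auto
  also have "\<dots> = (\<Sum>l\<in>{l\<in>I. r l > 0}. r l * h l) + (\<Sum>l\<in>{l\<in>I. r l < 0}. r l * h l)"
    using assms by (simp add: sum.distrib sum.inter_filter)
  finally show ?thesis .
qed

lemma enn2real_wsum:
  assumes J: "finite J" and a: "\<And>l. l \<in> J \<Longrightarrow> a l \<ge> 0" and fin: "\<And>l. l \<in> J \<Longrightarrow> (\<integral>\<^sup>+x. f x \<partial>N l) < \<infinity>"
  shows "enn2real (wsum J N a f) = (\<Sum>l\<in>J. a l * enn2real (\<integral>\<^sup>+x. f x \<partial>N l))"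
  unfolding wsum_def
proof (subst enn2real_sum)
  show "\<And>l. l \<in> J \<Longrightarrow> ennreal (a l) * (\<integral>\<^sup>+x. f x \<partial>N l) < top" using fin by (simp add: ennreal_mult_less_top)
  show "sum (enn2real \<circ> (\<lambda>l. ennreal (a l) * (\<integral>\<^sup>+x. f x \<partial>N l))) J = (\<Sum>l\<in>J. a l * enn2real (\<integral>\<^sup>+x. f x \<partial>N l))"
    using a by (intro sum.cong) (auto simp: enn2real_mult)
qed

lemma lin_rel_real:
  fixes N :: "'i \<Rightarrow> real measure" and r :: "'i \<Rightarrow> real" and g :: "real \<Rightarrow> real"
  assumes I: "finite I" and sets: "\<And>l. l \<in> I \<Longrightarrow> sets (N l) = sets borel"
    and finb: "\<And>l S. l \<in> I \<Longrightarrow> S \<in> sets borel \<Longrightarrow> bounded S \<Longrightarrow> emeasure (N l) S < \<infinity>"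
    and rel: "\<And>S. S \<in> sets borel \<Longrightarrow> bounded S \<Longrightarrow> (\<Sum>l\<in>I. r l * measure (N l) S) = 0"
    and g: "\<And>l. l \<in> I \<Longrightarrow> integrable (N l) g"
  shows "(\<Sum>l\<in>I. r l * integral\<^sup>L (N l) g) = 0"
proof (cases "I = {}")
  case True then show ?thesis by simp
next
  case False
  then obtain l0 where l0: "l0 \<in> I" by blast
  have gm: "g \<in> borel_measurable borel"
    using borel_measurable_integrable[OF g[OF l0]] unfolding measurable_cong_sets[OF sets[OF l0] refl, of borel] .
  let ?P = "{l\<in>I. r l > 0}" and ?Q = "{l\<in>I. r l < 0}"
  have main: "(\<Sum>l\<in>I. r l * enn2real (\<integral>\<^sup>+x. ennreal (s x) \<partial>N l)) = 0"
    if s: "s = g \<or> s = (\<lambda>x. - g x)" for s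
  proof -
    have sm: "(\<lambda>x. ennreal (s x)) \<in> borel_measurable borel" using s gm by auto
    have fin: "(\<integral>\<^sup>+x. ennreal (s x) \<partial>N l) < \<infinity>" if l: "l \<in> I" for l
    proof -
      have "(\<integral>\<^sup>+x. ennreal (s x) \<partial>N l) \<le> (\<integral>\<^sup>+x. ennreal (norm (g x)) \<partial>N l)"
        using s by (intro nn_integral_mono) (auto intro: ennreal_leI)
      also have "\<dots> < \<infinity>" using g[OF l] unfolding integrable_iff_bounded by blast
      finally show ?thesis .
    qed
    have "wsum ?P N r (\<lambda>x. ennreal (s x)) = wsum ?Q N (\<lambda>l. - r l) (\<lambda>x. ennreal (s x))"
      by (rule lin_rel_nn[OF I sets finb rel sm]) auto
    then have "enn2real (wsum ?P N r (\<lambda>x. ennreal (s x))) = enn2real (wsum ?Q N (\<lambda>l. - r l) (\<lambda>x. ennreal (s x)))"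
      by simp
    then have "(\<Sum>l\<in>?P. r l * enn2real (\<integral>\<^sup>+x. ennreal (s x) \<partial>N l)) = (\<Sum>l\<in>?Q. - r l * enn2real (\<integral>\<^sup>+x. ennreal (s x) \<partial>N l))"
      using I fin by (subst (asm) (1 2) enn2real_wsum) auto
    then have "(\<Sum>l\<in>?P. r l * enn2real (\<integral>\<^sup>+x. ennreal (s x) \<partial>N l)) + (\<Sum>l\<in>?Q. r l * enn2real (\<integral>\<^sup>+x. ennreal (s x) \<partial>N l)) = 0"
      by (simp add: sum_negf)
    then show ?thesis using sum_split_sign[OF I, of r "\<lambda>l. enn2real (\<integral>\<^sup>+x. ennreal (s x) \<partial>N l)"] by simp
  qed
  have "(\<Sum>l\<in>I. r l * integral\<^sup>L (N l) g) = (\<Sum>l\<in>I. r l * enn2real (\<integral>\<^sup>+x. ennreal (g x) \<partial>N l) - r l * enn2real (\<integral>\<^sup>+x. ennreal (- g x) \<partial>N l))"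
    using g by (intro sum.cong refl) (simp add: real_lebesgue_integral_def right_diff_distrib)
  also have "\<dots> = 0" using main[of g] main[of "\<lambda>x. - g x"] by (simp add: sum_subtractf)
  finally show ?thesis .
qed

lemma lin_rel_cplx:
  fixes N :: "'i \<Rightarrow> real measure" and a :: "'i \<Rightarrow> complex" and g :: "real \<Rightarrow> complex"
  assumes I: "finite I" and sets: "\<And>l. l \<in> I \<Longrightarrow> sets (N l) = sets borel"
    and finb: "\<And>l S. l \<in> I \<Longrightarrow> S \<in> sets borel \<Longrightarrow> bounded S \<Longrightarrow> emeasure (N l) S < \<infinity>"
    and rel: "\<And>S. S \<in> sets borel \<Longrightarrow> bounded S \<Longrightarrow> (\<Sum>l\<in>I. a l * complex_of_real (measure (N l) S)) = 0"
    and g: "\<And>l. l \<in> I \<Longrightarrow> integrable (N l) g"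
  shows "(\<Sum>l\<in>I. a l * integral\<^sup>L (N l) g) = 0"
proof -
  have relR: "(\<Sum>l\<in>I. Re (a l) * measure (N l) S) = 0" if "S \<in> sets borel" "bounded S" for S
    using arg_cong[OF rel[OF that], of Re] by (simp add: Re_sum)
  have relI: "(\<Sum>l\<in>I. Im (a l) * measure (N l) S) = 0" if "S \<in> sets borel" "bounded S" for S
    using arg_cong[OF rel[OF that], of Im] by (simp add: Im_sum)
  have gR: "\<And>l. l \<in> I \<Longrightarrow> integrable (N l) (\<lambda>x. Re (g x))" and gI: "\<And>l. l \<in> I \<Longrightarrow> integrable (N l) (\<lambda>x. Im (g x))"
    by (intro integrable_Re g, assumption) (intro integrable_Im g, assumption)
  have iR0: "integral\<^sup>L (N l) (\<lambda>x. Re (g x)) = Re (integral\<^sup>L (N l) g)" if "l \<in> I" for l by (rule integral_Re[OF g[OF that]])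
  have iI0: "integral\<^sup>L (N l) (\<lambda>x. Im (g x)) = Im (integral\<^sup>L (N l) g)" if "l \<in> I" for l by (rule integral_Im[OF g[OF that]])
  have iR: "(\<Sum>l\<in>I. c l * integral\<^sup>L (N l) (\<lambda>x. Re (g x))) = (\<Sum>l\<in>I. c l * Re (integral\<^sup>L (N l) g))" for c
    by (rule sum.cong[OF refl]) (simp add: iR0)
  have iI: "(\<Sum>l\<in>I. c l * integral\<^sup>L (N l) (\<lambda>x. Im (g x))) = (\<Sum>l\<in>I. c l * Im (integral\<^sup>L (N l) g))" for c
    by (rule sum.cong[OF refl]) (simp add: iI0)
  have 1: "(\<Sum>l\<in>I. Re (a l) * Re (integral\<^sup>L (N l) g)) = 0"
    using lin_rel_real[OF I sets finb relR gR] unfolding iR .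
  have 2: "(\<Sum>l\<in>I. Re (a l) * Im (integral\<^sup>L (N l) g)) = 0"
    using lin_rel_real[OF I sets finb relR gI] unfolding iI .
  have 3: "(\<Sum>l\<in>I. Im (a l) * Re (integral\<^sup>L (N l) g)) = 0"
    using lin_rel_real[OF I sets finb relI gR] unfolding iR .
  have 4: "(\<Sum>l\<in>I. Im (a l) * Im (integral\<^sup>L (N l) g)) = 0"
    using lin_rel_real[OF I sets finb relI gI] unfolding iI .
  have "Re (\<Sum>l\<in>I. a l * integral\<^sup>L (N l) g) = (\<Sum>l\<in>I. Re (a l) * Re (integral\<^sup>L (N l) g)) - (\<Sum>l\<in>I. Im (a l) * Im (integral\<^sup>L (N l) g))"
    unfolding Re_sum sum_subtractf[symmetric] by simp
  moreover have "Im (\<Sum>l\<in>I. a l * integral\<^sup>L (N l) g) = (\<Sum>l\<in>I. Re (a l) * Im (integral\<^sup>L (N l) g)) + (\<Sum>l\<in>I. Im (a l) * Re (integral\<^sup>L (N l) g))"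
    unfolding Im_sum sum.distrib[symmetric] by (simp add: add.commute)
  ultimately show ?thesis using 1 2 3 4 by (simp add: complex_eq_iff)
qed



lemma mv_scale: "A *v (t *s x) = t *s (A *v (x :: 'a::comm_ring_1^'n::finite))"
  by (simp add: vec_eq_iff matrix_vector_mult_def sum_distrib_left ac_simps)

lemma mv_axis: "(A *v axis k 1) $ r = A $ r $ k"
proof -
  have "\<And>s. A $ r $ s * axis k 1 $ s = (if s = k then A $ r $ k else 0)" by (simp add: axis_def)
  then show ?thesis unfolding matrix_vector_mult_def by simp
qed

lemma cip_mv_pol_term: "cip (A *v (axis j 1 + t *s axis k 1)) (axis j 1 + t *s axis k 1) =
   A$j$j + cnj t * A$k$j + t * A$j$k + t * cnj t * A$k$k"
  by (simp add: matrix_vector_right_distrib mv_scale cip_add_l cip_add_r cip_scale_l cip_scale_r cip_axis_r mv_axis algebra_simps)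

lemma polarization: "(1/4) * (\<Sum>p<(4::nat). cnj (\<i> ^ p) * cip (A *v (axis j 1 + (\<i> ^ p) *s axis k 1)) (axis j 1 + (\<i> ^ p) *s axis k 1)) = A$j$k"
  unfolding cip_mv_pol_term by (simp add: numeral_eq_Suc lessThan_Suc algebra_simps)

lemma cip_mv_expand2: "cip (A *v c) c = (\<Sum>j\<in>UNIV. \<Sum>k\<in>UNIV. cnj (c$j) * c$k * A$j$k)"
  unfolding cip_mv_expand by (intro sum.cong refl) (simp add: ac_simps)

definition vv :: "'n::finite \<Rightarrow> 'n \<Rightarrow> nat \<Rightarrow> complex^'n" where
  "vv j k p = axis j 1 + (\<i> ^ p) *s axis k 1"

definition pidx :: "('n::finite \<times> 'n \<times> nat) option set" where
  "pidx = insert None (Some ` (UNIV \<times> UNIV \<times> {..<4}))"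

lemma pidx_finite: "finite pidx" unfolding pidx_def by simp

lemma sum_pidx: "(\<Sum>l\<in>pidx. H l) = H None + (\<Sum>j\<in>UNIV. \<Sum>k\<in>UNIV. \<Sum>p<4. H (Some (j, k, p)))"
proof -
  have "(\<Sum>l\<in>pidx. H l) = H None + (\<Sum>l\<in>Some ` (UNIV \<times> UNIV \<times> {..<4}). H l)"
    unfolding pidx_def by (subst sum.insert) auto
  also have "(\<Sum>l\<in>Some ` (UNIV \<times> UNIV \<times> {..<4::nat}). H l) = (\<Sum>x\<in>UNIV \<times> UNIV \<times> {..<4::nat}. H (Some x))"
    by (subst sum.reindex) auto
  also have "\<dots> = (\<Sum>j\<in>UNIV. \<Sum>k\<in>UNIV. \<Sum>p<4. H (Some (j, k, p)))"
    by (simp add: sum.cartesian_product)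
  finally show ?thesis .
qed

context
  fixes Om :: "real set \<Rightarrow> complex^'n::finite^'n"
  assumes mm: "matrix_measure Om"
begin

definition pN :: "complex^'n \<Rightarrow> ('n \<times> 'n \<times> nat) option \<Rightarrow> real measure" where
  "pN c l = (case l of None \<Rightarrow> qmeasure Om c | Some (j, k, p) \<Rightarrow> qmeasure Om (vv j k p))"

definition pa :: "complex^'n \<Rightarrow> ('n \<times> 'n \<times> nat) option \<Rightarrow> complex" where
  "pa c l = (case l of None \<Rightarrow> -1 | Some (j, k, p) \<Rightarrow> cnj (c$j) * c$k * cnj (\<i> ^ p) / 4)"

lemma pN_None[simp]: "pN c None = qmeasure Om c" and pN_Some[simp]: "pN c (Some (j, k, p)) = qmeasure Om (vv j k p)"
  and pa_None[simp]: "pa c None = -1" unfolding pN_def pa_def by auto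

lemma pol_sum: "(\<Sum>j\<in>UNIV. \<Sum>k\<in>UNIV. \<Sum>p<4. pa c (Some (j, k, p)) * cip (A *v vv j k p) (vv j k p)) = cip (A *v c) c"
proof -
  have "(\<Sum>p<4. pa c (Some (j, k, p)) * cip (A *v vv j k p) (vv j k p)) = cnj (c$j) * c$k * A$j$k" for j k
  proof -
    have "(\<Sum>p<4. pa c (Some (j, k, p)) * cip (A *v vv j k p) (vv j k p)) =
      cnj (c$j) * c$k * ((1/4) * (\<Sum>p<(4::nat). cnj (\<i> ^ p) * cip (A *v (axis j 1 + (\<i> ^ p) *s axis k 1)) (axis j 1 + (\<i> ^ p) *s axis k 1)))"
      unfolding pa_def vv_def by (simp add: sum_distrib_left ac_simps)
    then show ?thesis unfolding polarization .
  qed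
  then show ?thesis unfolding cip_mv_expand2 by simp
qed

lemma mint_cip: assumes g: "\<And>v. integrable (qmeasure Om v) g"
  shows "cip (mint Om g *v c) c = integral\<^sup>L (qmeasure Om c) g"
proof -
  have sets: "\<And>l. l \<in> pidx \<Longrightarrow> sets (pN c l) = sets borel" unfolding pN_def
    using sets_qmeasure[OF mm] by (auto split: option.splits)
  have finb: "\<And>l S. l \<in> pidx \<Longrightarrow> S \<in> sets borel \<Longrightarrow> bounded S \<Longrightarrow> emeasure (pN c l) S < \<infinity>"
    unfolding pN_def using qmeasure_fin_bounded[OF mm] by (auto split: option.splits)
  have gi: "\<And>l. l \<in> pidx \<Longrightarrow> integrable (pN c l) g" unfolding pN_def using g by (auto split: option.splits)
  have rel: "(\<Sum>l\<in>pidx. pa c l * complex_of_real (measure (pN c l) S)) = 0" if S: "S \<in> sets borel" "bounded S" for S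
  proof -
    have m: "complex_of_real (measure (qmeasure Om v) S) = cip (Om S *v v) v" for v
      using measure_qmeasure_bounded[OF mm S] qf_real[OF mm S] by simp
    show ?thesis unfolding sum_pidx pN_None pN_Some pa_None m pol_sum by simp
  qed
  have "(\<Sum>l\<in>pidx. pa c l * integral\<^sup>L (pN c l) g) = 0"
    by (rule lin_rel_cplx[OF pidx_finite sets finb rel gi])
  moreover have "(\<Sum>l\<in>pidx. pa c l * integral\<^sup>L (pN c l) g) = - integral\<^sup>L (qmeasure Om c) g + cip (mint Om g *v c) c"
  proof -
    have "(\<Sum>j\<in>UNIV. \<Sum>k\<in>UNIV. \<Sum>p<4. pa c (Some (j, k, p)) * integral\<^sup>L (qmeasure Om (vv j k p)) g) = cip (mint Om g *v c) c"
    proof -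
      have "(\<Sum>p<4. pa c (Some (j, k, p)) * integral\<^sup>L (qmeasure Om (vv j k p)) g) = cnj (c$j) * c$k * mint Om g $j$k" for j k
        unfolding pa_def vv_def mint_def by (simp add: sum_distrib_left ac_simps)
      then show ?thesis unfolding cip_mv_expand2 by simp
    qed
    then show ?thesis unfolding sum_pidx pN_None pN_Some pa_None by simp
  qed
  ultimately show ?thesis by (simp add: algebra_simps)
qed

end


definition Kz :: "complex \<Rightarrow> real" where "Kz z = 2 + (1 + 2 * (Re z)\<^sup>2) / (Im z)\<^sup>2"

lemma cmod_sq_diff: "(cmod (complex_of_real y - z))\<^sup>2 = (y - Re z)\<^sup>2 + (Im z)\<^sup>2"
  by (simp add: cmod_power2)

lemma Kz_pos: "Kz z > 0" unfolding Kz_def by (simp add: add_pos_nonneg)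

lemma dist_bound: assumes z: "Im z \<noteq> 0" shows "1 + y\<^sup>2 \<le> Kz z * (cmod (complex_of_real y - z))\<^sup>2"
proof -
  define a where "a = Re z"
  define b where "b = Im z"
  define t where "t = (y - a)\<^sup>2 + b\<^sup>2"
  have b2: "b\<^sup>2 > 0" using z unfolding b_def by simp
  have tb: "t \<ge> b\<^sup>2" unfolding t_def by simp
  have y2: "y\<^sup>2 \<le> 2 * (y - a)\<^sup>2 + 2 * a\<^sup>2"
  proof -
    have "0 \<le> (y - 2 * a)\<^sup>2" by simp
    then show ?thesis by (simp add: power2_eq_square algebra_simps)
  qed
  have "1 + 2 * a\<^sup>2 \<le> (1 + 2 * a\<^sup>2) / b\<^sup>2 * t"
  proof -
    have "(1 + 2 * a\<^sup>2) / b\<^sup>2 * t \<ge> (1 + 2 * a\<^sup>2) / b\<^sup>2 * b\<^sup>2"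
      using tb b2 by (intro mult_left_mono) (auto intro: divide_nonneg_pos add_nonneg_nonneg)
    then show ?thesis using b2 by simp
  qed
  moreover have "2 * (y - a)\<^sup>2 \<le> 2 * t" unfolding t_def by simp
  ultimately have "1 + y\<^sup>2 \<le> (2 + (1 + 2 * a\<^sup>2) / b\<^sup>2) * t" using y2 by (simp add: algebra_simps)
  then show ?thesis unfolding Kz_def t_def a_def b_def cmod_sq_diff by simp
qed

lemma cmod_diff_pos: "Im z \<noteq> 0 \<Longrightarrow> cmod (complex_of_real y - z) > 0"
proof -
  assume "Im z \<noteq> 0"
  then have "complex_of_real y - z \<noteq> 0"
  proof (intro notI)
    assume "complex_of_real y - z = 0"
    then have "z = complex_of_real y" by simp
    then show False using \<open>Im z \<noteq> 0\<close> by simp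
  qed
  then show ?thesis by simp
qed

lemma inv_sq_bound: assumes z: "Im z \<noteq> 0"
  shows "1 / (cmod (complex_of_real y - z))\<^sup>2 \<le> Kz z / (1 + y\<^sup>2)"
proof -
  have p: "(cmod (complex_of_real y - z))\<^sup>2 > 0" using cmod_diff_pos[OF z] by simp
  have q: "1 + y\<^sup>2 > 0" by (simp add: add_pos_nonneg)
  show ?thesis using dist_bound[OF z, of y] p q by (simp add: field_simps)
qed

definition kk :: "complex \<Rightarrow> real \<Rightarrow> complex" where
  "kk z y = 1 / (complex_of_real y - z) - complex_of_real (y / (1 + y\<^sup>2))"

definition rho :: "complex \<Rightarrow> complex \<Rightarrow> real \<Rightarrow> complex" where
  "rho z w y = 1 / ((complex_of_real y - z) * (complex_of_real y - cnj w))"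

lemma kk_meas[measurable]: "kk z \<in> borel_measurable borel" unfolding kk_def by measurable
lemma rho_meas[measurable]: "rho z w \<in> borel_measurable borel" unfolding rho_def by measurable

lemma kk_alt: assumes z: "Im z \<noteq> 0"
  shows "kk z y = (1 + complex_of_real y * z) / ((complex_of_real y - z) * complex_of_real (1 + y\<^sup>2))"
proof -
  have d: "complex_of_real y - z \<noteq> 0" using cmod_diff_pos[OF z, of y] by auto
  have e: "complex_of_real (1 + y\<^sup>2) \<noteq> 0" by (metis add_pos_nonneg of_real_eq_0_iff zero_le_power2 zero_less_one less_irrefl)
  show ?thesis unfolding kk_def using d e by (simp add: field_simps power2_eq_square)
qed

lemma num_bound: "(cmod (1 + complex_of_real y * z))\<^sup>2 \<le> (1 + y\<^sup>2) * (1 + (cmod z)\<^sup>2)"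
proof -
  have "(1 + y\<^sup>2) * (1 + (cmod z)\<^sup>2) - (cmod (1 + complex_of_real y * z))\<^sup>2 = (y - Re z)\<^sup>2 + (Im z)\<^sup>2"
    unfolding cmod_power2 by (simp add: power2_eq_square algebra_simps)
  moreover have "0 \<le> (y - Re z)\<^sup>2 + (Im z)\<^sup>2" by simp
  ultimately show ?thesis by linarith
qed

lemma frac_aux: "(a::real) > 0 \<Longrightarrow> D > 0 \<Longrightarrow> (a * b) / (D * a\<^sup>2) = b * (1 / D) / a"
  by (simp add: power2_eq_square field_simps)

lemma kk_bound: assumes z: "Im z \<noteq> 0"
  shows "cmod (kk z y) \<le> sqrt ((1 + (cmod z)\<^sup>2) * Kz z) / (1 + y\<^sup>2)"
proof -
  have q: "1 + y\<^sup>2 > 0" by (simp add: add_pos_nonneg)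
  have p: "(cmod (complex_of_real y - z))\<^sup>2 > 0" using cmod_diff_pos[OF z] by simp
  have X: "(1 + (cmod z)\<^sup>2) * Kz z \<ge> 0" using Kz_pos[of z] by (simp add: add_nonneg_nonneg)
  have n: "cmod (complex_of_real (1 + y\<^sup>2)) = 1 + y\<^sup>2" using q by (simp only: norm_of_real abs_of_pos)
  have "(cmod (kk z y))\<^sup>2 = (cmod (1 + complex_of_real y * z))\<^sup>2 / ((cmod (complex_of_real y - z))\<^sup>2 * (1 + y\<^sup>2)\<^sup>2)"
    unfolding kk_alt[OF z] norm_divide norm_mult n by (simp only: power_divide power_mult_distrib)
  also have "\<dots> \<le> ((1 + y\<^sup>2) * (1 + (cmod z)\<^sup>2)) / ((cmod (complex_of_real y - z))\<^sup>2 * (1 + y\<^sup>2)\<^sup>2)"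
    by (rule divide_right_mono[OF num_bound]) (use p q in simp)
  also have "\<dots> = (1 + (cmod z)\<^sup>2) * (1 / (cmod (complex_of_real y - z))\<^sup>2) / (1 + y\<^sup>2)"
    by (rule frac_aux[OF q p])
  also have "\<dots> \<le> (1 + (cmod z)\<^sup>2) * (Kz z / (1 + y\<^sup>2)) / (1 + y\<^sup>2)"
  proof (rule divide_right_mono[OF mult_left_mono])
    show "1 / (cmod (complex_of_real y - z))\<^sup>2 \<le> Kz z / (1 + y\<^sup>2)" by (rule inv_sq_bound[OF z])
    show "0 \<le> 1 + (cmod z)\<^sup>2" by (simp add: add_nonneg_nonneg)
    show "0 \<le> 1 + y\<^sup>2" using q by simp
  qed
  also have "\<dots> = ((1 + (cmod z)\<^sup>2) * Kz z) / (1 + y\<^sup>2)\<^sup>2" by (simp add: power2_eq_square)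
  also have "\<dots> = (sqrt ((1 + (cmod z)\<^sup>2) * Kz z) / (1 + y\<^sup>2))\<^sup>2"
    using X by (simp only: power_divide real_sqrt_pow2)
  finally have "(cmod (kk z y))\<^sup>2 \<le> (sqrt ((1 + (cmod z)\<^sup>2) * Kz z) / (1 + y\<^sup>2))\<^sup>2" .
  moreover have "0 \<le> sqrt ((1 + (cmod z)\<^sup>2) * Kz z) / (1 + y\<^sup>2)" using q X by (intro divide_nonneg_pos) auto
  ultimately show ?thesis by (rule power2_le_imp_le)
qed

lemma rho_bound: assumes z: "Im z \<noteq> 0" and w: "Im w \<noteq> 0"
  shows "cmod (rho z w y) \<le> (Kz z + Kz (cnj w)) / (1 + y\<^sup>2)"
proof -
  have w': "Im (cnj w) \<noteq> 0" using w by simp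
  define p where "p = 1 / cmod (complex_of_real y - z)"
  define q where "q = 1 / cmod (complex_of_real y - cnj w)"
  have "cmod (rho z w y) = p * q" unfolding rho_def p_def q_def by (simp add: norm_divide norm_mult)
  also have "\<dots> \<le> p\<^sup>2 + q\<^sup>2"
  proof -
    have "0 \<le> (p - q)\<^sup>2" by simp
    moreover have "0 \<le> p * q" unfolding p_def q_def by simp
    ultimately show ?thesis by (simp add: power2_eq_square algebra_simps)
  qed
  also have "p\<^sup>2 \<le> Kz z / (1 + y\<^sup>2)" using inv_sq_bound[OF z, of y] unfolding p_def by (simp add: power_divide)
  also have "q\<^sup>2 \<le> Kz (cnj w) / (1 + y\<^sup>2)" using inv_sq_bound[OF w', of y] unfolding q_def by (simp add: power_divide)
  also have "Kz z / (1 + y\<^sup>2) + Kz (cnj w) / (1 + y\<^sup>2) = (Kz z + Kz (cnj w)) / (1 + y\<^sup>2)"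
    by (rule add_divide_distrib[symmetric])
  finally show ?thesis by simp
qed



lemma hermitian_cip_real: "hermitian_mat C \<Longrightarrow> cnj (cip (C *v c) c) = cip (C *v c) c"
proof -
  assume h: "hermitian_mat C"
  have "cnj (cip (C *v c) c) = (\<Sum>j\<in>UNIV. \<Sum>k\<in>UNIV. c$j * cnj (c$k) * cnj (C$j$k))"
    unfolding cip_mv_expand2 by (simp add: cnj_sum)
  also have "\<dots> = (\<Sum>j\<in>UNIV. \<Sum>k\<in>UNIV. c$j * cnj (c$k) * C$k$j)"
  proof -
    have "\<And>j k. cnj (C$j$k) = C$k$j" using h unfolding hermitian_mat_def by (metis complex_cnj_cnj)
    then show ?thesis by simp
  qed
  also have "\<dots> = (\<Sum>k\<in>UNIV. \<Sum>j\<in>UNIV. cnj (c$k) * c$j * C$k$j)" by (subst sum.swap) (simp add: ac_simps)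
  also have "\<dots> = cip (C *v c) c" unfolding cip_mv_expand2 ..
  finally show ?thesis .
qed

lemma cip_mv_3: "cip ((\<chi> i j. A$i$j + z * K$i$j + B$i$j) *v c) c = cip (A *v c) c + z * cip (K *v c) c + cip (B *v c) c"
  unfolding cip_mv_expand2 by (simp add: distrib_left sum.distrib sum_distrib_left ac_simps)

context
  fixes M :: "complex \<Rightarrow> complex^'n::finite^'n" and Om :: "real set \<Rightarrow> complex^'n^'n"
  assumes assoc: "assoc_measure M Om"
begin

lemma am_mm: "matrix_measure Om" using assoc unfolding assoc_measure_def by blast
lemma am_int1: "integrable (qmeasure Om v) (\<lambda>y. 1 / (1 + y\<^sup>2))" using assoc unfolding assoc_measure_def by blast

lemma int_bound: assumes h: "h \<in> borel_measurable borel" and b: "\<And>y. cmod (h y) \<le> B / (1 + y\<^sup>2)"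
  shows "integrable (qmeasure Om v) h"
proof (rule Bochner_Integration.integrable_bound)
  show "integrable (qmeasure Om v) (\<lambda>y. B * (1 / (1 + y\<^sup>2)))" using am_int1 by (rule integrable_mult_right)
  show "h \<in> borel_measurable (qmeasure Om v)" using h meas_cong[OF sets_qmeasure[OF am_mm]] by blast
  show "AE y in qmeasure Om v. norm (h y) \<le> norm (B * (1 / (1 + y\<^sup>2)))"
  proof (rule AE_I2)
    fix y
    have "cmod (h y) \<le> B / (1 + y\<^sup>2)" by (rule b)
    also have "\<dots> \<le> norm (B * (1 / (1 + y\<^sup>2)))"
    proof -
      have q: "0 < 1 + y\<^sup>2" by (simp add: add_pos_nonneg)
      have "B / (1 + y\<^sup>2) \<le> \<bar>B\<bar> / (1 + y\<^sup>2)" using q by (intro divide_right_mono) auto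
      also have "\<dots> = norm (B * (1 / (1 + y\<^sup>2)))" using q by (simp add: abs_mult)
      finally show ?thesis .
    qed
    finally show "norm (h y) \<le> norm (B * (1 / (1 + y\<^sup>2)))" by simp
  qed
qed

lemma kk_int: "Im z \<noteq> 0 \<Longrightarrow> integrable (qmeasure Om v) (kk z)"
  by (rule int_bound[OF kk_meas kk_bound])

lemma rho_int: "Im z \<noteq> 0 \<Longrightarrow> Im w \<noteq> 0 \<Longrightarrow> integrable (qmeasure Om v) (rho z w)"
  by (rule int_bound[OF rho_meas rho_bound])

lemma kk_diff: assumes z: "Im z \<noteq> 0" and w: "Im w \<noteq> 0"
  shows "kk z y - cnj (kk w y) = (z - cnj w) * rho z w y"
proof -
  have d1: "complex_of_real y - z \<noteq> 0" using cmod_diff_pos[OF z, of y] by auto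
  have d2: "complex_of_real y - cnj w \<noteq> 0" using cmod_diff_pos[of "cnj w" y] w by auto
  have "cnj (kk w y) = 1 / (complex_of_real y - cnj w) - complex_of_real (y / (1 + y\<^sup>2))"
    unfolding kk_def by simp
  then show ?thesis unfolding kk_def rho_def using d1 d2 by (simp add: field_simps)
qed

lemma key_formula: "\<exists>\<kappa>\<ge>0. \<forall>z w. Im z > 0 \<longrightarrow> Im w > 0 \<longrightarrow>
   cip (M z *v c) c - cnj (cip (M w *v c) c) = (z - cnj w) * (complex_of_real \<kappa> + integral\<^sup>L (qmeasure Om c) (rho z w))"
proof -
  obtain C K where C: "hermitian_mat C" and K: "psd_mat K"
    and F: "\<And>z. Im z \<noteq> 0 \<Longrightarrow> M z = (\<chi> i j. C$i$j + z * K$i$j + mint Om (kk z) $i$j)"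
    using assoc unfolding assoc_measure_def kk_def by blast
  define \<kappa> where "\<kappa> = Re (cip (K *v c) c)"
  have k0: "\<kappa> \<ge> 0" unfolding \<kappa>_def by (rule psd_nonneg[OF K])
  have kr: "cip (K *v c) c = complex_of_real \<kappa>" unfolding \<kappa>_def by (rule psd_real[OF K])
  have Mf: "cip (M z *v c) c = cip (C *v c) c + z * complex_of_real \<kappa> + integral\<^sup>L (qmeasure Om c) (kk z)"
    if z: "Im z \<noteq> 0" for z
    unfolding F[OF z] cip_mv_3 kr mint_cip[OF am_mm kk_int[OF z]] ..
  show ?thesis
  proof (intro exI[of _ \<kappa>] conjI allI impI k0)
    fix z w :: complex assume z: "Im z > 0" and w: "Im w > 0"
    then have z0: "Im z \<noteq> 0" and w0: "Im w \<noteq> 0" by auto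
    have "integral\<^sup>L (qmeasure Om c) (kk z) - cnj (integral\<^sup>L (qmeasure Om c) (kk w))
        = integral\<^sup>L (qmeasure Om c) (\<lambda>y. kk z y - cnj (kk w y))"
      using kk_int[OF z0] kk_int[OF w0] by (simp add: integral_diff)
    also have "\<dots> = integral\<^sup>L (qmeasure Om c) (\<lambda>y. (z - cnj w) * rho z w y)"
      using kk_diff[OF z0 w0] by simp
    also have "\<dots> = (z - cnj w) * integral\<^sup>L (qmeasure Om c) (rho z w)" by simp
    finally have I: "integral\<^sup>L (qmeasure Om c) (kk z) - cnj (integral\<^sup>L (qmeasure Om c) (kk w)) = (z - cnj w) * integral\<^sup>L (qmeasure Om c) (rho z w)" .
    have "cip (M z *v c) c - cnj (cip (M w *v c) c) = (cip (C *v c) c - cnj (cip (C *v c) c)) + (z - cnj w) * complex_of_real \<kappa>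
      + (integral\<^sup>L (qmeasure Om c) (kk z) - cnj (integral\<^sup>L (qmeasure Om c) (kk w)))"
      unfolding Mf[OF z0] Mf[OF w0] by (simp add: algebra_simps)
    also have "\<dots> = (z - cnj w) * (complex_of_real \<kappa> + integral\<^sup>L (qmeasure Om c) (rho z w))"
      unfolding I hermitian_cip_real[OF C] by (simp add: algebra_simps)
    finally show "cip (M z *v c) c - cnj (cip (M w *v c) c) = (z - cnj w) * (complex_of_real \<kappa> + integral\<^sup>L (qmeasure Om c) (rho z w))" .
  qed
qed

end


definition sq :: "real \<Rightarrow> real \<Rightarrow> real \<Rightarrow> real" where "sq x e y = 1 / ((y - x)\<^sup>2 + e\<^sup>2)"
definition ek :: "nat \<Rightarrow> real" where "ek k = 1 / (real k + 1)"
definition cmb :: "real \<Rightarrow> real \<Rightarrow> real \<Rightarrow> real \<Rightarrow> real" where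
  "cmb x e1 e2 y = (e1 - e2)\<^sup>2 / (((y - x)\<^sup>2 + e1\<^sup>2) * ((y - x)\<^sup>2 + e2\<^sup>2))"

lemma ek_pos: "ek k > 0" unfolding ek_def by simp
lemma ek_mono: "k \<le> m \<Longrightarrow> ek m \<le> ek k" unfolding ek_def by (simp add: frac_le)
lemma ek_lim: "ek \<longlonglongrightarrow> 0" unfolding ek_def using LIMSEQ_inverse_real_of_nat by (simp add: inverse_eq_divide add.commute)

lemma sq_meas[measurable]: "sq x e \<in> borel_measurable borel" unfolding sq_def by measurable

lemma rho_sq: assumes e: "e \<noteq> 0" shows "rho (Complex x e) (Complex x e) y = complex_of_real (sq x e y)"
proof -
  have "(complex_of_real y - Complex x e) * (complex_of_real y - cnj (Complex x e)) = complex_of_real ((y - x)\<^sup>2 + e\<^sup>2)"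
    by (simp add: complex_eq_iff power2_eq_square algebra_simps)
  then show ?thesis unfolding rho_def sq_def by simp
qed

lemma rho_comb: assumes e1: "e1 \<noteq> 0" and e2: "e2 \<noteq> 0"
  shows "rho (Complex x e1) (Complex x e1) y - rho (Complex x e1) (Complex x e2) y - rho (Complex x e2) (Complex x e1) y
     + rho (Complex x e2) (Complex x e2) y = complex_of_real (cmb x e1 e2 y)"
proof -
  define A where "A = complex_of_real y - Complex x e1"
  define B where "B = complex_of_real y - Complex x e2"
  have A0: "A \<noteq> 0" unfolding A_def using e1 by (simp add: complex_eq_iff)
  have B0: "B \<noteq> 0" unfolding B_def using e2 by (simp add: complex_eq_iff)
  have cA: "complex_of_real y - cnj (Complex x e1) = cnj A" unfolding A_def by simp
  have cB: "complex_of_real y - cnj (Complex x e2) = cnj B" unfolding B_def by simp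
  have "rho (Complex x e1) (Complex x e1) y - rho (Complex x e1) (Complex x e2) y - rho (Complex x e2) (Complex x e1) y
     + rho (Complex x e2) (Complex x e2) y = (1/A - 1/B) * cnj (1/A - 1/B)"
    unfolding rho_def cA cB unfolding A_def[symmetric] B_def[symmetric] using A0 B0
    by (simp add: field_simps)
  also have "\<dots> = complex_of_real ((cmod (1/A - 1/B))\<^sup>2)" by (rule complex_norm_square[symmetric])
  also have "cmod (1/A - 1/B) = cmod (B - A) / (cmod A * cmod B)"
    using A0 B0 by (simp add: field_simps norm_divide norm_mult)
  also have "B - A = Complex 0 (e1 - e2)" unfolding A_def B_def by (simp add: complex_eq_iff)
  also have "(cmod (Complex 0 (e1 - e2)) / (cmod A * cmod B))\<^sup>2 = cmb x e1 e2 y"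
  proof -
    have "(cmod (Complex 0 (e1 - e2)))\<^sup>2 = (e1 - e2)\<^sup>2" by (simp add: cmod_power2)
    moreover have "(cmod A)\<^sup>2 = (y - x)\<^sup>2 + e1\<^sup>2" unfolding A_def cmod_sq_diff by simp
    moreover have "(cmod B)\<^sup>2 = (y - x)\<^sup>2 + e2\<^sup>2" unfolding B_def cmod_sq_diff by simp
    ultimately show ?thesis unfolding cmb_def by (simp add: power_divide power_mult_distrib)
  qed
  finally show ?thesis .
qed

lemma cmb_le: assumes "0 < e2" "e2 \<le> e1" shows "cmb x e1 e2 y \<le> sq x e2 y - sq x e1 y"
proof -
  define t where "t = (y - x)\<^sup>2"
  have t0: "t \<ge> 0" unfolding t_def by simp
  have p1: "t + e1\<^sup>2 > 0" and p2: "t + e2\<^sup>2 > 0" using assms t0 by (auto intro: add_nonneg_pos)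
  have "(e1 - e2)\<^sup>2 \<le> e1\<^sup>2 - e2\<^sup>2"
  proof -
    have "(e1 - e2)\<^sup>2 = (e1 - e2) * (e1 - e2)" by (simp add: power2_eq_square)
    also have "\<dots> \<le> (e1 - e2) * (e1 + e2)" using assms by (intro mult_left_mono) auto
    also have "\<dots> = e1\<^sup>2 - e2\<^sup>2" by (simp add: power2_eq_square algebra_simps)
    finally show ?thesis .
  qed
  then have "(e1 - e2)\<^sup>2 / ((t + e1\<^sup>2) * (t + e2\<^sup>2)) \<le> (e1\<^sup>2 - e2\<^sup>2) / ((t + e1\<^sup>2) * (t + e2\<^sup>2))"
    using p1 p2 by (intro divide_right_mono) auto
  also have "\<dots> = 1 / (t + e2\<^sup>2) - 1 / (t + e1\<^sup>2)" using p1 p2 by (simp add: field_simps)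
  finally show ?thesis unfolding cmb_def sq_def t_def .
qed

lemma T_sup: "(if y = x then \<infinity> else ennreal (1 / (x - y)\<^sup>2)) = (SUP k. ennreal (sq x (ek k) y))"
proof -
  have inc: "incseq (\<lambda>k. ennreal (sq x (ek k) y))"
    unfolding incseq_def sq_def
  proof (intro allI impI ennreal_leI)
    fix k m :: nat assume "k \<le> m"
    then have "ek m \<le> ek k" by (rule ek_mono)
    then have "(ek m)\<^sup>2 \<le> (ek k)\<^sup>2" using ek_pos by (intro power_mono) (auto intro: less_imp_le)
    moreover have "0 < (y - x)\<^sup>2 + (ek m)\<^sup>2" using ek_pos[of m] by (intro add_nonneg_pos) auto
    ultimately show "1 / ((y - x)\<^sup>2 + (ek k)\<^sup>2) \<le> 1 / ((y - x)\<^sup>2 + (ek m)\<^sup>2)" by (intro divide_left_mono) auto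
  qed
  have lim: "(\<lambda>k. ennreal (sq x (ek k) y)) \<longlonglongrightarrow> (if y = x then \<infinity> else ennreal (1 / (x - y)\<^sup>2))"
  proof (cases "y = x")
    case False
    have "(\<lambda>k. sq x (ek k) y) \<longlonglongrightarrow> 1 / ((y - x)\<^sup>2 + 0\<^sup>2)"
      unfolding sq_def using False by (intro tendsto_intros ek_lim) auto
    then have "(\<lambda>k. ennreal (sq x (ek k) y)) \<longlonglongrightarrow> ennreal (1 / (x - y)\<^sup>2)"
      by (intro tendsto_ennrealI) (simp add: power2_commute)
    then show ?thesis using False by simp
  next
    case True
    have e: "sq x (ek k) y = (real k + 1)\<^sup>2" for k unfolding sq_def ek_def True by (simp add: power_divide)
    have "filterlim (\<lambda>k. (real k + 1)\<^sup>2) at_top sequentially"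
      by real_asymp
    then have "(\<lambda>k. ennreal ((real k + 1)\<^sup>2)) \<longlonglongrightarrow> \<infinity>"
      by (simp add: ennreal_tendsto_top_eq_at_top)
    then show ?thesis using True e by simp
  qed
  show ?thesis using LIMSEQ_unique[OF lim LIMSEQ_SUP[OF inc]] .
qed



locale full = bsetting sm ip Dom B G1 G2
  for sm :: "complex \<Rightarrow> 'h::ab_group_add \<Rightarrow> 'h" and ip Dom B and G1 G2 :: "'h \<Rightarrow> complex^'n::finite" +
  fixes M :: "complex \<Rightarrow> complex^'n^'n" and Om :: "real set \<Rightarrow> complex^'n^'n"
  assumes cns: "completely_nonselfadjoint sm ip Dom B"
    and weyl: "weyl_function sm ip Dom B G1 G2 M"
    and assoc: "assoc_measure M Om"
begin

lemma no_eig: assumes f: "f \<in> Dom" and Bf: "B f = sm (complex_of_real x) f" shows "f = 0"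
proof (rule ccontr)
  assume f0: "f \<noteq> 0"
  have ff: "ip f f \<noteq> 0" using f0 ip_def0 by blast
  define L where "L = {sm a f |a. True}"
  have Lsm: "sm a f \<in> L" for a unfolding L_def by blast
  have fL: "f \<in> L" using Lsm[of 1] by simp
  have LDom: "L \<subseteq> Dom" unfolding L_def using Dom_sm f by blast
  have BL: "B u \<in> L" if "u \<in> L" for u
  proof -
    obtain a where u: "u = sm a f" using \<open>u \<in> L\<close> unfolding L_def by blast
    have "B u = sm (a * complex_of_real x) f" unfolding u B_sm[OF f] Bf sm_assoc ..
    then show ?thesis using Lsm by simp
  qed
  have sub: "subspace_h sm L" unfolding subspace_h_def
  proof (intro conjI ballI allI)
    show "0 \<in> L" using Lsm[of 0] by simp
    fix u v assume "u \<in> L" "v \<in> L"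
    then obtain a b where "u = sm a f" "v = sm b f" unfolding L_def by blast
    then have "u + v = sm (a + b) f" by (simp add: sm_add_l)
    then show "u + v \<in> L" using Lsm by simp
  next
    fix c u assume "u \<in> L"
    then obtain a where "u = sm a f" unfolding L_def by blast
    then have "sm c u = sm (c * a) f" by (simp add: sm_assoc)
    then show "sm c u \<in> L" using Lsm by simp
  qed
  have closed: "closed_subspace_h sm ip L" unfolding closed_subspace_h_def
  proof (intro conjI sub allI impI)
    fix X y assume h: "(\<forall>k. X k \<in> L) \<and> hconv ip X y"
    then have "\<forall>k. \<exists>a. X k = sm a f" unfolding L_def by blast
    then obtain a where a: "\<And>k. X k = sm (a k) f" by metis
    have "(\<lambda>k. ip (X k) f) \<longlonglongrightarrow> ip y f" using h hconv_ip_l by blast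
    moreover have "\<And>k. ip (X k) f = a k * ip f f" using a ip_sm_l by simp
    ultimately have "(\<lambda>k. a k * ip f f) \<longlonglongrightarrow> ip y f" by simp
    then have "(\<lambda>k. a k * ip f f / ip f f) \<longlonglongrightarrow> ip y f / ip f f" by (rule tendsto_divide[OF _ tendsto_const ff])
    then have ak: "a \<longlonglongrightarrow> ip y f / ip f f" using ff by simp
    have "hconv ip (\<lambda>k. sm (a k) f) (sm (ip y f / ip f f) f)" using hconv_sm[OF ak hconv_const] .
    moreover have "X = (\<lambda>k. sm (a k) f)" using a by auto
    ultimately have "hconv ip X (sm (ip y f / ip f f) f)" by simp
    then have "y = sm (ip y f / ip f f) f" using h hconv_unique by blast
    then show "y \<in> L" using Lsm by metis
  qed
  have ne: "L \<noteq> {0}" using fL f0 by blast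
  have red: "reducing ip Dom B L" unfolding reducing_def
  proof (intro ballI)
    fix u assume u: "u \<in> Dom"
    define t where "t = ip u f / ip f f"
    define v where "v = u - sm t f"
    have vf: "ip v f = 0" unfolding v_def t_def using ff by (simp add: ip_simps)
    have orth_v: "orth_to ip v L" unfolding orth_to_def L_def using vf by (auto simp: ip_sm_r)
    have vD: "v \<in> Dom" unfolding v_def using Dom_diff[OF u Dom_sm[OF f]] .
    have "ip (B v) f = ip v (B f)" using B_sym[OF vD f] .
    also have "\<dots> = 0" unfolding Bf by (simp add: ip_sm_r vf)
    finally have Bvf: "ip (B v) f = 0" .
    have orth_Bv: "orth_to ip (B v) L" unfolding orth_to_def L_def using Bvf by (auto simp: ip_sm_r)
    show "\<exists>a b. u = a + b \<and> a \<in> L \<and> orth_to ip b L \<and> a \<in> Dom \<and> B a \<in> L \<and> orth_to ip (B b) L"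
      using orth_v orth_Bv Lsm LDom BL unfolding v_def by (intro exI[of _ "sm t f"] exI[of _ "u - sm t f"]) auto
  qed
  have sa: "selfadj_in ip L (Dom \<inter> L) B" unfolding selfadj_in_def
  proof (intro conjI)
    have DL: "Dom \<inter> L = L" using LDom by blast
    show "Dom \<inter> L \<subseteq> L" by blast
    show "\<forall>x\<in>Dom \<inter> L. B x \<in> L" using BL by blast
    show "dense_in ip L (Dom \<inter> L)" unfolding dense_in_def DL
      by (intro ballI allI impI, rule bexI[of _ _]) auto
    show "{y \<in> L. \<exists>z\<in>L. \<forall>x\<in>Dom \<inter> L. ip (B x) y = ip x z} = Dom \<inter> L"
    proof
      show "{y \<in> L. \<exists>z\<in>L. \<forall>x\<in>Dom \<inter> L. ip (B x) y = ip x z} \<subseteq> Dom \<inter> L" using DL by blast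
      show "Dom \<inter> L \<subseteq> {y \<in> L. \<exists>z\<in>L. \<forall>x\<in>Dom \<inter> L. ip (B x) y = ip x z}"
        using BL B_sym by blast
    qed
    show "\<forall>y\<in>Dom \<inter> L. \<forall>x\<in>Dom \<inter> L. ip (B x) y = ip x (B y)" using B_sym by blast
  qed
  show False using cns closed ne red sa unfolding completely_nonselfadjoint_def by blast
qed

lemma eig_zero: assumes g: "g \<in> Ds" "Bs g = sm (complex_of_real x) g" "G1 g = 0" "G2 g = 0" shows "g = 0"
proof -
  have gD: "g \<in> Dom" using ker_G_Dom g by blast
  then have "B g = sm (complex_of_real x) g" using g Bs_B by simp
  then show ?thesis using no_eig gD by blast
qed

lemma weyl_eq: assumes z: "Im z \<noteq> 0" and g: "g \<in> Ds" "Bs g = sm z g" shows "G2 g = M z *v G1 g"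
proof -
  have "z \<in> resolvent_set sm ip D1 Bs" by (rule A1_resolvent[OF z])
  moreover have "g \<in> eigsp sm Ds Bs z" unfolding eigsp_def using g by blast
  ultimately show ?thesis using weyl unfolding weyl_function_def Let_def by blast
qed

definition gam :: "complex \<Rightarrow> complex^'n \<Rightarrow> 'h" where
  "gam z c = (SOME g. g \<in> Ds \<and> Bs g = sm z g \<and> G1 g = c)"

lemma gam_prop: assumes z: "Im z \<noteq> 0" shows "gam z c \<in> Ds" "Bs (gam z c) = sm z (gam z c)" "G1 (gam z c) = c"
proof -
  have "gam z c \<in> Ds \<and> Bs (gam z c) = sm z (gam z c) \<and> G1 (gam z c) = c"
    unfolding gam_def using gamma_ex[OF z] by (rule someI_ex)
  then show "gam z c \<in> Ds" "Bs (gam z c) = sm z (gam z c)" "G1 (gam z c) = c" by auto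
qed

lemma gam_lin: assumes z: "Im z \<noteq> 0"
  shows "gam z (a *s c + b *s d) = sm a (gam z c) + sm b (gam z d)"
proof (rule gamma_uniq[OF z])
  note gc = gam_prop[OF z, of c] and gd = gam_prop[OF z, of d] and g = gam_prop[OF z, of "a *s c + b *s d"]
  show "gam z (a *s c + b *s d) \<in> Ds" "Bs (gam z (a *s c + b *s d)) = sm z (gam z (a *s c + b *s d))" using g by auto
  show "sm a (gam z c) + sm b (gam z d) \<in> Ds" using Ds_lin gc gd by blast
  have "Bs (sm a (gam z c) + sm b (gam z d)) = sm a (sm z (gam z c)) + sm b (sm z (gam z d))"
    using Ds_lin(2)[OF gc(1) gd(1)] gc gd by simp
  also have "\<dots> = sm z (sm a (gam z c) + sm b (gam z d))" by (simp add: sm_assoc sm_add_r mult.commute)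
  finally show "Bs (sm a (gam z c) + sm b (gam z d)) = sm z (sm a (gam z c) + sm b (gam z d))" .
  show "G1 (gam z (a *s c + b *s d)) = G1 (sm a (gam z c) + sm b (gam z d))"
    using G_lin[OF gc(1) gd(1)] gc gd g by simp
qed

lemma gam_green: assumes z: "Im z \<noteq> 0" and w: "Im w \<noteq> 0"
  shows "(z - cnj w) * ip (gam z c) (gam w c) = cip (M z *v c) c - cnj (cip (M w *v c) c)"
proof -
  note gz = gam_prop[OF z, of c] and gw = gam_prop[OF w, of c]
  have "ip (Bs (gam z c)) (gam w c) - ip (gam z c) (Bs (gam w c)) = (z - cnj w) * ip (gam z c) (gam w c)"
    unfolding gz(2) gw(2) by (simp add: ip_sm_l ip_sm_r algebra_simps)
  moreover have "ip (Bs (gam z c)) (gam w c) - ip (gam z c) (Bs (gam w c)) = cip (M z *v c) c - cip c (M w *v c)"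
    using green[OF gz(1) gw(1)] weyl_eq[OF z gz(1,2)] weyl_eq[OF w gw(1,2)] gz(3) gw(3) by simp
  moreover have "cip c (M w *v c) = cnj (cip (M w *v c) c)" by (rule cip_sym)
  ultimately show ?thesis by simp
qed

end


context full begin

abbreviation "mu c \<equiv> qmeasure Om c"

definition kap :: "complex^'n \<Rightarrow> real" where
  "kap c = (SOME \<kappa>. \<kappa> \<ge> 0 \<and> (\<forall>z w. Im z > 0 \<longrightarrow> Im w > 0 \<longrightarrow>
     cip (M z *v c) c - cnj (cip (M w *v c) c) = (z - cnj w) * (complex_of_real \<kappa> + integral\<^sup>L (qmeasure Om c) (rho z w))))"

lemma kap: "kap c \<ge> 0" "\<And>z w. Im z > 0 \<Longrightarrow> Im w > 0 \<Longrightarrow>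
     cip (M z *v c) c - cnj (cip (M w *v c) c) = (z - cnj w) * (complex_of_real (kap c) + integral\<^sup>L (qmeasure Om c) (rho z w))"
proof -
  have "kap c \<ge> 0 \<and> (\<forall>z w. Im z > 0 \<longrightarrow> Im w > 0 \<longrightarrow>
     cip (M z *v c) c - cnj (cip (M w *v c) c) = (z - cnj w) * (complex_of_real (kap c) + integral\<^sup>L (qmeasure Om c) (rho z w)))"
    unfolding kap_def by (rule someI_ex[OF key_formula[OF assoc]])
  then show "kap c \<ge> 0" "\<And>z w. Im z > 0 \<Longrightarrow> Im w > 0 \<Longrightarrow>
     cip (M z *v c) c - cnj (cip (M w *v c) c) = (z - cnj w) * (complex_of_real (kap c) + integral\<^sup>L (qmeasure Om c) (rho z w))"
    by auto
qed

lemma gamP: assumes z: "Im z > 0" and w: "Im w > 0"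
  shows "ip (gam z c) (gam w c) = complex_of_real (kap c) + integral\<^sup>L (mu c) (rho z w)"
proof -
  have nz: "z - cnj w \<noteq> 0"
  proof
    assume "z - cnj w = 0"
    then have "Im (z - cnj w) = 0" by simp
    then show False using z w by simp
  qed
  have "(z - cnj w) * ip (gam z c) (gam w c) = (z - cnj w) * (complex_of_real (kap c) + integral\<^sup>L (mu c) (rho z w))"
    using gam_green[of z w c] kap(2)[OF z w, of c] z w by simp
  then show ?thesis using nz by simp
qed

lemma rho_int': "Im z \<noteq> 0 \<Longrightarrow> Im w \<noteq> 0 \<Longrightarrow> integrable (mu c) (rho z w)"
  by (rule rho_int[OF assoc])

lemma sq_int: assumes e: "e \<noteq> 0" shows "integrable (mu c) (sq x e)"
proof -
  have "integrable (mu c) (\<lambda>y. Re (rho (Complex x e) (Complex x e) y))"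
    using rho_int'[of "Complex x e" "Complex x e" c] e by (intro integrable_Re) simp
  moreover have "(\<lambda>y. Re (rho (Complex x e) (Complex x e) y)) = sq x e" using rho_sq[OF e] by auto
  ultimately show ?thesis by simp
qed

lemma nrm_gam: assumes e: "e > 0"
  shows "(nrm (gam (Complex x e) c))\<^sup>2 = kap c + integral\<^sup>L (mu c) (sq x e)"
proof -
  have r: "rho (Complex x e) (Complex x e) = (\<lambda>y. complex_of_real (sq x e y))" using rho_sq e by auto
  have "complex_of_real ((nrm (gam (Complex x e) c))\<^sup>2) = ip (gam (Complex x e) c) (gam (Complex x e) c)"
    by (rule nrm_sq_c)
  also have "\<dots> = complex_of_real (kap c) + integral\<^sup>L (mu c) (rho (Complex x e) (Complex x e))"
    using gamP e by simp
  also have "\<dots> = complex_of_real (kap c + integral\<^sup>L (mu c) (sq x e))" unfolding r by simp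
  finally show ?thesis by (simp only: of_real_eq_iff)
qed

lemma nrm_gam_diff: assumes e1: "e1 > 0" and e2: "e2 > 0"
  shows "(nrm (gam (Complex x e1) c - gam (Complex x e2) c))\<^sup>2 = integral\<^sup>L (mu c) (cmb x e1 e2)"
proof -
  let ?z1 = "Complex x e1" and ?z2 = "Complex x e2"
  let ?g1 = "gam ?z1 c" and ?g2 = "gam ?z2 c"
  have i1: "Im ?z1 > 0" "Im ?z2 > 0" using e1 e2 by auto
  have ints: "integrable (mu c) (rho a b)" if "a \<in> {?z1, ?z2}" "b \<in> {?z1, ?z2}" for a b
    using that e1 e2 by (intro rho_int') auto
  have "complex_of_real ((nrm (?g1 - ?g2))\<^sup>2) = ip (?g1 - ?g2) (?g1 - ?g2)" by (rule nrm_sq_c)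
  also have "\<dots> = ip ?g1 ?g1 - ip ?g1 ?g2 - ip ?g2 ?g1 + ip ?g2 ?g2" by (simp add: ip_simps)
  also have "\<dots> = integral\<^sup>L (mu c) (rho ?z1 ?z1) - integral\<^sup>L (mu c) (rho ?z1 ?z2) - integral\<^sup>L (mu c) (rho ?z2 ?z1) + integral\<^sup>L (mu c) (rho ?z2 ?z2)"
    unfolding gamP[OF i1(1) i1(1)] gamP[OF i1(1) i1(2)] gamP[OF i1(2) i1(1)] gamP[OF i1(2) i1(2)] by simp
  also have "\<dots> = integral\<^sup>L (mu c) (\<lambda>y. rho ?z1 ?z1 y - rho ?z1 ?z2 y - rho ?z2 ?z1 y + rho ?z2 ?z2 y)"
    using ints by (simp add: integral_diff integral_add)
  also have "\<dots> = integral\<^sup>L (mu c) (\<lambda>y. complex_of_real (cmb x e1 e2 y))"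
    using rho_comb e1 e2 by simp
  also have "\<dots> = complex_of_real (integral\<^sup>L (mu c) (cmb x e1 e2))" by simp
  finally show ?thesis by (simp only: of_real_eq_iff)
qed

lemma cmb_int: assumes e1: "e1 > 0" and e2: "e2 > 0" shows "integrable (mu c) (cmb x e1 e2)"
proof -
  let ?z1 = "Complex x e1" and ?z2 = "Complex x e2"
  have "integrable (mu c) (\<lambda>y. rho ?z1 ?z1 y - rho ?z1 ?z2 y - rho ?z2 ?z1 y + rho ?z2 ?z2 y)"
    using e1 e2 by (intro Bochner_Integration.integrable_add Bochner_Integration.integrable_diff rho_int') auto
  then have "integrable (mu c) (\<lambda>y. Re (rho ?z1 ?z1 y - rho ?z1 ?z2 y - rho ?z2 ?z1 y + rho ?z2 ?z2 y))"
    by (rule integrable_Re)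
  moreover have "(\<lambda>y. Re (rho ?z1 ?z1 y - rho ?z1 ?z2 y - rho ?z2 ?z1 y + rho ?z2 ?z2 y)) = cmb x e1 e2"
  proof (rule ext)
    fix y
    have n1: "e1 \<noteq> 0" and n2: "e2 \<noteq> 0" using e1 e2 by auto
    show "Re (rho ?z1 ?z1 y - rho ?z1 ?z2 y - rho ?z2 ?z1 y + rho ?z2 ?z2 y) = cmb x e1 e2 y"
      unfolding rho_comb[OF n1 n2] by simp
  qed
  ultimately show ?thesis by simp
qed

end


lemma herm_cip: assumes h: "hermitian_mat D" shows "cip (D *v a) b = cip a (D *v b)"
proof -
  have hc: "\<And>i j. cnj (D$j$i) = D$i$j" using h unfolding hermitian_mat_def by (metis complex_cnj_cnj)
  have "cip (D *v a) b = (\<Sum>i\<in>UNIV. \<Sum>j\<in>UNIV. D$i$j * a$j * cnj (b$i))"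
    unfolding cip_def matrix_vector_mult_def by (simp add: sum_distrib_right)
  also have "\<dots> = (\<Sum>j\<in>UNIV. \<Sum>i\<in>UNIV. a$j * (cnj (D$j$i) * cnj (b$i)))"
    by (subst sum.swap) (simp add: hc ac_simps)
  also have "\<dots> = cip a (D *v b)"
    unfolding cip_def matrix_vector_mult_def by (simp add: sum_distrib_left cnj_sum)
  finally show ?thesis .
qed

lemma sq_inc: "k \<le> m \<Longrightarrow> sq x (ek k) y \<le> sq x (ek m) y"
proof -
  assume "k \<le> m"
  then have "ek m \<le> ek k" by (rule ek_mono)
  then have "(ek m)\<^sup>2 \<le> (ek k)\<^sup>2" using ek_pos by (intro power_mono) (auto intro: less_imp_le)
  moreover have "0 < (y - x)\<^sup>2 + (ek m)\<^sup>2" using ek_pos[of m] by (intro add_nonneg_pos) auto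
  ultimately show ?thesis unfolding sq_def by (intro divide_left_mono) auto
qed

lemma sq_nonneg: "e \<noteq> 0 \<Longrightarrow> sq x e y \<ge> 0" unfolding sq_def by (simp add: add_nonneg_nonneg)

context full begin

lemma Tint_eq: "(\<integral>\<^sup>+y. (if y = x then \<infinity> else ennreal (1 / (x - y)\<^sup>2)) \<partial>mu c) = (SUP k. ennreal (integral\<^sup>L (mu c) (sq x (ek k))))"
proof -
  have "(\<integral>\<^sup>+y. (if y = x then \<infinity> else ennreal (1 / (x - y)\<^sup>2)) \<partial>mu c) = (\<integral>\<^sup>+y. (SUP k. ennreal (sq x (ek k) y)) \<partial>mu c)"
    using T_sup by simp
  also have "\<dots> = (SUP k. \<integral>\<^sup>+y. ennreal (sq x (ek k) y) \<partial>mu c)"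
  proof (rule nn_integral_monotone_convergence_SUP)
    show "incseq (\<lambda>k y. ennreal (sq x (ek k) y))" unfolding incseq_def le_fun_def
      by (auto intro!: ennreal_leI sq_inc)
    show "\<And>k. (\<lambda>y. ennreal (sq x (ek k) y)) \<in> borel_measurable (mu c)"
    proof -
      fix k
      have "(\<lambda>y. ennreal (sq x (ek k) y)) \<in> borel_measurable borel" by measurable
      then show "(\<lambda>y. ennreal (sq x (ek k) y)) \<in> borel_measurable (mu c)"
        using meas_cong[OF sets_qmeasure[OF am_mm[OF assoc]]] by blast
    qed
  qed
  also have "\<dots> = (SUP k. ennreal (integral\<^sup>L (mu c) (sq x (ek k))))"
  proof (rule SUP_cong[OF refl])
    fix k
    have e: "ek k \<noteq> 0" using ek_pos[of k] by simp
    show "(\<integral>\<^sup>+y. ennreal (sq x (ek k) y) \<partial>mu c) = ennreal (integral\<^sup>L (mu c) (sq x (ek k)))"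
      by (rule nn_integral_eq_integral[OF sq_int[OF e]]) (simp add: sq_nonneg[OF e])
  qed
  finally show ?thesis .
qed

lemma E_mem: "f \<in> eigsp sm (ext_dom ip Dom B G1 G2 D) Bs z \<longleftrightarrow> f \<in> Ds \<and> G2 f = D *v G1 f \<and> Bs f = sm z f"
  unfolding eigsp_def ext_dom_def by blast

lemma E_lin: assumes "f \<in> eigsp sm (ext_dom ip Dom B G1 G2 D) Bs z" "g \<in> eigsp sm (ext_dom ip Dom B G1 G2 D) Bs z"
  shows "sm a f + sm b g \<in> eigsp sm (ext_dom ip Dom B G1 G2 D) Bs z"
proof -
  have f: "f \<in> Ds" "G2 f = D *v G1 f" "Bs f = sm z f" and g: "g \<in> Ds" "G2 g = D *v G1 g" "Bs g = sm z g"
    using assms E_mem by auto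
  have "G2 (sm a f + sm b g) = D *v G1 (sm a f + sm b g)"
    using G_lin[OF f(1) g(1)] f g by (simp add: matrix_vector_right_distrib mv_scale)
  moreover have "Bs (sm a f + sm b g) = sm z (sm a f + sm b g)"
    using Ds_lin(2)[OF f(1) g(1)] f g by (simp add: sm_assoc sm_add_r mult.commute)
  ultimately show ?thesis using Ds_lin(1)[OF f(1) g(1)] E_mem by blast
qed

lemma E_zero: "0 \<in> eigsp sm (ext_dom ip Dom B G1 G2 D) Bs z"
  unfolding E_mem using Ds0 G0 Bs0 by simp

lemma E_add: "f \<in> eigsp sm (ext_dom ip Dom B G1 G2 D) Bs z \<Longrightarrow> g \<in> eigsp sm (ext_dom ip Dom B G1 G2 D) Bs z
  \<Longrightarrow> f + g \<in> eigsp sm (ext_dom ip Dom B G1 G2 D) Bs z"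
  using E_lin[of f D z g 1 1] by simp

lemma E_sm: "f \<in> eigsp sm (ext_dom ip Dom B G1 G2 D) Bs z \<Longrightarrow> sm a f \<in> eigsp sm (ext_dom ip Dom B G1 G2 D) Bs z"
  using E_lin[of f D z 0 a 0] E_zero by simp

lemma E_sum: "(\<And>i. i \<in> S \<Longrightarrow> v i \<in> eigsp sm (ext_dom ip Dom B G1 G2 D) Bs z)
  \<Longrightarrow> (\<Sum>i\<in>S. sm (a i) (v i)) \<in> eigsp sm (ext_dom ip Dom B G1 G2 D) Bs z"
  by (induction S rule: infinite_finite_induct) (auto simp: E_zero intro!: E_add E_sm)

lemma Ds_sum: "(\<And>i. i \<in> S \<Longrightarrow> v i \<in> Ds) \<Longrightarrow> (\<Sum>i\<in>S. sm (a i) (v i)) \<in> Ds"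
  by (induction S rule: infinite_finite_induct) (auto simp: Ds0 intro!: Ds_add Ds_sm)

lemma G1_sum: "(\<And>i. i \<in> S \<Longrightarrow> v i \<in> Ds) \<Longrightarrow> G1 (\<Sum>i\<in>S. sm (a i) (v i)) = (\<Sum>i\<in>S. a i *s G1 (v i))"
proof (induction S rule: infinite_finite_induct)
  case (infinite S) then show ?case using G0 by simp
next
  case empty then show ?case using G0 by simp
next
  case (insert i S)
  have d1: "v i \<in> Ds" using insert by simp
  have d2: "(\<Sum>i\<in>S. sm (a i) (v i)) \<in> Ds" using insert by (intro Ds_sum) auto
  have "G1 (\<Sum>i\<in>insert i S. sm (a i) (v i)) = G1 (sm (a i) (v i)) + G1 (\<Sum>i\<in>S. sm (a i) (v i))"
    using G_add(1)[OF Ds_sm[OF d1] d2] insert by simp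
  then show ?case using insert G_sm(1)[OF d1] by simp
qed

lemma G2_sum: "(\<And>i. i \<in> S \<Longrightarrow> v i \<in> Ds) \<Longrightarrow> G2 (\<Sum>i\<in>S. sm (a i) (v i)) = (\<Sum>i\<in>S. a i *s G2 (v i))"
proof (induction S rule: infinite_finite_induct)
  case (infinite S) then show ?case using G0 by simp
next
  case empty then show ?case using G0 by simp
next
  case (insert i S)
  have d1: "v i \<in> Ds" using insert by simp
  have d2: "(\<Sum>i\<in>S. sm (a i) (v i)) \<in> Ds" using insert by (intro Ds_sum) auto
  have "G2 (\<Sum>i\<in>insert i S. sm (a i) (v i)) = G2 (sm (a i) (v i)) + G2 (\<Sum>i\<in>S. sm (a i) (v i))"
    using G_add(2)[OF Ds_sm[OF d1] d2] insert by simp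
  then show ?case using insert G_sm(2)[OF d1] by simp
qed

end


context full begin

lemma dirA: assumes D: "hermitian_mat D" and zs: "z \<in> sigma_p_max sm (ext_dom ip Dom B G1 G2 D) Bs CARD('n)"
  shows "z \<in> complex_of_real ` {x. T_finite Om x}"
proof -
  let ?E = "eigsp sm (ext_dom ip Dom B G1 G2 D) Bs z"
  let ?n = "CARD('n)"
  have E0: "?E \<noteq> {0}" and hd: "hdim sm ?E ?n" using zs unfolding sigma_p_max_def by auto
  obtain f0 where f0: "f0 \<in> ?E" "f0 \<noteq> 0" using E0 E_zero by blast
  have f0p: "f0 \<in> Ds" "G2 f0 = D *v G1 f0" "Bs f0 = sm z f0" using f0 E_mem by auto
  have "ip (Bs f0) f0 - ip f0 (Bs f0) = 0" using green[OF f0p(1) f0p(1)] f0p(2) herm_cip[OF D] by simp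
  then have "(z - cnj z) * ip f0 f0 = 0" unfolding f0p(3) by (simp add: ip_sm_l ip_sm_r algebra_simps)
  moreover have "ip f0 f0 \<noteq> 0" using f0 ip_def0 by blast
  ultimately have "z = cnj z" by simp
  then have "Im z = 0" by (metis cnj.simps(2) neg_equal_zero)
  define x where "x = Re z"
  have zx: "z = complex_of_real x" unfolding x_def using \<open>Im z = 0\<close> by (simp add: complex_eq_iff)
  have Einj: "g = 0" if g: "g \<in> ?E" "G1 g = 0" for g
  proof -
    have gp: "g \<in> Ds" "G2 g = D *v G1 g" "Bs g = sm z g" using g E_mem by auto
    show ?thesis using eig_zero[of g x] gp g(2) zx by simp
  qed
  obtain v where vi: "\<And>c. (\<Sum>i<?n. sm (c i) (v i)) = 0 \<Longrightarrow> (\<forall>i<?n. c i = 0)"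
    and vs: "?E = {(\<Sum>i<?n. sm (c i) (v i)) | c. True}" using hd unfolding hdim_def by blast
  have vE: "v i \<in> ?E" if i: "i < ?n" for i
  proof -
    have "(\<Sum>j<?n. sm (if j = i then 1 else 0) (v j)) = (\<Sum>j<?n. if j = i then v i else 0)"
      by (intro sum.cong) auto
    also have "\<dots> = v i" using i by simp
    finally have eq: "(\<Sum>j<?n. sm (if j = i then 1 else 0) (v j)) = v i" .
    show ?thesis unfolding vs mem_Collect_eq
      by (rule exI[of _ "\<lambda>j. if j = i then 1 else 0"]) (simp add: eq)
  qed
  obtain h where h: "bij_betw h {0..<?n} (UNIV::'n set)" using ex_bij_betw_nat_finite[of "UNIV::'n set"] by auto
  define hi where "hi = inv_into {0..<?n} h"
  have hi1: "hi j < ?n" for j unfolding hi_def using h bij_betw_inv_into bij_betwE by fastforce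
  have hi2: "h (hi j) = j" for j unfolding hi_def using h bij_betw_inv_into_right by fastforce
  have hi3: "hi (h i) = i" if "i < ?n" for i unfolding hi_def using h that bij_betw_inv_into_left by fastforce
  define w where "w j = v (hi j)" for j
  have wE: "w j \<in> ?E" for j unfolding w_def using vE hi1 by blast
  have wD: "w j \<in> Ds" for j using wE E_mem by blast
  define Vm :: "complex^'n^'n" where "Vm = (\<chi> r j. G1 (w j) $ r)"
  have Vm_eq: "Vm *v a = G1 (\<Sum>j\<in>UNIV. sm (a$j) (w j))" for a
    unfolding G1_sum[OF wD] by (simp add: Vm_def vec_eq_iff matrix_vector_mult_def mult.commute)
  have reidx: "(\<Sum>j\<in>UNIV. sm (a$j) (w j)) = (\<Sum>i<?n. sm (a$(h i)) (v i))" for a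
  proof -
    have "(\<Sum>i\<in>{0..<?n}. sm (a$(h i)) (w (h i))) = (\<Sum>j\<in>UNIV. sm (a$j) (w j))"
      by (rule sum.reindex_bij_betw[OF h])
    moreover have "(\<Sum>i\<in>{0..<?n}. sm (a$(h i)) (w (h i))) = (\<Sum>i<?n. sm (a$(h i)) (v i))"
      unfolding w_def atLeast0LessThan by (intro sum.cong refl) (simp add: hi3)
    ultimately show ?thesis by simp
  qed
  have inj: "inj ((*v) Vm)" unfolding vec.inj_iff_eq_0
  proof (intro allI impI)
    fix a :: "complex^'n" assume "Vm *v a = 0"
    then have "G1 (\<Sum>j\<in>UNIV. sm (a$j) (w j)) = 0" unfolding Vm_eq .
    moreover have "(\<Sum>j\<in>UNIV. sm (a$j) (w j)) \<in> ?E" using wE by (intro E_sum) auto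
    ultimately have "(\<Sum>j\<in>UNIV. sm (a$j) (w j)) = 0" using Einj by blast
    then have "(\<Sum>i<?n. sm (a$(h i)) (v i)) = 0" unfolding reidx .
    then have "\<forall>i<?n. a$(h i) = 0" using vi[of "\<lambda>i. a$(h i)"] by blast
    then have "a$j = 0" for j using hi1[of j] hi2[of j] by metis
    then show "a = 0" by (simp add: vec_eq_iff)
  qed
  have surj: "surj ((*v) Vm)" by (rule vec.linear_inj_imp_surj[OF matrix_vector_mul_linear_gen inj])
  have fc: "\<exists>f\<in>?E. G1 f = c" for c
  proof -
    obtain a where "c = Vm *v a" using surj by (metis surjD)
    then show ?thesis using Vm_eq wE by (intro bexI[of _ "\<Sum>j\<in>UNIV. sm (a$j) (w j)"] E_sum) auto
  qed
  have bnd: "integral\<^sup>L (mu (G1 f)) (sq x (ek k)) \<le> (2 * nrm f)\<^sup>2" if f: "f \<in> ?E" for f k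
  proof -
    have fp: "f \<in> Ds" "Bs f = sm (complex_of_real x) f" using f E_mem zx by auto
    define e where "e = ek k"
    have e0: "e > 0" unfolding e_def by (rule ek_pos)
    define z' where "z' = Complex x e"
    have iz: "Im z' \<noteq> 0" unfolding z'_def using e0 by simp
    define g where "g = gam z' (G1 f)"
    note gp = gam_prop[OF iz, of "G1 f", folded g_def]
    define u where "u = g - f"
    have uD1: "u \<in> D1" unfolding u_def using gp fp Ds_diff G_diff by auto
    have "Bs u - sm z' u = (sm z' g - sm (complex_of_real x) f) - (sm z' g - sm z' f)"
      unfolding u_def using Bs_diff[OF gp(1) fp(1)] gp fp by (simp add: sm_diff_r)
    also have "\<dots> = sm (z' - complex_of_real x) f" by (simp add: sm_diff_l)
    also have "z' - complex_of_real x = Complex 0 e" unfolding z'_def by (simp add: complex_eq_iff)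
    moreover have "cmod (Complex 0 e) = e" using e0 by (simp add: complex_norm)
    ultimately have "nrm (Bs u - sm z' u) = e * nrm f" by (simp add: nrm_sm)
    moreover have "\<bar>Im z'\<bar> * nrm u \<le> nrm (Bs u - sm z' u)" by (rule A1_bound[OF uD1])
    ultimately have "e * nrm u \<le> e * nrm f" unfolding z'_def using e0 by simp
    then have nu: "nrm u \<le> nrm f" using e0 by simp
    have "g = u + f" unfolding u_def by simp
    then have "nrm g \<le> nrm u + nrm f" using nrm_triangle by simp
    then have ng: "nrm g \<le> 2 * nrm f" using nu by simp
    have "integral\<^sup>L (mu (G1 f)) (sq x e) \<le> kap (G1 f) + integral\<^sup>L (mu (G1 f)) (sq x e)" using kap(1) by simp
    also have "\<dots> = (nrm g)\<^sup>2" unfolding g_def z'_def by (rule nrm_gam[symmetric, OF e0])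
    also have "\<dots> \<le> (2 * nrm f)\<^sup>2" using ng nrm_nonneg by (intro power_mono) auto
    finally show ?thesis unfolding e_def .
  qed
  have "T_finite Om x" unfolding T_finite_def
  proof
    fix c
    obtain f where f: "f \<in> ?E" "G1 f = c" using fc by blast
    have "(\<integral>\<^sup>+y. (if y = x then \<infinity> else ennreal (1 / (x - y)\<^sup>2)) \<partial>mu c) = (SUP k. ennreal (integral\<^sup>L (mu c) (sq x (ek k))))"
      by (rule Tint_eq)
    also have "\<dots> \<le> ennreal ((2 * nrm f)\<^sup>2)"
      using bnd[OF f(1)] f(2) by (intro SUP_least ennreal_leI) auto
    also have "\<dots> < \<infinity>" by simp
    finally show "(\<integral>\<^sup>+y. (if y = x then \<infinity> else ennreal (1 / (x - y)\<^sup>2)) \<partial>mu c) < \<infinity>" .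
  qed
  then show ?thesis using zx by blast
qed

end


lemma zk_lim: "(\<lambda>k. Complex x (ek k)) \<longlonglongrightarrow> complex_of_real x"
proof -
  have "(\<lambda>k. complex_of_real x + \<i> * complex_of_real (ek k)) \<longlonglongrightarrow> complex_of_real x + \<i> * complex_of_real 0"
    by (intro tendsto_intros ek_lim)
  moreover have "\<And>k. Complex x (ek k) = complex_of_real x + \<i> * complex_of_real (ek k)" by (simp add: complex_eq_iff)
  ultimately show ?thesis by simp
qed

context full begin

abbreviation "gs x c k \<equiv> gam (Complex x (ek k)) c"

definition fcx :: "real \<Rightarrow> complex^'n \<Rightarrow> 'h" where
  "fcx x c = (SOME f. hconv ip (\<lambda>k. gam (Complex x (ek k)) c) f)"

lemma Fb: assumes T: "T_finite Om x"
  shows "integral\<^sup>L (mu c) (sq x (ek k)) \<le> enn2real (\<integral>\<^sup>+y. (if y = x then \<infinity> else ennreal (1 / (x - y)\<^sup>2)) \<partial>mu c)"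
proof -
  let ?T = "\<integral>\<^sup>+y. (if y = x then \<infinity> else ennreal (1 / (x - y)\<^sup>2)) \<partial>mu c"
  have e: "ek k \<noteq> 0" using ek_pos[of k] by simp
  have nn: "integral\<^sup>L (mu c) (sq x (ek k)) \<ge> 0" using sq_nonneg[OF e] by (intro integral_nonneg_AE) auto
  have "ennreal (integral\<^sup>L (mu c) (sq x (ek k))) \<le> (SUP k. ennreal (integral\<^sup>L (mu c) (sq x (ek k))))"
    by (rule SUP_upper) simp
  also have "\<dots> = ?T" by (rule Tint_eq[symmetric])
  finally have le: "ennreal (integral\<^sup>L (mu c) (sq x (ek k))) \<le> ?T" .
  have "?T < \<infinity>" using T unfolding T_finite_def by blast
  then have "enn2real (ennreal (integral\<^sup>L (mu c) (sq x (ek k)))) \<le> enn2real ?T"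
    using le by (intro enn2real_mono) auto
  then show ?thesis using nn by simp
qed

lemma Finc: "k \<le> m \<Longrightarrow> integral\<^sup>L (mu c) (sq x (ek k)) \<le> integral\<^sup>L (mu c) (sq x (ek m))"
proof -
  assume km: "k \<le> m"
  have e: "ek k \<noteq> 0" "ek m \<noteq> 0" using ek_pos by (auto simp: less_le)
  show ?thesis by (rule integral_mono[OF sq_int[OF e(1)] sq_int[OF e(2)]]) (rule sq_inc[OF km])
qed

lemma gdiff: assumes km: "k \<le> m"
  shows "(nrm (gs x c k - gs x c m))\<^sup>2 \<le> integral\<^sup>L (mu c) (sq x (ek m)) - integral\<^sup>L (mu c) (sq x (ek k))"
proof -
  have e: "ek k > 0" "ek m > 0" using ek_pos by auto
  have e': "ek k \<noteq> 0" "ek m \<noteq> 0" using e by auto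
  have le: "ek m \<le> ek k" by (rule ek_mono[OF km])
  have "(nrm (gs x c k - gs x c m))\<^sup>2 = integral\<^sup>L (mu c) (cmb x (ek k) (ek m))" by (rule nrm_gam_diff[OF e])
  also have "\<dots> \<le> integral\<^sup>L (mu c) (\<lambda>y. sq x (ek m) y - sq x (ek k) y)"
    by (rule integral_mono[OF cmb_int[OF e] Bochner_Integration.integrable_diff[OF sq_int[OF e'(2)] sq_int[OF e'(1)]]])
       (rule cmb_le[OF e(2) le])
  also have "\<dots> = integral\<^sup>L (mu c) (sq x (ek m)) - integral\<^sup>L (mu c) (sq x (ek k))"
    by (rule Bochner_Integration.integral_diff[OF sq_int[OF e'(2)] sq_int[OF e'(1)]])
  finally show ?thesis .
qed

lemma gs_conv: assumes T: "T_finite Om x" shows "hconv ip (\<lambda>k. gs x c k) (fcx x c)"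
proof -
  define F where "F k = integral\<^sup>L (mu c) (sq x (ek k))" for k
  have inc: "incseq F" unfolding incseq_def F_def using Finc by blast
  have bd: "F k \<le> enn2real (\<integral>\<^sup>+y. (if y = x then \<infinity> else ennreal (1 / (x - y)\<^sup>2)) \<partial>mu c)" for k
    unfolding F_def by (rule Fb[OF T])
  obtain L where L: "F \<longlonglongrightarrow> L" using incseq_convergent[OF inc] bd by blast
  then have CF: "Cauchy F" by (rule LIMSEQ_imp_Cauchy)
  have "\<exists>f. hconv ip (\<lambda>k. gs x c k) f"
  proof (rule cauchy_nrm_conv)
    fix e :: real assume e: "e > 0"
    obtain N where N0: "\<forall>m\<ge>N. \<forall>n\<ge>N. \<bar>F m - F n\<bar> < e\<^sup>2"
      using CauchyD[OF CF, of "e\<^sup>2"] e by (auto simp: dist_real_def)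
    then have N: "\<And>m n. m \<ge> N \<Longrightarrow> n \<ge> N \<Longrightarrow> \<bar>F m - F n\<bar> < e\<^sup>2" by blast
    have *: "nrm (gs x c k - gs x c m) < e" if "N \<le> k" "k \<le> m" for k m
    proof -
      have "(nrm (gs x c k - gs x c m))\<^sup>2 \<le> F m - F k" unfolding F_def by (rule gdiff[OF that(2)])
      also have "\<dots> < e\<^sup>2" using N[of m k] that by simp
      finally show ?thesis using e nrm_nonneg by (meson power_less_imp_less_base less_imp_le)
    qed
    show "\<exists>N. \<forall>m\<ge>N. \<forall>k\<ge>N. nrm (gs x c m - gs x c k) < e"
    proof (intro exI allI impI)
      fix m k assume "N \<le> m" "N \<le> k"
      then show "nrm (gs x c m - gs x c k) < e" using *[of m k] *[of k m] nrm_diff_sym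
        by (cases "m \<le> k") auto
    qed
  qed
  then show ?thesis unfolding fcx_def by (rule someI_ex)
qed

lemma fcx_prop: assumes T: "T_finite Om x"
  shows "fcx x c \<in> Ds" "Bs (fcx x c) = sm (complex_of_real x) (fcx x c)" "G1 (fcx x c) = c"
proof -
  have conv: "hconv ip (\<lambda>k. gs x c k) (fcx x c)" by (rule gs_conv[OF T])
  have iz: "Im (Complex x (ek k)) \<noteq> 0" for k using ek_pos[of k] by simp
  have zl: "(\<lambda>k. cnj (Complex x (ek k))) \<longlonglongrightarrow> cnj (complex_of_real x)" by (intro tendsto_intros zk_lim)
  have "ip (B u) (fcx x c) = ip u (sm (complex_of_real x) (fcx x c))" if u: "u \<in> Dom" for u
  proof -
    have "(\<lambda>k. ip (B u) (gs x c k)) \<longlonglongrightarrow> ip (B u) (fcx x c)" by (rule hconv_ip_r[OF conv])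
    moreover have "ip (B u) (gs x c k) = cnj (Complex x (ek k)) * ip u (gs x c k)" for k
      using adj_char[OF gam_prop(1)[OF iz] u] gam_prop(2)[OF iz] by (simp add: ip_sm_r)
    moreover have "(\<lambda>k. cnj (Complex x (ek k)) * ip u (gs x c k)) \<longlonglongrightarrow> cnj (complex_of_real x) * ip u (fcx x c)"
      by (intro tendsto_mult zl hconv_ip_r[OF conv])
    ultimately have "ip (B u) (fcx x c) = cnj (complex_of_real x) * ip u (fcx x c)"
      using LIMSEQ_unique by fastforce
    then show ?thesis by (simp add: ip_sm_r)
  qed
  then show fD: "fcx x c \<in> Ds" and fB: "Bs (fcx x c) = sm (complex_of_real x) (fcx x c)" using adj_eq by blast+
  define X where "X k = gs x c k - gs x c 0" for k
  have XD1: "\<forall>k. X k \<in> D1" unfolding X_def using gam_prop[OF iz] Ds_diff G_diff by auto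
  have Xc: "hconv ip X (fcx x c - gs x c 0)" unfolding X_def by (rule hconv_diff[OF conv hconv_const])
  have "Bs (X k) = sm (Complex x (ek k)) (gs x c k) - sm (Complex x (ek 0)) (gs x c 0)" for k
    unfolding X_def using Bs_diff gam_prop[OF iz] by simp
  moreover have "hconv ip (\<lambda>k. sm (Complex x (ek k)) (gs x c k) - sm (Complex x (ek 0)) (gs x c 0))
     (sm (complex_of_real x) (fcx x c) - sm (Complex x (ek 0)) (gs x c 0))"
    by (rule hconv_diff[OF hconv_sm[OF zk_lim conv] hconv_const])
  ultimately have "hconv ip (\<lambda>k. Bs (X k)) (sm (complex_of_real x) (fcx x c) - sm (Complex x (ek 0)) (gs x c 0))" by simp
  then have "fcx x c - gs x c 0 \<in> D1" using A1_closed[OF XD1 Xc] by blast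
  then have "G1 (fcx x c - gs x c 0) = 0" by simp
  then show "G1 (fcx x c) = c" using G_diff(1)[OF fD gam_prop(1)[OF iz]] gam_prop(3)[OF iz] by simp
qed

lemma fcx_lin: assumes T: "T_finite Om x"
  shows "fcx x (a *s c + b *s d) = sm a (fcx x c) + sm b (fcx x d)"
proof -
  have iz: "Im (Complex x (ek k)) \<noteq> 0" for k using ek_pos[of k] by simp
  have "hconv ip (\<lambda>k. sm a (gs x c k) + sm b (gs x d k)) (sm a (fcx x c) + sm b (fcx x d))"
    by (intro hconv_add hconv_sm_const gs_conv[OF T])
  moreover have "(\<lambda>k. sm a (gs x c k) + sm b (gs x d k)) = (\<lambda>k. gs x (a *s c + b *s d) k)"
    using gam_lin[OF iz] by auto
  ultimately have "hconv ip (\<lambda>k. gs x (a *s c + b *s d) k) (sm a (fcx x c) + sm b (fcx x d))" by simp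
  then show ?thesis using gs_conv[OF T, of "a *s c + b *s d"] hconv_unique by blast
qed

end


lemma vec_expand: "(\<Sum>j\<in>UNIV. (c$j) *s axis j (1::'a::comm_ring_1)) = (c :: 'a^'n::finite)"
proof -
  have "(\<Sum>j\<in>UNIV. (c$j) *s axis j (1::'a)) $ i = c $ i" for i
  proof -
    have "\<And>j. ((c$j) *s axis j (1::'a)) $ i = (if j = i then c$i else 0)" by (simp add: axis_def)
    then show ?thesis by (simp add: sum_component)
  qed
  then show ?thesis by (simp add: vec_eq_iff)
qed

context full begin

lemma fcx_zero: "T_finite Om x \<Longrightarrow> fcx x 0 = 0"
  using fcx_lin[of x 0 0 0 0] by simp

lemma fcx_sum: assumes T: "T_finite Om x"
  shows "fcx x (\<Sum>j\<in>S. a j *s e j) = (\<Sum>j\<in>S. sm (a j) (fcx x (e j)))"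
proof (induction S rule: infinite_finite_induct)
  case (infinite S) then show ?case using fcx_zero[OF T] by simp
next
  case empty then show ?case using fcx_zero[OF T] by simp
next
  case (insert j S)
  have "fcx x (\<Sum>j\<in>insert j S. a j *s e j) = fcx x (1 *s (a j *s e j) + 1 *s (\<Sum>j\<in>S. a j *s e j))"
    using insert by simp
  also have "\<dots> = sm 1 (fcx x (a j *s e j)) + sm 1 (fcx x (\<Sum>j\<in>S. a j *s e j))" by (rule fcx_lin[OF T])
  also have "fcx x (a j *s e j) = sm (a j) (fcx x (e j))"
    using fcx_lin[OF T, of "a j" "e j" 0 "e j"] by simp
  finally show ?case using insert by simp
qed

lemma fcx_expand: "T_finite Om x \<Longrightarrow> fcx x c = (\<Sum>j\<in>UNIV. sm (c$j) (fcx x (axis j 1)))"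
  using fcx_sum[of x "\<lambda>j. c$j" "\<lambda>j. axis j 1" UNIV] vec_expand[of c] by simp

definition DD :: "real \<Rightarrow> complex^'n^'n" where "DD x = (\<chi> i j. G2 (fcx x (axis j 1)) $ i)"

lemma DD_eq: assumes T: "T_finite Om x" shows "DD x *v c = G2 (fcx x c)"
proof -
  have "G2 (fcx x c) = (\<Sum>j\<in>UNIV. (c$j) *s G2 (fcx x (axis j 1)))"
    unfolding fcx_expand[OF T, of c] by (rule G2_sum) (use fcx_prop[OF T] in blast)
  then show ?thesis by (simp add: DD_def vec_eq_iff matrix_vector_mult_def mult.commute)
qed

lemma DD_herm: assumes T: "T_finite Om x" shows "hermitian_mat (DD x)"
proof -
  have c: "cip (DD x *v a) b = cip a (DD x *v b)" for a b
  proof -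
    note fa = fcx_prop[OF T, of a] and fb = fcx_prop[OF T, of b]
    have "ip (Bs (fcx x a)) (fcx x b) - ip (fcx x a) (Bs (fcx x b)) = 0"
      unfolding fa(2) fb(2) by (simp add: ip_sm_l ip_sm_r)
    then show ?thesis using green[OF fa(1) fb(1)] fa fb DD_eq[OF T] by simp
  qed
  show ?thesis unfolding hermitian_mat_def
  proof (intro allI)
    fix i j
    have "cip (DD x *v axis j 1) (axis i 1) = cip (axis j 1) (DD x *v axis i 1)" by (rule c)
    then show "DD x $ i $ j = cnj (DD x $ j $ i)" by (simp add: cip_axis_r cip_axis_l mv_axis)
  qed
qed

lemma fcx_E: assumes T: "T_finite Om x" shows "fcx x a \<in> eigsp sm (ext_dom ip Dom B G1 G2 (DD x)) Bs (complex_of_real x)"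
  unfolding E_mem using fcx_prop[OF T] DD_eq[OF T] by simp

lemma dirB: assumes T: "T_finite Om x"
  shows "complex_of_real x \<in> (\<Union>D\<in>{D. hermitian_mat D}. sigma_p_max sm (ext_dom ip Dom B G1 G2 D) Bs CARD('n))"
proof -
  let ?E = "eigsp sm (ext_dom ip Dom B G1 G2 (DD x)) Bs (complex_of_real x)"
  let ?n = "CARD('n)"
  obtain h where h: "bij_betw h {0..<?n} (UNIV::'n set)" using ex_bij_betw_nat_finite[of "UNIV::'n set"] by auto
  define v where "v i = fcx x (axis (h i) 1)" for i
  have vD: "v i \<in> Ds" for i unfolding v_def using fcx_prop[OF T] by blast
  have indep: "\<forall>i<?n. c i = 0" if s: "(\<Sum>i<?n. sm (c i) (v i)) = 0" for c
  proof (intro allI impI)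
    fix i assume i: "i < ?n"
    have "G1 (\<Sum>i<?n. sm (c i) (v i)) = (\<Sum>i<?n. c i *s G1 (v i))" by (rule G1_sum[OF vD])
    also have "\<dots> = (\<Sum>i<?n. c i *s axis (h i) 1)" unfolding v_def using fcx_prop(3)[OF T] by simp
    finally have "G1 (\<Sum>i<?n. sm (c i) (v i)) = (\<Sum>i<?n. c i *s axis (h i) 1)" .
    then have "(\<Sum>i'<?n. c i' *s axis (h i') (1::complex)) = 0" using s G0 by simp
    then have "(\<Sum>i'<?n. c i' *s axis (h i') (1::complex)) $ h i = 0" by simp
    moreover have "(\<Sum>i'<?n. c i' *s axis (h i') (1::complex)) $ h i = c i"
    proof -
      have inj: "inj_on h {..<?n}" using h unfolding bij_betw_def atLeast0LessThan by blast
      have "\<And>i'. i' \<in> {..<?n} \<Longrightarrow> (c i' *s axis (h i') (1::complex)) $ h i = (if i' = i then c i else 0)"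
        using inj i by (auto simp: axis_def inj_on_eq_iff)
      then have "(\<Sum>i'<?n. c i' *s axis (h i') (1::complex)) $ h i = (\<Sum>i'<?n. if i' = i then c i else 0)"
        unfolding sum_component by (intro sum.cong) auto
      also have "\<dots> = c i" using i by simp
      finally show ?thesis .
    qed
    ultimately show "c i = 0" by simp
  qed
  have span: "?E = {(\<Sum>i<?n. sm (c i) (v i)) | c. True}"
  proof
    show "?E \<subseteq> {(\<Sum>i<?n. sm (c i) (v i)) | c. True}"
    proof
      fix f assume f: "f \<in> ?E"
      have fp: "f \<in> Ds" "G2 f = DD x *v G1 f" "Bs f = sm (complex_of_real x) f" using f E_mem by auto
      note gp = fcx_prop[OF T, of "G1 f"]
      have "f - fcx x (G1 f) = 0"
      proof (rule eig_zero)
        show "f - fcx x (G1 f) \<in> Ds" using fp gp Ds_diff by blast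
        show "Bs (f - fcx x (G1 f)) = sm (complex_of_real x) (f - fcx x (G1 f))"
          using Bs_diff[OF fp(1) gp(1)] fp gp by (simp add: sm_diff_r)
        show "G1 (f - fcx x (G1 f)) = 0" using G_diff(1)[OF fp(1) gp(1)] gp by simp
        show "G2 (f - fcx x (G1 f)) = 0" using G_diff(2)[OF fp(1) gp(1)] fp DD_eq[OF T] by simp
      qed
      then have "f = fcx x (G1 f)" by simp
      also have "\<dots> = (\<Sum>j\<in>UNIV. sm (G1 f $ j) (fcx x (axis j 1)))" by (rule fcx_expand[OF T])
      also have "\<dots> = (\<Sum>i\<in>{0..<?n}. sm (G1 f $ h i) (fcx x (axis (h i) 1)))"
        by (rule sum.reindex_bij_betw[OF h, symmetric])
      also have "\<dots> = (\<Sum>i<?n. sm (G1 f $ h i) (v i))" unfolding v_def atLeast0LessThan ..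
      finally have fe: "f = (\<Sum>i<?n. sm (G1 f $ h i) (v i))" .
      show "f \<in> {(\<Sum>i<?n. sm (c i) (v i)) | c. True}" unfolding mem_Collect_eq
        by (rule exI[of _ "\<lambda>i. G1 f $ h i"]) (simp add: fe[symmetric])
    qed
    show "{(\<Sum>i<?n. sm (c i) (v i)) | c. True} \<subseteq> ?E"
      using fcx_E[OF T] unfolding v_def by (auto intro!: E_sum)
  qed
  have hd: "hdim sm ?E ?n" unfolding hdim_def using indep span by blast
  obtain j0 :: 'n where True by simp
  have "fcx x (axis j0 1) \<in> ?E" by (rule fcx_E[OF T])
  moreover have "fcx x (axis j0 1) \<noteq> 0"
  proof
    assume "fcx x (axis j0 1) = 0"
    then have "G1 (fcx x (axis j0 1)) = 0" using G0 by simp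
    then show False using fcx_prop(3)[OF T, of "axis j0 1"] by (simp add: axis_eq_0_iff)
  qed
  ultimately have "?E \<noteq> {0}" by blast
  then have "complex_of_real x \<in> sigma_p_max sm (ext_dom ip Dom B G1 G2 (DD x)) Bs ?n"
    unfolding sigma_p_max_def using hd by blast
  then show ?thesis using DD_herm[OF T] by blast
qed

end


theorem theorem6p2:
  fixes sm :: "complex \<Rightarrow> 'h::ab_group_add \<Rightarrow> 'h"
    and ip :: "'h \<Rightarrow> 'h \<Rightarrow> complex"
    and Dom :: "'h set" and B :: "'h \<Rightarrow> 'h"
    and G1 G2 :: "'h \<Rightarrow> complex^'n::finite"
    and M :: "complex \<Rightarrow> complex^'n^'n"
    and Om :: "real set \<Rightarrow> complex^'n^'n"
  assumes "hilbert_space sm ip"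
    and "lin_op sm Dom B" and "dense_in ip UNIV Dom" and "closed_op ip Dom B"
    and "symmetric_op ip Dom B" and "completely_nonselfadjoint sm ip Dom B"
    and "hdim sm (eigsp sm (adj_dom ip Dom B) (adj_op ip Dom B) \<i>) CARD('n)"
    and "hdim sm (eigsp sm (adj_dom ip Dom B) (adj_op ip Dom B) (- \<i>)) CARD('n)"
    and "boundary_triplet sm ip Dom B G1 G2"
    and "weyl_function sm ip Dom B G1 G2 M"
    and "assoc_measure M Om"
  shows "complex_of_real ` {x. T_finite Om x} =
           (\<Union>D\<in>{D. hermitian_mat D}. sigma_p_max sm (ext_dom ip Dom B G1 G2 D) (adj_op ip Dom B) CARD('n))"
proof -
  interpret full sm ip Dom B G1 G2 M Om
    using assms by (unfold_locales) auto
  show ?thesis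
  proof
    show "complex_of_real ` {x. T_finite Om x} \<subseteq> (\<Union>D\<in>{D. hermitian_mat D}. sigma_p_max sm (ext_dom ip Dom B G1 G2 D) (adj_op ip Dom B) CARD('n))"
      using dirB by blast
    show "(\<Union>D\<in>{D. hermitian_mat D}. sigma_p_max sm (ext_dom ip Dom B G1 G2 D) (adj_op ip Dom B) CARD('n)) \<subseteq> complex_of_real ` {x. T_finite Om x}"
      using dirA by blast
  qed
qed


end
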